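(* Let $R(m,n)$ be a rectangular supergrid graph with $m\ge 3$ and $n\ge 2$, let $s,t$ be two distinct vertices of it, and let $w=(1,1)$ and $z=(2,1)$. Assume that the following conditions fail: (F1) $\{s,t\}$ is a vertex cut of $R(m,n)$, i.e. $n=2$ and $2\le s_x=t_x\le m-1$; (F2) either $n=2$ and $\{s,t\}\in\{\{(1,1),(2,1)\},\{(1,1),(2,2)\},\{(2,1),(1,2)\}\}$, or $n\ge 3$ and $\{s,t\}=\{w,z\}$. Then there exists a Hamiltonian $(s,t)$-path $Q$ of $R(m,n)$ such that the edge $(w,z)$ belongs to $Q$.
   Context: The rectangular supergrid graph $R(m,n)$ has vertex set $\{(x,y)\in\mathbb{Z}^2:1\le x\le m,\ 1\le y\le n\}$, two distinct vertices $u=(u_x,u_y)$, $v=(v_x,v_y)$ being adjacent iff $|u_x-v_x|\le 1$ and $|u_y-v_y|\le 1$. A set $V_1$ of vertices of a connected graph $G$ is a vertex cut if $G-V_1$ is disconnected. A Hamiltonian $(s,t)$-path is a simple path from $s$ to $t$ visiting every vertex exactly once. *)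

theory Defs
  imports Main
begin

type_synonym vtx = "int \<times> int"

definition R :: "int \<Rightarrow> int \<Rightarrow> vtx set" where
  "R m n = {(x, y). 1 \<le> x \<and> x \<le> m \<and> 1 \<le> y \<and> y \<le> n}"

definition sadj :: "vtx \<Rightarrow> vtx \<Rightarrow> bool" where
  "sadj u v \<longleftrightarrow> u \<noteq> v \<and> \<bar>fst u - fst v\<bar> \<le> 1 \<and> \<bar>snd u - snd v\<bar> \<le> 1"

definition is_path_in :: "vtx set \<Rightarrow> vtx list \<Rightarrow> bool" where
  "is_path_in V p \<longleftrightarrow> p \<noteq> [] \<and> set p \<subseteq> V \<and>
     (\<forall>i. Suc i < length p \<longrightarrow> sadj (p ! i) (p ! Suc i))"

definition connected_on :: "vtx set \<Rightarrow> bool" where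
  "connected_on V \<longleftrightarrow> (\<forall>u\<in>V. \<forall>v\<in>V. \<exists>p. is_path_in V p \<and> hd p = u \<and> last p = v)"

definition vertex_cut :: "vtx set \<Rightarrow> vtx set \<Rightarrow> bool" where
  "vertex_cut V V1 \<longleftrightarrow> V1 \<subseteq> V \<and> \<not> connected_on (V - V1)"

definition ham_path :: "vtx set \<Rightarrow> vtx \<Rightarrow> vtx \<Rightarrow> vtx list \<Rightarrow> bool" where
  "ham_path V s t p \<longleftrightarrow> is_path_in V p \<and> distinct p \<and> set p = V \<and> hd p = s \<and> last p = t"

definition edge_in_path :: "vtx \<Rightarrow> vtx \<Rightarrow> vtx list \<Rightarrow> bool" where
  "edge_in_path u v p \<longleftrightarrow> (\<exists>i. Suc i < length p \<and>
     ((p ! i = u \<and> p ! Suc i = v) \<or> (p ! i = v \<and> p ! Suc i = u)))"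

end

theory Submission
  imports Defs
begin

definition edg :: "vtx list \<Rightarrow> (vtx \<times> vtx) set" where
  "edg p = set (zip p (tl p))"

definition hp :: "vtx set \<Rightarrow> vtx \<Rightarrow> vtx \<Rightarrow> vtx list \<Rightarrow> bool" where
  "hp V s t p \<longleftrightarrow> p \<noteq> [] \<and> set p = V \<and> distinct p \<and> hd p = s \<and> last p = t \<and>
     (\<forall>e\<in>edg p. sadj (fst e) (snd e))"

lemma edg_Nil[simp]: "edg [] = {}" by (simp add: edg_def)
lemma edg_single[simp]: "edg [x] = {}" by (simp add: edg_def)
lemma edg_Cons2[simp]: "edg (x # y # r) = insert (x,y) (edg (y # r))" by (simp add: edg_def)

lemma edg_append:
  assumes "p \<noteq> []" "q \<noteq> []"
  shows "edg (p @ q) = edg p \<union> edg q \<union> {(last p, hd q)}"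
  using assms
proof (induction p)
  case Nil then show ?case by simp
next
  case (Cons x p)
  show ?case
  proof (cases p)
    case Nil
    then show ?thesis using Cons.prems by (cases q) auto
  next
    case (Cons y r)
    then show ?thesis using Cons.IH Cons.prems by auto
  qed
qed

lemma edg_rev: "edg (rev p) = prod.swap ` edg p"
proof (induction p)
  case Nil then show ?case by simp
next
  case (Cons x p)
  show ?case
  proof (cases p)
    case Nil then show ?thesis by simp
  next
    case (Cons y r)
    have "edg (rev (x # p)) = edg (rev p @ [x])" by simp
    also have "\<dots> = edg (rev p) \<union> {(last (rev p), x)}"
      using edg_append[of "rev p" "[x]"] Cons by simp
    also have "last (rev p) = y" using Cons by simp
    finally show ?thesis using Cons.IH Cons by auto
  qed
qed

lemma edg_map: "edg (map f p) = map_prod f f ` edg p"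
proof (induction p)
  case Nil then show ?case by simp
next
  case (Cons x p)
  then show ?case by (cases p) auto
qed

lemma edg_nth: "edg p = {(p!i, p!(Suc i)) | i. Suc i < length p}"
  unfolding edg_def by (auto simp: set_zip nth_tl)

lemma is_path_in_iff: "is_path_in V p \<longleftrightarrow> p \<noteq> [] \<and> set p \<subseteq> V \<and> (\<forall>e\<in>edg p. sadj (fst e) (snd e))"
  unfolding is_path_in_def edg_nth
proof (intro iffI conjI; (elim conjE)?)
  assume h: "\<forall>i. Suc i < length p \<longrightarrow> sadj (p ! i) (p ! Suc i)"
  show "\<forall>e\<in>{(p ! i, p ! Suc i) |i. Suc i < length p}. sadj (fst e) (snd e)"
    using h by auto
next
  assume h: "\<forall>e\<in>{(p ! i, p ! Suc i) |i. Suc i < length p}. sadj (fst e) (snd e)"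
  show "\<forall>i. Suc i < length p \<longrightarrow> sadj (p ! i) (p ! Suc i)"
  proof (intro allI impI)
    fix i assume "Suc i < length p"
    then have "(p ! i, p ! Suc i) \<in> {(p ! i, p ! Suc i) |i. Suc i < length p}" by blast
    from bspec[OF h this] show "sadj (p ! i) (p ! Suc i)" by simp
  qed
qed auto

lemma ham_path_iff: "ham_path V s t p \<longleftrightarrow> hp V s t p"
  unfolding ham_path_def hp_def is_path_in_iff by auto

lemma edge_in_path_iff: "edge_in_path u v p \<longleftrightarrow> (u,v) \<in> edg p \<or> (v,u) \<in> edg p"
  unfolding edge_in_path_def edg_nth by auto



lemma hp_append:
  assumes "hp A s x P" "hp B y t Q" "A \<inter> B = {}" "sadj x y"
  shows "hp (A \<union> B) s t (P @ Q)"
proof -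
  have ne: "P \<noteq> []" "Q \<noteq> []" using assms unfolding hp_def by auto
  show ?thesis using assms ne unfolding hp_def
    by (auto simp: edg_append)
qed

lemma hp_rev: "hp V s t P \<Longrightarrow> hp V t s (rev P)"
  unfolding hp_def by (auto simp: edg_rev hd_rev last_rev sadj_def abs_minus_commute)

lemma hp_single: "hp {v} v v [v]"
  unfolding hp_def by simp

lemma hp_map:
  assumes "hp V s t P" "inj_on f V" "\<And>u v. sadj u v \<Longrightarrow> sadj (f u) (f v)"
  shows "hp (f ` V) (f s) (f t) (map f P)"
  using assms unfolding hp_def
  by (auto simp: edg_map distinct_map hd_map last_map)

lemma hp_split:
  assumes "hp V s t (P @ Q)" "P \<noteq> []" "Q \<noteq> []"
  shows "hp (set P) s (last P) P" "hp (set Q) (hd Q) t Q" "set P \<inter> set Q = {}"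
    "V = set P \<union> set Q" "sadj (last P) (hd Q)"
  using assms unfolding hp_def by (auto simp: edg_append)

lemma edg_split: "(p, q) \<in> edg L \<Longrightarrow> \<exists>xs ys. L = xs @ p # q # ys"
proof (induction L)
  case Nil then show ?case by simp
next
  case (Cons x L)
  show ?case
  proof (cases L)
    case Nil then show ?thesis using Cons by simp
  next
    case (Cons y r)
    show ?thesis
    proof (cases "(p,q) = (x,y)")
      case True then show ?thesis using Cons by auto
    next
      case False
      then have "(p,q) \<in> edg L" using Cons \<open>(p,q) \<in> edg (x # L)\<close> by auto
      then obtain xs ys where "L = xs @ p # q # ys" using \<open>(p,q) \<in> edg L \<Longrightarrow> _\<close> by blast
      then show ?thesis by (metis append_Cons)
    qed
  qed
qed

lemma hp_insert:
  assumes "hp V s t L" "(p, q) \<in> edg L" "hp B b1 b2 M" "V \<inter> B = {}" "sadj p b1" "sadj b2 q"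
  shows "\<exists>L'. hp (V \<union> B) s t L' \<and> edg L - {(p,q)} \<subseteq> edg L' \<and> edg M \<subseteq> edg L'"
proof -
  obtain xs ys where L: "L = xs @ p # q # ys" using edg_split[OF assms(2)] by blast
  have h1: "hp V s t ((xs @ [p]) @ (q # ys))" using assms(1) L by simp
  note sp = hp_split[OF h1]
  have M: "M \<noteq> []" using assms(3) unfolding hp_def by auto
  have a1: "hp (set (xs @ [p]) \<union> B) s b2 ((xs @ [p]) @ M)"
    using hp_append[OF sp(1) assms(3)] sp assms(4,5) by auto
  have a2: "hp ((set (xs @ [p]) \<union> B) \<union> set (q # ys)) s t (((xs @ [p]) @ M) @ (q # ys))"
    using hp_append[OF a1 sp(2)] sp assms(4,6) M by auto
  have sq: "(set (xs @ [p]) \<union> B) \<union> set (q # ys) = V \<union> B" using sp by auto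
  have e1: "edg L = edg (xs@[p]) \<union> edg (q#ys) \<union> {(p,q)}"
    using edg_append[of "xs@[p]" "q#ys"] L by simp
  have e2: "edg (((xs@[p])@M)@(q#ys)) = (edg (xs@[p]) \<union> edg M \<union> {(p, hd M)}) \<union> edg (q#ys) \<union> {(last M, q)}"
    using edg_append[of "(xs@[p])@M" "q#ys"] edg_append[of "xs@[p]" M] M by simp
  have "edg L - {(p,q)} \<subseteq> edg (((xs @ [p]) @ M) @ (q # ys))"
    unfolding e1 e2 by auto
  moreover have "edg M \<subseteq> edg (((xs @ [p]) @ M) @ (q # ys))"
    unfolding e2 by auto
  ultimately show ?thesis using a2 sq by metis
qed

lemma hp_explicit:
  assumes "P \<noteq> []" "distinct P" "\<forall>e\<in>edg P. sadj (fst e) (snd e)"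
  shows "hp (set P) (hd P) (last P) P"
  using assms unfolding hp_def by auto



definition colup :: "int \<Rightarrow> int \<Rightarrow> int \<Rightarrow> vtx list" where
  "colup x a b = map (\<lambda>y. (x, y)) [a..b]"

definition S :: "int \<Rightarrow> int \<Rightarrow> int \<Rightarrow> vtx set" where
  "S a y0 y1 = {(x, y). (x = a \<or> x = a + 1) \<and> y0 \<le> y \<and> y \<le> y1}"

definition Cl :: "int \<Rightarrow> int \<Rightarrow> int \<Rightarrow> vtx set" where
  "Cl x y0 y1 = {(x', y). x' = x \<and> y0 \<le> y \<and> y \<le> y1}"

definition ld :: "int \<Rightarrow> int \<Rightarrow> int \<Rightarrow> vtx list" where
  "ld a y0 y1 = concat (map (\<lambda>y. [(a + 1, y), (a, y)]) [y0..y1])"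

definition hv :: "int \<Rightarrow> vtx list \<Rightarrow> bool" where
  "hv x P \<longleftrightarrow> (\<exists>y. ((x, y), (x, y + 1)) \<in> edg P \<or> ((x, y + 1), (x, y)) \<in> edg P)"

lemma edg_app_sub1: "edg P \<subseteq> edg (P @ Q)"
  by (cases "P = []"; cases "Q = []") (auto simp: edg_append)
lemma edg_app_sub2: "edg Q \<subseteq> edg (P @ Q)"
  by (cases "P = []"; cases "Q = []") (auto simp: edg_append)

lemma hv_mono: "hv x P \<Longrightarrow> edg P \<subseteq> edg Q \<Longrightarrow> hv x Q"
  unfolding hv_def by blast
lemma hv_app1: "hv x P \<Longrightarrow> hv x (P @ Q)" using hv_mono edg_app_sub1 by blast
lemma hv_app2: "hv x Q \<Longrightarrow> hv x (P @ Q)" using hv_mono edg_app_sub2 by blast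
lemma hv_rev: "hv x P \<Longrightarrow> hv x (rev P)"
  unfolding hv_def edg_rev by force

lemma hp_app':
  assumes "hp A s x P" "hp B y t Q" "A \<inter> B = {}" "sadj x y" "A \<union> B = V"
  shows "hp V s t (P @ Q)"
  using hp_append[OF assms(1-4)] assms(5) by simp

lemma sadj_simp: "sadj (x1, y1) (x2, y2) \<longleftrightarrow> (x1, y1) \<noteq> (x2, y2) \<and> \<bar>x1 - x2\<bar> \<le> 1 \<and> \<bar>y1 - y2\<bar> \<le> 1"
  by (simp add: sadj_def)

lemma colup_hp: "a \<le> b \<Longrightarrow> hp (Cl x a b) (x, a) (x, b) (colup x a b)"
proof (induction b rule: int_ge_induct)
  case base
  have "Cl x a a = {(x,a)}" by (auto simp: Cl_def)
  then show ?case by (simp add: colup_def hp_single)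
next
  case (step i)
  have e: "colup x a (i + 1) = colup x a i @ [(x, i + 1)]"
    using step(1) by (simp add: colup_def upto_rec2)
  show ?case unfolding e
    by (rule hp_app'[OF step(2) hp_single]) (use step(1) in \<open>auto simp: Cl_def sadj_def\<close>)
qed

lemma colup_hv: "a < b \<Longrightarrow> hv x (colup x a b)"
proof -
  assume "a < b"
  then have "colup x a b = (x, a) # (x, a + 1) # colup x (a + 2) b"
    by (simp add: colup_def upto_rec1 add.commute)
  then show ?thesis unfolding hv_def by force
qed

lemma ld_hp: "y0 \<le> y1 \<Longrightarrow> hp (S a y0 y1) (a + 1, y0) (a, y1) (ld a y0 y1)"
proof (induction y1 rule: int_ge_induct)
  case base
  have "S a y0 y0 = set [(a + 1, y0), (a, y0)]" by (auto simp: S_def)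
  then show ?case using hp_explicit[of "[(a + 1, y0), (a, y0)]"]
    by (simp add: ld_def sadj_def)
next
  case (step i)
  have e: "ld a y0 (i + 1) = ld a y0 i @ [(a + 1, i + 1), (a, i + 1)]"
    using step(1) by (simp add: ld_def upto_rec2)
  have h2: "hp (set [(a + 1, i + 1), (a, i + 1)]) (a + 1, i + 1) (a, i + 1) [(a + 1, i + 1), (a, i + 1)]"
    using hp_explicit[of "[(a + 1, i + 1), (a, i + 1)]"] by (simp add: sadj_def)
  show ?case unfolding e
    by (rule hp_app'[OF step(2) h2]) (use step(1) in \<open>auto simp: S_def sadj_def\<close>)
qed



lemma hp4:
  assumes "distinct [u1,u2,u3,u4]" "sadj u1 u2" "sadj u2 u3" "sadj u3 u4"
  shows "hp {u1,u2,u3,u4} u1 u4 [u1,u2,u3,u4]"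
  using hp_explicit[of "[u1,u2,u3,u4]"] assms by auto

lemma hp2:
  assumes "u1 \<noteq> u2" "sadj u1 u2"
  shows "hp {u1,u2} u1 u2 [u1,u2]"
  using hp_explicit[of "[u1,u2]"] assms by auto

lemma SLX:
  assumes "y0 \<le> y1" "p \<in> S a y0 y1" "\<not> (y0 = y1 \<and> fst p = a)"
  shows "\<exists>e P. fst e = a \<and> hp (S a y0 y1) p e P \<and> (y0 < y1 \<longrightarrow> hv (a + 1) P)"
proof -
  obtain c r where p: "p = (c, r)" by (cases p)
  have cr: "c = a \<or> c = a + 1" "y0 \<le> r" "r \<le> y1" using assms(2) p by (auto simp: S_def)
  show ?thesis
  proof (cases "y0 = y1")
    case True
    then have pe: "p = (a + 1, y0)" using assms(3) cr p by auto
    have "S a y0 y1 = {(a + 1, y0), (a, y0)}" using True by (auto simp: S_def)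
    then have "hp (S a y0 y1) p (a, y0) [(a + 1, y0), (a, y0)]"
      using hp2[of "(a + 1, y0)" "(a, y0)"] pe by (simp add: sadj_def)
    then show ?thesis using True by fastforce
  next
    case False
    then have lt: "y0 < y1" using assms(1) by simp
    have cu: "\<And>x u v. u \<le> v \<Longrightarrow> hp (Cl x u v) (x, u) (x, v) (colup x u v)" by (rule colup_hp)
    have cd: "\<And>x u v. u \<le> v \<Longrightarrow> hp (Cl x u v) (x, v) (x, u) (rev (colup x u v))"
      by (rule hp_rev[OF colup_hp])
    consider "r = y1" | "r = y0" | "y0 < r \<and> r < y1" using cr lt by linarith
    then show ?thesis
    proof cases
      case 1
      show ?thesis
      proof (cases "c = a")
        case True
        have h12: "hp (Cl (a+1) y0 y1 \<union> Cl a y0 (y1-1)) (a+1,y1) (a,y1-1)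
             (rev (colup (a+1) y0 y1) @ colup a y0 (y1-1))"
          by (rule hp_append[OF cd cu]) (use lt in \<open>auto simp: Cl_def sadj_def\<close>)
        have "hp (S a y0 y1) (a,y1) (a,y1-1) ([(a,y1)] @ (rev (colup (a+1) y0 y1) @ colup a y0 (y1-1)))"
          by (rule hp_app'[OF hp_single h12]) (use lt in \<open>auto simp: Cl_def S_def sadj_def\<close>)
        moreover have "hv (a+1) ([(a,y1)] @ (rev (colup (a+1) y0 y1) @ colup a y0 (y1-1)))"
          by (intro hv_app2 hv_app1 hv_rev colup_hv lt)
        ultimately show ?thesis using p 1 True by fastforce
      next
        case False
        then have cc: "c = a + 1" using cr by simp
        have "hp (S a y0 y1) (a+1,y1) (a,y1) (rev (colup (a+1) y0 y1) @ colup a y0 y1)"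
          by (rule hp_app'[OF cd cu]) (use lt in \<open>auto simp: Cl_def S_def sadj_def\<close>)
        moreover have "hv (a+1) (rev (colup (a+1) y0 y1) @ colup a y0 y1)"
          by (intro hv_app1 hv_rev colup_hv lt)
        ultimately show ?thesis using p 1 cc by fastforce
      qed
    next
      case 2
      show ?thesis
      proof (cases "c = a")
        case True
        have h4: "hp {(a,y0),(a+1,y0),(a+1,y0+1),(a,y0+1)} (a,y0) (a,y0+1) [(a,y0),(a+1,y0),(a+1,y0+1),(a,y0+1)]"
          by (rule hp4) (auto simp: sadj_def)
        have hv4: "hv (a+1) [(a,y0),(a+1,y0),(a+1,y0+1),(a,y0+1)]"
          unfolding hv_def by force
        show ?thesis
        proof (cases "y1 = y0 + 1")
          case True
          have "S a y0 y1 = {(a,y0),(a+1,y0),(a+1,y0+1),(a,y0+1)}" using True by (auto simp: S_def)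
          then show ?thesis using h4 hv4 p 2 \<open>c = a\<close> by fastforce
        next
          case False
          have "hp (S a y0 y1) (a,y0) (a,y1) ([(a,y0),(a+1,y0),(a+1,y0+1),(a,y0+1)] @ ld a (y0+2) y1)"
            by (rule hp_app'[OF h4 ld_hp]) (use lt False in \<open>auto simp: S_def sadj_def\<close>)
          then show ?thesis using hv_app1[OF hv4] p 2 \<open>c = a\<close> by fastforce
        qed
      next
        case False
        then have cc: "c = a + 1" using cr by simp
        have h4: "hp {(a+1,y0),(a+1,y0+1),(a,y0),(a,y0+1)} (a+1,y0) (a,y0+1) [(a+1,y0),(a+1,y0+1),(a,y0),(a,y0+1)]"
          by (rule hp4) (auto simp: sadj_def)
        have hv4: "hv (a+1) [(a+1,y0),(a+1,y0+1),(a,y0),(a,y0+1)]"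
          unfolding hv_def by force
        show ?thesis
        proof (cases "y1 = y0 + 1")
          case True
          have "S a y0 y1 = {(a+1,y0),(a+1,y0+1),(a,y0),(a,y0+1)}" using True by (auto simp: S_def)
          then show ?thesis using h4 hv4 p 2 cc by fastforce
        next
          case False
          have "hp (S a y0 y1) (a+1,y0) (a,y1) ([(a+1,y0),(a+1,y0+1),(a,y0),(a,y0+1)] @ ld a (y0+2) y1)"
            by (rule hp_app'[OF h4 ld_hp]) (use lt False in \<open>auto simp: S_def sadj_def\<close>)
          then show ?thesis using hv_app1[OF hv4] p 2 cc by fastforce
        qed
      qed
    next
      case 3
      show ?thesis
      proof (cases "c = a")
        case True
        have h12: "hp (Cl a y0 r \<union> Cl (a+1) y0 r) (a,r) (a+1,r) (rev (colup a y0 r) @ colup (a+1) y0 r)"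
          by (rule hp_append[OF cd cu]) (use 3 in \<open>auto simp: Cl_def sadj_def\<close>)
        have "hp (S a y0 y1) (a,r) (a,y1) ((rev (colup a y0 r) @ colup (a+1) y0 r) @ ld a (r+1) y1)"
          by (rule hp_app'[OF h12 ld_hp]) (use 3 in \<open>auto simp: Cl_def S_def sadj_def\<close>)
        moreover have "hv (a+1) ((rev (colup a y0 r) @ colup (a+1) y0 r) @ ld a (r+1) y1)"
          by (intro hv_app1 hv_app2 colup_hv) (use 3 in simp)
        ultimately show ?thesis using p True by fastforce
      next
        case False
        then have cc: "c = a + 1" using cr by simp
        have h12: "hp (Cl (a+1) y0 r \<union> Cl a y0 r) (a+1,r) (a,r) (rev (colup (a+1) y0 r) @ colup a y0 r)"
          by (rule hp_append[OF cd cu]) (use 3 in \<open>auto simp: Cl_def sadj_def\<close>)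
        have "hp (S a y0 y1) (a+1,r) (a,y1) ((rev (colup (a+1) y0 r) @ colup a y0 r) @ ld a (r+1) y1)"
          by (rule hp_app'[OF h12 ld_hp]) (use 3 in \<open>auto simp: Cl_def S_def sadj_def\<close>)
        moreover have "hv (a+1) ((rev (colup (a+1) y0 r) @ colup a y0 r) @ ld a (r+1) y1)"
          by (intro hv_app1 hv_rev colup_hv) (use 3 in simp)
        ultimately show ?thesis using p cc by fastforce
      qed
    qed
  qed
qed



lemma hp_ends: "hp V s t P \<Longrightarrow> s \<in> V \<and> t \<in> V \<and> hd P = s \<and> last P = t \<and> P \<noteq> [] \<and> set P = V"
  unfolding hp_def by auto

lemma edg_snoc: "P \<noteq> [] \<Longrightarrow> (last P, v) \<in> edg (P @ [v])"
  using edg_append[of P "[v]"] by simp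

lemma edg_cons: "P \<noteq> [] \<Longrightarrow> (v, hd P) \<in> edg (v # P)"
  by (cases P) auto

definition BCP :: "int \<Rightarrow> int \<Rightarrow> vtx \<Rightarrow> vtx \<Rightarrow> bool" where
  "BCP a N s t \<longleftrightarrow> (\<exists>P1 P2 e1 e2. fst e1 = a \<and> fst e2 = a \<and> snd e1 \<noteq> snd e2 \<and>
     hp (set P1) s e1 P1 \<and> hp (set P2) e2 t P2 \<and> set P1 \<inter> set P2 = {} \<and> set P1 \<union> set P2 = S a 1 N \<and>
     (\<not> (N = 2 \<and> fst s = a + 1 \<and> fst t = a + 1) \<longrightarrow> hv (a + 1) P1 \<or> hv (a + 1) P2))"

lemma BCPI:
  assumes "hp A1 s e1 P1" "hp A2 e2 t P2" "A1 \<inter> A2 = {}" "A1 \<union> A2 = S a 1 N"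
    "fst e1 = a" "fst e2 = a" "snd e1 \<noteq> snd e2"
    "\<not> (N = 2 \<and> fst s = a + 1 \<and> fst t = a + 1) \<longrightarrow> hv (a + 1) P1 \<or> hv (a + 1) P2"
  shows "BCP a N s t"
  unfolding BCP_def using assms hp_ends[OF assms(1)] hp_ends[OF assms(2)] by metis

lemma BCP_swap: "BCP a N t s \<Longrightarrow> BCP a N s t"
  unfolding BCP_def
proof (elim exE conjE)
  fix P1 P2 e1 e2
  assume h: "fst e1 = a" "fst e2 = a" "snd e1 \<noteq> snd e2" "hp (set P1) t e1 P1" "hp (set P2) e2 s P2"
    "set P1 \<inter> set P2 = {}" "set P1 \<union> set P2 = S a 1 N"
    "\<not> (N = 2 \<and> fst t = a + 1 \<and> fst s = a + 1) \<longrightarrow> hv (a + 1) P1 \<or> hv (a + 1) P2"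
  show "\<exists>P1 P2 e1 e2. fst e1 = a \<and> fst e2 = a \<and> snd e1 \<noteq> snd e2 \<and>
     hp (set P1) s e1 P1 \<and> hp (set P2) e2 t P2 \<and> set P1 \<inter> set P2 = {} \<and> set P1 \<union> set P2 = S a 1 N \<and>
     (\<not> (N = 2 \<and> fst s = a + 1 \<and> fst t = a + 1) \<longrightarrow> hv (a + 1) P1 \<or> hv (a + 1) P2)"
    apply (rule exI[of _ "rev P2"], rule exI[of _ "rev P1"], rule exI[of _ e2], rule exI[of _ e1])
    using h hp_rev[OF h(5)] hp_rev[OF h(4)] hv_rev by auto
qed



lemma SLX':
  assumes "y0 \<le> y1" "p \<in> S a y0 y1" "\<not> (y0 = y1 \<and> fst p = a)"
  obtains e P where "fst e = a" "y0 \<le> snd e" "snd e \<le> y1" "hp (S a y0 y1) p e P"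
    "y0 < y1 \<Longrightarrow> hv (a + 1) P"
proof -
  obtain e P where h: "fst e = a" "hp (S a y0 y1) p e P" "y0 < y1 \<longrightarrow> hv (a + 1) P"
    using SLX[OF assms] by blast
  have "e \<in> S a y0 y1" using hp_ends[OF h(2)] by simp
  then show ?thesis using that h by (auto simp: S_def)
qed

lemma BC_gen:
  assumes "1 \<le> k" "k < N" "s \<in> S a 1 k" "t \<in> S a (k+1) N" "\<not> (k = 1 \<and> fst s = a)"
    "\<not> (k + 1 = N \<and> fst t = a)" "k = 1 \<and> N = 2 \<longrightarrow> fst s = a + 1 \<and> fst t = a + 1"
  shows "BCP a N s t"
proof -
  obtain e1 P1 where p1: "fst e1 = a" "1 \<le> snd e1" "snd e1 \<le> k" "hp (S a 1 k) s e1 P1"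
    "1 < k \<Longrightarrow> hv (a + 1) P1"
    using SLX'[of 1 k s a] assms by auto
  obtain e2 P2 where p2: "fst e2 = a" "k+1 \<le> snd e2" "snd e2 \<le> N" "hp (S a (k+1) N) t e2 P2"
    "k+1 < N \<Longrightarrow> hv (a + 1) P2"
    using SLX'[of "k+1" N t a] assms by auto
  show ?thesis
  proof (rule BCPI[OF p1(4) hp_rev[OF p2(4)]])
    show "S a 1 k \<inter> S a (k + 1) N = {}" by (auto simp: S_def)
    show "S a 1 k \<union> S a (k + 1) N = S a 1 N" using assms(1,2) by (auto simp: S_def)
    show "snd e1 \<noteq> snd e2" using p1 p2 by simp
    show "\<not> (N = 2 \<and> fst s = a + 1 \<and> fst t = a + 1) \<longrightarrow> hv (a + 1) P1 \<or> hv (a + 1) (rev P2)"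
      using p1(5) p2(5) hv_rev assms(1,2,7) by force
  qed (use p1 p2 in auto)
qed

lemma BC_same:
  assumes "2 \<le> N" "1 \<le> i" "i \<le> N"
  shows "BCP a N (a, i) (a + 1, i)"
proof (cases "i = N")
  case True
  have m: "(a+1, N-1) \<in> S a 1 (N-1)" using assms by (auto simp: S_def)
  obtain e Q where q: "fst e = a" "1 \<le> snd e" "snd e \<le> N - 1" "hp (S a 1 (N-1)) (a+1, N-1) e Q"
    "1 < N - 1 \<Longrightarrow> hv (a+1) Q"
    by (rule SLX'[OF _ m]) (use assms in auto)
  have h2: "hp (S a 1 (N-1) \<union> {(a+1,N)}) e (a+1,N) (rev Q @ [(a+1,N)])"
    by (rule hp_append[OF hp_rev[OF q(4)] hp_single]) (auto simp: S_def sadj_def)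
  have Q: "Q \<noteq> []" "hd Q = (a+1,N-1)" using hp_ends[OF q(4)] by auto
  have "((a+1,N-1),(a+1,N)) \<in> edg (rev Q @ [(a+1,N)])"
    using edg_snoc[of "rev Q" "(a+1,N)"] Q by (simp add: last_rev)
  then have hv2: "hv (a+1) (rev Q @ [(a+1,N)])" unfolding hv_def by (metis diff_add_cancel)
  show ?thesis unfolding True
    by (rule BCPI[OF hp_single h2]) (use q True hv2 assms in \<open>auto simp: S_def\<close>)
next
  case False
  have m: "(a+1, i+1) \<in> S a (i+1) N" using assms False by (auto simp: S_def)
  obtain e Q where q: "fst e = a" "i+1 \<le> snd e" "snd e \<le> N" "hp (S a (i+1) N) (a+1, i+1) e Q"
    "i+1 < N \<Longrightarrow> hv (a+1) Q"
    by (rule SLX'[OF _ m]) (use assms False in auto)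
  have h2: "hp (S a (i+1) N \<union> {(a+1,i)}) e (a+1,i) (rev Q @ [(a+1,i)])"
    by (rule hp_append[OF hp_rev[OF q(4)] hp_single]) (auto simp: S_def sadj_def)
  have Q: "Q \<noteq> []" "hd Q = (a+1,i+1)" using hp_ends[OF q(4)] by auto
  have "((a+1,i+1),(a+1,i)) \<in> edg (rev Q @ [(a+1,i)])"
    using edg_snoc[of "rev Q" "(a+1,i)"] Q by (simp add: last_rev)
  then have hv2: "hv (a+1) (rev Q @ [(a+1,i)])" unfolding hv_def by blast
  show ?thesis
  proof (cases "i = 1")
    case True
    show ?thesis
      by (rule BCPI[OF hp_single h2]) (use q True hv2 assms in \<open>auto simp: S_def\<close>)
  next
    case i1: False
    have m': "(a+1, i-1) \<in> S a 1 (i-1)" using assms i1 by (auto simp: S_def)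
    obtain e' Q' where q': "fst e' = a" "1 \<le> snd e'" "snd e' \<le> i - 1" "hp (S a 1 (i-1)) (a+1, i-1) e' Q'"
      "1 < i - 1 \<Longrightarrow> hv (a+1) Q'"
      by (rule SLX'[OF _ m']) (use assms i1 in auto)
    have h1: "hp ({(a,i)} \<union> S a 1 (i-1)) (a,i) e' ([(a,i)] @ Q')"
      by (rule hp_append[OF hp_single q'(4)]) (auto simp: S_def sadj_def)
    show ?thesis
      by (rule BCPI[OF h1 h2]) (use q q' hv2 assms False i1 in \<open>auto simp: S_def\<close>)
  qed
qed



lemma hp3:
  assumes "distinct [u1,u2,u3]" "sadj u1 u2" "sadj u2 u3"
  shows "hp {u1,u2,u3} u1 u3 [u1,u2,u3]"
  using hp_explicit[of "[u1,u2,u3]"] assms by auto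

lemma BC_E1:
  assumes "2 \<le> N" "t = (a,2) \<or> t = (a+1,2)" "\<not> (N = 2 \<and> t = (a,2))"
  shows "BCP a N (a,1) t"
proof (cases "N = 2")
  case True
  then have t: "t = (a+1,2)" using assms by auto
  have h2: "hp {(a,2),(a+1,1),(a+1,2)} (a,2) (a+1,2) [(a,2),(a+1,1),(a+1,2)]"
    by (rule hp3) (auto simp: sadj_def)
  have hv2: "hv (a+1) [(a,2),(a+1,1),(a+1,2)]" unfolding hv_def by force
  show ?thesis unfolding t
    by (rule BCPI[OF hp_single h2]) (use True hv2 in \<open>auto simp: S_def\<close>)
next
  case False
  have m: "(a+1, 3) \<in> S a 3 N" using assms False by (auto simp: S_def)
  obtain e Q where q: "fst e = a" "3 \<le> snd e" "snd e \<le> N" "hp (S a 3 N) (a+1, 3) e Q"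
    "3 < N \<Longrightarrow> hv (a+1) Q"
    by (rule SLX'[OF _ m]) (use assms False in auto)
  show ?thesis
  proof (cases "t = (a,2)")
    case True
    have h3: "hp {(a+1,2),(a+1,1),(a,2)} (a+1,2) (a,2) [(a+1,2),(a+1,1),(a,2)]"
      by (rule hp3) (auto simp: sadj_def)
    have hv3: "hv (a+1) [(a+1,2),(a+1,1),(a,2)]" unfolding hv_def by force
    have h2: "hp (S a 3 N \<union> {(a+1,2),(a+1,1),(a,2)}) e (a,2) (rev Q @ [(a+1,2),(a+1,1),(a,2)])"
      by (rule hp_append[OF hp_rev[OF q(4)] h3]) (auto simp: S_def sadj_def)
    show ?thesis unfolding True
      by (rule BCPI[OF hp_single h2]) (use q assms False hv_app2[OF hv3] in \<open>auto simp: S_def\<close>)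
  next
    case False2: False
    then have t: "t = (a+1,2)" using assms by auto
    have h3: "hp {(a,2),(a+1,1),(a+1,2)} (a,2) (a+1,2) [(a,2),(a+1,1),(a+1,2)]"
      by (rule hp3) (auto simp: sadj_def)
    have hv3: "hv (a+1) [(a,2),(a+1,1),(a+1,2)]" unfolding hv_def by force
    have h2: "hp (S a 3 N \<union> {(a,2),(a+1,1),(a+1,2)}) e (a+1,2) (rev Q @ [(a,2),(a+1,1),(a+1,2)])"
      by (rule hp_append[OF hp_rev[OF q(4)] h3]) (auto simp: S_def sadj_def)
    show ?thesis unfolding t
      by (rule BCPI[OF hp_single h2]) (use q assms False hv_app2[OF hv3] in \<open>auto simp: S_def\<close>)
  qed
qed

lemma BC_E2:
  assumes "2 \<le> N" "s = (a,N-1) \<or> s = (a+1,N-1)" "\<not> (N = 2 \<and> s = (a,1))"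
  shows "BCP a N s (a,N)"
proof (cases "N = 2")
  case True
  then have s: "s = (a+1,1)" using assms by auto
  have h1: "hp {(a+1,1),(a+1,2),(a,1)} (a+1,1) (a,1) [(a+1,1),(a+1,2),(a,1)]"
    by (rule hp3) (auto simp: sadj_def)
  have hv1: "hv (a+1) [(a+1,1),(a+1,2),(a,1)]" unfolding hv_def by force
  show ?thesis unfolding s True
    by (rule BCPI[OF h1 hp_single]) (use hv1 in \<open>auto simp: S_def\<close>)
next
  case False
  have m: "(a+1, N-2) \<in> S a 1 (N-2)" using assms False by (auto simp: S_def)
  obtain e Q where q: "fst e = a" "1 \<le> snd e" "snd e \<le> N-2" "hp (S a 1 (N-2)) (a+1, N-2) e Q"
    "1 < N-2 \<Longrightarrow> hv (a+1) Q"
    by (rule SLX'[OF _ m]) (use assms False in auto)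
  show ?thesis
  proof (cases "s = (a,N-1)")
    case True
    have h3: "hp {(a,N-1),(a+1,N),(a+1,N-1)} (a,N-1) (a+1,N-1) [(a,N-1),(a+1,N),(a+1,N-1)]"
      by (rule hp3) (auto simp: sadj_def)
    have hv3: "hv (a+1) [(a,N-1),(a+1,N),(a+1,N-1)]" unfolding hv_def
      by (rule exI[of _ "N-1"]) simp
    have h1: "hp ({(a,N-1),(a+1,N),(a+1,N-1)} \<union> S a 1 (N-2)) (a,N-1) e ([(a,N-1),(a+1,N),(a+1,N-1)] @ Q)"
      by (rule hp_append[OF h3 q(4)]) (auto simp: S_def sadj_def)
    show ?thesis unfolding True
      by (rule BCPI[OF h1 hp_single]) (use q assms False hv_app1[OF hv3] in \<open>auto simp: S_def\<close>)
  next
    case False2: False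
    then have s: "s = (a+1,N-1)" using assms by auto
    have h3: "hp {(a+1,N-1),(a+1,N),(a,N-1)} (a+1,N-1) (a,N-1) [(a+1,N-1),(a+1,N),(a,N-1)]"
      by (rule hp3) (auto simp: sadj_def)
    have hv3: "hv (a+1) [(a+1,N-1),(a+1,N),(a,N-1)]" unfolding hv_def
      by (rule exI[of _ "N-1"]) simp
    have h1: "hp ({(a+1,N-1),(a+1,N),(a,N-1)} \<union> S a 1 (N-2)) (a+1,N-1) e ([(a+1,N-1),(a+1,N),(a,N-1)] @ Q)"
      by (rule hp_append[OF h3 q(4)]) (auto simp: S_def sadj_def)
    show ?thesis unfolding s
      by (rule BCPI[OF h1 hp_single]) (use q assms False hv_app1[OF hv3] in \<open>auto simp: S_def\<close>)
  qed
qed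

lemma BC_E3: "BCP a 3 (a,1) (a,3)"
proof -
  have h: "hp (set [(a,2),(a+1,1),(a+1,2),(a+1,3),(a,3)]) (a,2) (a,3) [(a,2),(a+1,1),(a+1,2),(a+1,3),(a,3)]"
    using hp_explicit[of "[(a,2),(a+1,1),(a+1,2),(a+1,3),(a,3)]"] by (simp add: sadj_def)
  have hv2: "hv (a+1) [(a,2),(a+1,1),(a+1,2),(a+1,3),(a,3)]" unfolding hv_def by force
  show ?thesis
    by (rule BCPI[OF hp_single h]) (use hv2 in \<open>auto simp: S_def\<close>)
qed

lemma BC0:
  assumes "2 \<le> N" "s \<in> S a 1 N" "t \<in> S a 1 N" "s \<noteq> t" "\<not> (N = 2 \<and> fst s = a \<and> fst t = a)"
    "snd s < snd t \<or> (snd s = snd t \<and> fst s = a)"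
  shows "BCP a N s t"
proof -
  obtain c i where s: "s = (c,i)" by (cases s)
  obtain d j where t: "t = (d,j)" by (cases t)
  have r: "c = a \<or> c = a+1" "d = a \<or> d = a+1" "1 \<le> i" "i \<le> N" "1 \<le> j" "j \<le> N"
    using assms(2,3) s t by (auto simp: S_def)
  show ?thesis
  proof (cases "i = j")
    case True
    then have "c = a" "d = a+1" using assms(4,6) r s t by auto
    then show ?thesis using BC_same[OF assms(1) r(3,4), of a] s t True by simp
  next
    case False
    then have ij: "i < j" using assms(6) s t by auto
    show ?thesis
    proof (cases "s = (a,1) \<and> j = 2")
      case True
      then show ?thesis using BC_E1[OF assms(1), of t a] r t assms(5) s by auto
    next
      case nE1: False
      show ?thesis
      proof (cases "t = (a,N) \<and> i = N-1")
        case True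
        then show ?thesis using BC_E2[OF assms(1), of s a] r s assms(5) t by auto
      next
        case nE2: False
        show ?thesis
        proof (cases "s = (a,1) \<and> t = (a,N) \<and> N = 3")
          case True
          then show ?thesis using BC_E3 by auto
        next
          case nE3: False
          show ?thesis
          proof (cases "t = (a,N)")
            case False
            show ?thesis
              by (rule BC_gen[of "j-1"]) (use r s t ij nE1 nE2 False in \<open>auto simp: S_def\<close>)
          next
            case tN: True
            show ?thesis
            proof (cases "s = (a,1)")
              case False
              show ?thesis
                by (rule BC_gen[of i]) (use r s t ij nE1 nE2 False tN in \<open>auto simp: S_def\<close>)
            next
              case True
              then have "N \<ge> 4" using nE3 tN assms(1,5) r s t by auto
              then show ?thesis
                by (intro BC_gen[of 2]) (use r s t True tN in \<open>auto simp: S_def\<close>)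
            qed
          qed
        qed
      qed
    qed
  qed
qed

lemma BC:
  assumes "2 \<le> N" "s \<in> S a 1 N" "t \<in> S a 1 N" "s \<noteq> t" "\<not> (N = 2 \<and> fst s = a \<and> fst t = a)"
  shows "BCP a N s t"
proof (cases "snd s < snd t \<or> (snd s = snd t \<and> fst s = a)")
  case True
  then show ?thesis using BC0[OF assms] by simp
next
  case False
  then have "snd t < snd s \<or> (snd t = snd s \<and> fst t = a)"
    using assms(2,3,4) by (cases s, cases t) (auto simp: S_def)
  then have "BCP a N t s" using BC0[OF assms(1,3,2) assms(4)[symmetric]] assms(5) by auto
  then show ?thesis by (rule BCP_swap)
qed



definition hh :: "int \<Rightarrow> vtx list \<Rightarrow> bool" where
  "hh y P \<longleftrightarrow> (\<exists>x. ((x, y), (x + 1, y)) \<in> edg P \<or> ((x + 1, y), (x, y)) \<in> edg P)"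

definition ew :: "vtx list \<Rightarrow> bool" where
  "ew Q \<longleftrightarrow> ((1,1),(2,1)) \<in> edg Q \<or> ((2,1),(1,1)) \<in> edg Q"

definition F1x :: "int \<Rightarrow> int \<Rightarrow> vtx \<Rightarrow> vtx \<Rightarrow> bool" where
  "F1x m n s t \<longleftrightarrow> n = 2 \<and> fst s = fst t \<and> 2 \<le> fst s \<and> fst s \<le> m - 1"

definition F2b :: "int \<Rightarrow> vtx \<Rightarrow> vtx \<Rightarrow> bool" where
  "F2b n s t \<longleftrightarrow> (n = 2 \<and> (s,t) \<in> set [((1,1),(2,1)),((2,1),(1,1)),((1,1),(2,2)),((2,2),(1,1)),((2,1),(1,2)),((1,2),(2,1))])
     \<or> (n \<ge> 3 \<and> ((s,t) = ((1,1),(2,1)) \<or> (s,t) = ((2,1),(1,1))))"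

definition Good :: "int \<Rightarrow> int \<Rightarrow> vtx \<Rightarrow> vtx \<Rightarrow> bool" where
  "Good m n s t \<longleftrightarrow> (\<exists>Q. hp (R m n) s t Q \<and> ew Q \<and> (\<not> (n = 2 \<and> fst s = m \<and> fst t = m) \<longrightarrow> hv m Q)
     \<and> (m \<le> 4 \<and> 4 \<le> n \<longrightarrow> hh n Q))"

lemma hh_rev: "hh y P \<Longrightarrow> hh y (rev P)"
  unfolding hh_def edg_rev by force
lemma ew_rev: "ew P \<Longrightarrow> ew (rev P)"
  unfolding ew_def edg_rev by force

lemma Good_swap: "Good m n s t \<Longrightarrow> Good m n t s"
  unfolding Good_def using hp_rev hv_rev hh_rev ew_rev by blast

definition grid :: "int \<Rightarrow> int \<Rightarrow> vtx list" where
  "grid m n = concat (map (\<lambda>x. map (\<lambda>y. (x, y)) [1..n]) [1..m])"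

lemma set_grid: "set (grid m n) = R m n"
  unfolding grid_def R_def by auto


lemma card_R: "0 \<le> m \<Longrightarrow> 0 \<le> n \<Longrightarrow> card (R m n) = nat m * nat n"
proof -
  assume "0 \<le> m" "0 \<le> n"
  have "R m n = {1..m} \<times> {1..n}" unfolding R_def by auto
  then show ?thesis by (simp add: card_cartesian_product)
qed

fun pairs :: "'a list \<Rightarrow> ('a \<times> 'a) list" where
  "pairs [] = []"
| "pairs (x # xs) = map (\<lambda>y. (x, y)) xs @ pairs xs"

lemma pairs_cover: "x \<in> set L \<Longrightarrow> y \<in> set L \<Longrightarrow> x \<noteq> y \<Longrightarrow> (x, y) \<in> set (pairs L) \<or> (y, x) \<in> set (pairs L)"
  by (induction L) auto

definition chk :: "int \<Rightarrow> int \<Rightarrow> vtx \<Rightarrow> vtx \<Rightarrow> vtx list \<Rightarrow> bool" where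
  "chk m n s t q \<longleftrightarrow> q \<noteq> [] \<and> hd q = s \<and> last q = t \<and> distinct q \<and>
     list_all (\<lambda>v. 1 \<le> fst v \<and> fst v \<le> m \<and> 1 \<le> snd v \<and> snd v \<le> n) q \<and> int (length q) = m * n \<and>
     list_all (\<lambda>e. sadj (fst e) (snd e)) (zip q (tl q)) \<and>
     (((1,1),(2,1)) \<in> set (zip q (tl q)) \<or> ((2,1),(1,1)) \<in> set (zip q (tl q))) \<and>
     (\<not> (n = 2 \<and> fst s = m \<and> fst t = m) \<longrightarrow> list_ex (\<lambda>e. fst (fst e) = m \<and> fst (snd e) = m) (zip q (tl q))) \<and>
     (m \<le> 4 \<and> 4 \<le> n \<longrightarrow> list_ex (\<lambda>e. snd (fst e) = n \<and> snd (snd e) = n) (zip q (tl q)))"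

lemma chk_Good:
  assumes "chk m n s t q" "0 \<le> m" "0 \<le> n"
  shows "Good m n s t"
proof -
  have c: "q \<noteq> []" "hd q = s" "last q = t" "distinct q"
    "\<forall>v\<in>set q. 1 \<le> fst v \<and> fst v \<le> m \<and> 1 \<le> snd v \<and> snd v \<le> n" "int (length q) = m * n"
    "\<forall>e\<in>edg q. sadj (fst e) (snd e)"
    using assms(1) unfolding chk_def edg_def list_all_iff by auto
  have sub: "set q \<subseteq> R m n" using c(5) unfolding R_def by auto
  have "card (set q) = length q" using c(4) by (simp add: distinct_card)
  also have "\<dots> = nat m * nat n" using c(6) assms(2,3) by (simp add: nat_mult_distrib[symmetric]) 
  finally have "card (set q) = card (R m n)" using card_R[OF assms(2,3)] by simp
  moreover have "finite (R m n)" unfolding set_grid[symmetric] by simp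
  ultimately have eq: "set q = R m n" using sub by (simp add: card_subset_eq)
  have hp: "hp (R m n) s t q" unfolding hp_def using c eq by auto
  have ew: "ew q" using assms(1) unfolding chk_def ew_def edg_def by auto
  have hv: "\<not> (n = 2 \<and> fst s = m \<and> fst t = m) \<longrightarrow> hv m q"
  proof
    assume "\<not> (n = 2 \<and> fst s = m \<and> fst t = m)"
    then have "list_ex (\<lambda>e. fst (fst e) = m \<and> fst (snd e) = m) (zip q (tl q))"
      using assms(1) unfolding chk_def by blast
    then obtain u v where uv: "(u,v) \<in> edg q" "fst u = m" "fst v = m"
      unfolding edg_def list_ex_iff by auto
    have "sadj u v" using c(7) uv(1) by auto
    then have "snd v = snd u + 1 \<or> snd u = snd v + 1" using uv(2,3)
      by (cases u, cases v) (auto simp: sadj_def)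
    then show "hv m q" unfolding hv_def using uv
      by (cases u, cases v) auto
  qed
  have hh: "m \<le> 4 \<and> 4 \<le> n \<longrightarrow> hh n q"
  proof
    assume "m \<le> 4 \<and> 4 \<le> n"
    then have "list_ex (\<lambda>e. snd (fst e) = n \<and> snd (snd e) = n) (zip q (tl q))"
      using assms(1) unfolding chk_def by blast
    then obtain u v where uv: "(u,v) \<in> edg q" "snd u = n" "snd v = n"
      unfolding edg_def list_ex_iff by auto
    have "sadj u v" using c(7) uv(1) by auto
    then have "fst v = fst u + 1 \<or> fst u = fst v + 1" using uv(2,3)
      by (cases u, cases v) (auto simp: sadj_def)
    then show "hh n q" unfolding hh_def using uv
      by (cases u, cases v) auto
  qed
  show ?thesis unfolding Good_def using hp ew hv hh by blast
qed

lemma list_all2_ex: "list_all2 P xs ys \<Longrightarrow> x \<in> set xs \<Longrightarrow> \<exists>y. P x y"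
  by (induction xs ys rule: list_all2_induct) auto

lemma base_from_table:
  assumes "list_all2 (\<lambda>st q. chk m n (fst st) (snd st) q)
             (filter (\<lambda>st. \<not> F1x m n (fst st) (snd st) \<and> \<not> F2b n (fst st) (snd st)) (pairs (grid m n))) W"
    "0 \<le> m" "0 \<le> n"
    "s \<in> R m n" "t \<in> R m n" "s \<noteq> t" "\<not> F1x m n s t" "\<not> F2b n s t"
  shows "Good m n s t"
proof -
  have sym: "F1x m n s t = F1x m n t s" "F2b n s t = F2b n t s"
    unfolding F1x_def F2b_def by auto
  from pairs_cover[of s "grid m n" t] assms(4-6) set_grid
  consider "(s,t) \<in> set (pairs (grid m n))" | "(t,s) \<in> set (pairs (grid m n))" by auto
  then show ?thesis
  proof cases
    case 1
    then have "(s,t) \<in> set (filter (\<lambda>st. \<not> F1x m n (fst st) (snd st) \<and> \<not> F2b n (fst st) (snd st)) (pairs (grid m n)))"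
      using assms(7,8) by simp
    then obtain q where "chk m n s t q" using list_all2_ex[OF assms(1)] by fastforce
    then show ?thesis using chk_Good assms(2,3) by blast
  next
    case 2
    then have "(t,s) \<in> set (filter (\<lambda>st. \<not> F1x m n (fst st) (snd st) \<and> \<not> F2b n (fst st) (snd st)) (pairs (grid m n)))"
      using assms(7,8) sym by simp
    then obtain q where "chk m n t s q" using list_all2_ex[OF assms(1)] by fastforce
    then show ?thesis using chk_Good assms(2,3) Good_swap by blast
  qed
qed



definition U :: "int \<Rightarrow> int \<Rightarrow> int \<Rightarrow> vtx list" where
  "U a N y = rev (colup a 1 y) @ colup (a + 1) 1 N @ rev (colup a (y + 1) N)"

lemma U_hp:
  assumes "1 \<le> y" "y < N"
  shows "hp (S a 1 N) (a, y) (a, y + 1) (U a N y)" "hv (a + 1) (U a N y)"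
proof -
  have h1: "hp (Cl a 1 y) (a, y) (a, 1) (rev (colup a 1 y))" using hp_rev[OF colup_hp] assms by simp
  have h2: "hp (Cl (a+1) 1 N) (a+1, 1) (a+1, N) (colup (a+1) 1 N)" using colup_hp assms by simp
  have h3: "hp (Cl a (y+1) N) (a, N) (a, y+1) (rev (colup a (y+1) N))" using hp_rev[OF colup_hp] assms by simp
  have h23: "hp (Cl (a+1) 1 N \<union> Cl a (y+1) N) (a+1, 1) (a, y+1) (colup (a + 1) 1 N @ rev (colup a (y + 1) N))"
    by (rule hp_append[OF h2 h3]) (auto simp: Cl_def sadj_def)
  show "hp (S a 1 N) (a, y) (a, y + 1) (U a N y)" unfolding U_def
    by (rule hp_app'[OF h1 h23]) (use assms in \<open>auto simp: Cl_def S_def sadj_def\<close>)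
  show "hv (a + 1) (U a N y)" unfolding U_def
    by (intro hv_app2 hv_app1 colup_hv) (use assms in simp)
qed

definition tr :: "vtx \<Rightarrow> vtx" where "tr v = (snd v, fst v)"

lemma tr_tr[simp]: "tr (tr v) = v" by (simp add: tr_def)
lemma tr_pair[simp]: "tr (x, y) = (y, x)" by (simp add: tr_def)
lemma tr_sadj: "sadj u v \<Longrightarrow> sadj (tr u) (tr v)"
  by (cases u, cases v) (auto simp: sadj_def)
lemma tr_inj: "inj_on tr V" by (metis inj_onI tr_tr)

lemma hp_tr: "hp V s t P \<Longrightarrow> hp (tr ` V) (tr s) (tr t) (map tr P)"
  by (rule hp_map[OF _ tr_inj tr_sadj])

lemma hv_tr: "hv x P \<Longrightarrow> hh x (map tr P)"
  unfolding hv_def hh_def edg_map by force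

lemma edg_sub_append: "edg P \<subseteq> edg (P @ Q @ R')" "edg Q \<subseteq> edg (P @ Q @ R')" "edg R' \<subseteq> edg (P @ Q @ R')"
proof -
  show "edg P \<subseteq> edg (P @ Q @ R')" by (rule edg_app_sub1)
  have a: "edg Q \<subseteq> edg (Q @ R')" by (rule edg_app_sub1)
  have b: "edg (Q @ R') \<subseteq> edg (P @ Q @ R')" by (rule edg_app_sub2)
  show "edg Q \<subseteq> edg (P @ Q @ R')" using a b by (rule subset_trans)
  have c: "edg R' \<subseteq> edg (Q @ R')" by (rule edg_app_sub2)
  show "edg R' \<subseteq> edg (P @ Q @ R')" using c b by (rule subset_trans)
qed

lemma ew_mono: "ew P \<Longrightarrow> edg P \<subseteq> edg Q \<Longrightarrow> ew Q" unfolding ew_def by blast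
lemma hh_mono: "hh x P \<Longrightarrow> edg P \<subseteq> edg Q \<Longrightarrow> hh x Q" unfolding hh_def by blast

lemma edg_set: "(u, v) \<in> edg P \<Longrightarrow> u \<in> set P \<and> v \<in> set P"
  unfolding edg_nth by auto

definition Adm :: "int \<Rightarrow> int \<Rightarrow> vtx \<Rightarrow> vtx \<Rightarrow> bool" where
  "Adm m n s t \<longleftrightarrow> s \<in> R m n \<and> t \<in> R m n \<and> s \<noteq> t \<and> \<not> F1x m n s t \<and> \<not> F2b n s t"

lemma F1x_sym: "F1x m n s t = F1x m n t s" unfolding F1x_def by auto
lemma F2b_sym: "F2b n s t = F2b n t s" unfolding F2b_def by auto

lemma Adm_swap: "Adm m n s t \<Longrightarrow> Adm m n t s"
  unfolding Adm_def using F1x_sym F2b_sym by metis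

lemma three_app:
  assumes "hp A s x P" "hp B y z Q" "hp C w t R'" "A \<inter> B = {}" "A \<inter> C = {}" "B \<inter> C = {}"
    "sadj x y" "sadj z w"
  shows "hp (A \<union> B \<union> C) s t (P @ Q @ R')"
proof -
  have "hp (B \<union> C) y t (Q @ R')" by (rule hp_append[OF assms(2,3,6,8)])
  then have "hp (A \<union> (B \<union> C)) s t (P @ Q @ R')" by (rule hp_append[OF assms(1)]) (use assms in auto)
  then show ?thesis by (simp add: Un_assoc)
qed



lemma R_col: "3 \<le> m \<Longrightarrow> R (m-2) n \<union> S (m-1) 1 n = R m n" "R (m-2) n \<inter> S (m-1) 1 n = {}"
  by (auto simp: R_def S_def)

lemma GoodI:
  assumes "hp (R m n) s t Q" "ew Q" "\<not> (n = 2 \<and> fst s = m \<and> fst t = m) \<Longrightarrow> hv m Q"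
    "m \<le> 4 \<Longrightarrow> 4 \<le> n \<Longrightarrow> hh n Q"
  shows "Good m n s t"
  unfolding Good_def using assms by blast

lemma F2b_fst3: "3 \<le> fst u \<Longrightarrow> \<not> F2b n u v" "3 \<le> fst v \<Longrightarrow> \<not> F2b n u v"
  unfolding F2b_def by auto

lemma F2b_snd3: "3 \<le> snd u \<Longrightarrow> \<not> F2b n u v" "3 \<le> snd v \<Longrightarrow> \<not> F2b n u v"
  unfolding F2b_def by auto

lemma col_C2:
  assumes m5: "5 \<le> m" and n2: "2 \<le> n"
    and IH: "\<And>s t. Adm (m-2) n s t \<Longrightarrow> Good (m-2) n s t"
    and adm: "Adm m n s t" and sb: "m - 1 \<le> fst s" and tl: "fst t \<le> m - 2"
  shows "Good m n s t"
proof -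
  have sR: "s \<in> R m n" and tR: "t \<in> R m n" using adm by (auto simp: Adm_def)
  have sS: "s \<in> S (m-1) 1 n" using sR sb by (auto simp: R_def S_def)
  obtain e P where e: "fst e = m-1" "1 \<le> snd e" "snd e \<le> n" "hp (S (m-1) 1 n) s e P"
    "1 < n \<Longrightarrow> hv (m-1+1) P"
    by (rule SLX'[OF _ sS]) (use n2 in auto)
  define y' where "y' = (if (m-2, snd e) \<noteq> t then snd e else if snd e > 1 then snd e - 1 else snd e + 1)"
  have y': "1 \<le> y'" "y' \<le> n" "\<bar>y' - snd e\<bar> \<le> 1" "(m-2, y') \<noteq> t"
    unfolding y'_def using e n2 by auto
  have tL: "t \<in> R (m-2) n" using tR tl by (auto simp: R_def)
  have adm': "Adm (m-2) n (m-2, y') t"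
    unfolding Adm_def using y' tL m5 F2b_fst3[of "(m-2,y')"] by (auto simp: R_def F1x_def)
  obtain Q where Q: "hp (R (m-2) n) (m-2, y') t Q" "ew Q"
    using IH[OF adm'] unfolding Good_def by blast
  have hpPQ: "hp (S (m-1) 1 n \<union> R (m-2) n) s t (P @ Q)"
    by (rule hp_append[OF e(4) Q(1)]) (use e y' in \<open>auto simp: R_def S_def sadj_def\<close>)
  have "S (m-1) 1 n \<union> R (m-2) n = R m n" using R_col(1)[of m n] m5 by (simp add: Un_commute)
  then have "hp (R m n) s t (P @ Q)" using hpPQ by simp
  moreover have "ew (P @ Q)" using ew_mono[OF Q(2) edg_app_sub2] .
  moreover have "hv m (P @ Q)" using hv_app1 e(5) n2 by force
  ultimately show ?thesis using m5 by (intro GoodI) auto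
qed

lemma col_step:
  assumes m5: "5 \<le> m" and n2: "2 \<le> n"
    and IH: "\<And>s t. Adm (m-2) n s t \<Longrightarrow> Good (m-2) n s t"
    and adm: "Adm m n s t"
  shows "Good m n s t"
proof -
  have sR: "s \<in> R m n" and tR: "t \<in> R m n" and st: "s \<noteq> t"
    and nF1: "\<not> F1x m n s t" and nF2: "\<not> F2b n s t" using adm by (auto simp: Adm_def)
  consider "fst s \<le> m-2 \<and> fst t \<le> m-2" | "m-1 \<le> fst s \<and> fst t \<le> m-2" | "fst s \<le> m-2 \<and> m-1 \<le> fst t"
    | "m-1 \<le> fst s \<and> m-1 \<le> fst t" by linarith
  then show ?thesis
  proof cases
    case 1
    have "\<not> F1x (m-2) n s t" using nF1 unfolding F1x_def by auto
    then have adm': "Adm (m-2) n s t"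
      unfolding Adm_def using sR tR st nF2 1 by (auto simp: R_def)
    obtain Q where Q: "hp (R (m-2) n) s t Q" "ew Q" "\<not> (n = 2 \<and> fst s = m-2 \<and> fst t = m-2) \<longrightarrow> hv (m-2) Q"
      using IH[OF adm'] unfolding Good_def by blast
    have "\<not> (n = 2 \<and> fst s = m-2 \<and> fst t = m-2)" using nF1 m5 unfolding F1x_def by auto
    then obtain y where y: "((m-2,y),(m-2,y+1)) \<in> edg Q \<or> ((m-2,y+1),(m-2,y)) \<in> edg Q"
      using Q(3) unfolding hv_def by blast
    have yr: "1 \<le> y" "y < n"
      using y edg_set[of "(m-2,y)" "(m-2,y+1)" Q] edg_set[of "(m-2,y+1)" "(m-2,y)" Q] hp_ends[OF Q(1)]
      by (auto simp: R_def)
    note Uh = U_hp[OF yr, of "m-1"]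
    have ewne: "\<And>p q. fst p = m-2 \<Longrightarrow> ((1,1),(2,1)) \<noteq> (p,q) \<and> ((2,1),(1,1)) \<noteq> (p,q)" using m5 by auto
    from y show ?thesis
    proof
      assume ed: "((m-2,y),(m-2,y+1)) \<in> edg Q"
      obtain L' where L': "hp (R (m-2) n \<union> S (m-1) 1 n) s t L'" "edg Q - {((m-2,y),(m-2,y+1))} \<subseteq> edg L'"
        "edg (U (m-1) n y) \<subseteq> edg L'"
        using hp_insert[OF Q(1) ed Uh(1) R_col(2)] by (auto simp: sadj_def)
      have "ew L'" using Q(2) L'(2) ewne[of "(m-2,y)" "(m-2,y+1)"] unfolding ew_def by auto
      moreover have "hv m L'" using hv_mono[OF Uh(2) L'(3)] by simp
      moreover have "hp (R m n) s t L'" using L'(1) R_col(1)[of m n] m5 by simp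
      ultimately show ?thesis using m5 by (intro GoodI) auto
    next
      assume ed: "((m-2,y+1),(m-2,y)) \<in> edg Q"
      obtain L' where L': "hp (R (m-2) n \<union> S (m-1) 1 n) s t L'" "edg Q - {((m-2,y+1),(m-2,y))} \<subseteq> edg L'"
        "edg (rev (U (m-1) n y)) \<subseteq> edg L'"
        using hp_insert[OF Q(1) ed hp_rev[OF Uh(1)] R_col(2)] by (auto simp: sadj_def)
      have "ew L'" using Q(2) L'(2) ewne[of "(m-2,y+1)" "(m-2,y)"] unfolding ew_def by auto
      moreover have "hv m L'" using hv_mono[OF hv_rev[OF Uh(2)] L'(3)] by simp
      moreover have "hp (R m n) s t L'" using L'(1) R_col(1)[of m n] m5 by simp
      ultimately show ?thesis using m5 by (intro GoodI) auto
    qed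
  next
    case 2
    then show ?thesis using col_C2[OF m5 n2 IH adm] by auto
  next
    case 3
    then have "Good m n t s" using col_C2[OF m5 n2 IH Adm_swap[OF adm]] by auto
    then show ?thesis by (rule Good_swap)
  next
    case 4
    have sS: "s \<in> S (m-1) 1 n" "t \<in> S (m-1) 1 n" using sR tR 4 by (auto simp: R_def S_def)
    have "\<not> (n = 2 \<and> fst s = m-1 \<and> fst t = m-1)" using nF1 m5 unfolding F1x_def by auto
    then have "BCP (m-1) n s t" using BC[OF n2 sS st] by blast
    then obtain P1 P2 e1 e2 where b: "fst e1 = m-1" "fst e2 = m-1" "snd e1 \<noteq> snd e2"
      "hp (set P1) s e1 P1" "hp (set P2) e2 t P2" "set P1 \<inter> set P2 = {}" "set P1 \<union> set P2 = S (m-1) 1 n"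
      "\<not> (n = 2 \<and> fst s = m-1+1 \<and> fst t = m-1+1) \<longrightarrow> hv (m-1+1) P1 \<or> hv (m-1+1) P2"
      unfolding BCP_def by blast
    have e1S: "e1 \<in> S (m-1) 1 n" "e2 \<in> S (m-1) 1 n" using hp_ends[OF b(4)] hp_ends[OF b(5)] b(7) by auto
    define u where "u = (m-2, snd e1)"
    define v where "v = (m-2, snd e2)"
    have adm': "Adm (m-2) n u v"
      unfolding Adm_def u_def v_def using e1S b(3) m5 F2b_fst3[of "(m-2, snd e1)"] by (auto simp: R_def S_def F1x_def)
    obtain Q where Q: "hp (R (m-2) n) u v Q" "ew Q"
      using IH[OF adm'] unfolding Good_def by blast
    have s1: "sadj e1 u" unfolding u_def using b(1) by (cases e1) (auto simp: sadj_def)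
    have s2: "sadj v e2" unfolding v_def using b(2) by (cases e2) (auto simp: sadj_def)
    have hpall: "hp (set P1 \<union> R (m-2) n \<union> set P2) s t (P1 @ Q @ P2)"
      by (rule three_app[OF b(4) Q(1) b(5) _ b(6) _ s1 s2])
         (use b(7) R_col(2)[of m n] in auto)
    have "set P1 \<union> R (m-2) n \<union> set P2 = R m n" using b(7) R_col(1)[of m n] m5 by auto
    then have "hp (R m n) s t (P1 @ Q @ P2)" using hpall by simp
    moreover have "ew (P1 @ Q @ P2)" using ew_mono[OF Q(2) edg_sub_append(2)] .
    moreover have "\<not> (n = 2 \<and> fst s = m \<and> fst t = m) \<longrightarrow> hv m (P1 @ Q @ P2)"
      using b(8) hv_mono[OF _ edg_sub_append(1)] hv_mono[OF _ edg_sub_append(3)] by force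
    ultimately show ?thesis using m5 by (intro GoodI) auto
  qed
qed



lemma tr_mem: "v \<in> tr ` A \<longleftrightarrow> tr v \<in> A"
  by (metis image_iff tr_tr)

lemma R_row: "3 \<le> n \<Longrightarrow> R m (n-2) \<union> tr ` S (n-1) 1 m = R m n" "R m (n-2) \<inter> tr ` S (n-1) 1 m = {}"
  by (auto simp: R_def S_def tr_mem tr_def) (auto simp: image_iff R_def S_def)

lemma F2b_ge3: "3 \<le> n \<Longrightarrow> 3 \<le> n' \<Longrightarrow> F2b n s t = F2b n' s t"
  unfolding F2b_def by auto

lemma row_C2:
  assumes m34: "3 \<le> m" "m \<le> 4" and n6: "6 \<le> n"
    and IH: "\<And>s t. Adm m (n-2) s t \<Longrightarrow> Good m (n-2) s t"
    and adm: "Adm m n s t" and sb: "n - 1 \<le> snd s" and tl: "snd t \<le> n - 2"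
  shows "Good m n s t"
proof -
  have sR: "s \<in> R m n" and tR: "t \<in> R m n" using adm by (auto simp: Adm_def)
  have sS: "tr s \<in> S (n-1) 1 m" using sR sb by (cases s) (auto simp: R_def S_def)
  obtain e P where e: "fst e = n-1" "1 \<le> snd e" "snd e \<le> m" "hp (S (n-1) 1 m) (tr s) e P"
    "1 < m \<Longrightarrow> hv (n-1+1) P"
    by (rule SLX'[OF _ sS]) (use m34 in auto)
  have P': "hp (tr ` S (n-1) 1 m) s (snd e, n-1) (map tr P)"
    using hp_tr[OF e(4)] e(1) by (cases e) simp
  define x' where "x' = (if (snd e, n-2) \<noteq> t then snd e else if snd e > 1 then snd e - 1 else snd e + 1)"
  have x': "1 \<le> x'" "x' \<le> m" "\<bar>x' - snd e\<bar> \<le> 1" "(x', n-2) \<noteq> t"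
    unfolding x'_def using e m34 by auto
  have tL: "t \<in> R m (n-2)" using tR tl by (auto simp: R_def)
  have adm': "Adm m (n-2) (x', n-2) t"
    unfolding Adm_def using x' tL n6 F2b_snd3[of "(x',n-2)"] by (auto simp: R_def F1x_def)
  obtain Q where Q: "hp (R m (n-2)) (x', n-2) t Q" "ew Q" "\<not> (n-2 = 2 \<and> x' = m \<and> fst t = m) \<longrightarrow> hv m Q"
    using IH[OF adm'] unfolding Good_def by auto
  have hpPQ: "hp (tr ` S (n-1) 1 m \<union> R m (n-2)) s t (map tr P @ Q)"
    by (rule hp_append[OF P' Q(1)]) (use R_row(2)[of m n] x' in \<open>auto simp: sadj_def\<close>)
  have "tr ` S (n-1) 1 m \<union> R m (n-2) = R m n" using R_row(1)[of n m] n6 by (simp add: Un_commute)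
  then have "hp (R m n) s t (map tr P @ Q)" using hpPQ by simp
  moreover have "ew (map tr P @ Q)" using ew_mono[OF Q(2) edg_app_sub2] .
  moreover have "hv m (map tr P @ Q)" using Q(3) n6 hv_mono[OF _ edg_app_sub2] by auto
  moreover have "hh n (map tr P @ Q)" using hv_tr[OF e(5)] m34 hh_mono[OF _ edg_app_sub1] by auto
  ultimately show ?thesis by (intro GoodI) auto
qed

lemma row_step:
  assumes m34: "3 \<le> m" "m \<le> 4" and n6: "6 \<le> n"
    and IH: "\<And>s t. Adm m (n-2) s t \<Longrightarrow> Good m (n-2) s t"
    and adm: "Adm m n s t"
  shows "Good m n s t"
proof -
  have sR: "s \<in> R m n" and tR: "t \<in> R m n" and st: "s \<noteq> t"
    and nF1: "\<not> F1x m n s t" and nF2: "\<not> F2b n s t" using adm by (auto simp: Adm_def)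
  consider "snd s \<le> n-2 \<and> snd t \<le> n-2" | "n-1 \<le> snd s \<and> snd t \<le> n-2" | "snd s \<le> n-2 \<and> n-1 \<le> snd t"
    | "n-1 \<le> snd s \<and> n-1 \<le> snd t" by linarith
  then show ?thesis
  proof cases
    case 1
    have "\<not> F2b (n-2) s t" using nF2 F2b_ge3[of n "n-2" s t] n6 by simp
    then have adm': "Adm m (n-2) s t"
      unfolding Adm_def using sR tR st 1 n6 by (auto simp: R_def F1x_def)
    obtain Q where Q0: "hp (R m (n-2)) s t Q" "ew Q" "\<not> (n-2 = 2 \<and> fst s = m \<and> fst t = m) \<longrightarrow> hv m Q"
       "m \<le> 4 \<and> 4 \<le> n-2 \<longrightarrow> hh (n-2) Q"
      using IH[OF adm'] unfolding Good_def by blast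
    have Q: "hp (R m (n-2)) s t Q" "ew Q" "hv m Q" "hh (n-2) Q" using Q0 n6 m34 by auto
    obtain x where x: "((x,n-2),(x+1,n-2)) \<in> edg Q \<or> ((x+1,n-2),(x,n-2)) \<in> edg Q"
      using Q(4) unfolding hh_def by blast
    have xr: "1 \<le> x" "x < m"
      using x edg_set[of "(x,n-2)" "(x+1,n-2)" Q] edg_set[of "(x+1,n-2)" "(x,n-2)" Q] hp_ends[OF Q(1)]
      by (auto simp: R_def)
    have Uh: "hp (tr ` S (n-1) 1 m) (x, n-1) (x+1, n-1) (map tr (U (n-1) m x))"
      using hp_tr[OF U_hp(1)[OF xr, of "n-1"]] by simp
    have Uhh: "hh n (map tr (U (n-1) m x))" using hv_tr[OF U_hp(2)[OF xr, of "n-1"]] by simp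
    have ewne: "\<And>p q. snd p = n-2 \<Longrightarrow> ((1,1),(2,1)) \<noteq> (p,q) \<and> ((2,1),(1,1)) \<noteq> (p,q)" using n6 by auto
    obtain y where y: "((m,y),(m,y+1)) \<in> edg Q \<or> ((m,y+1),(m,y)) \<in> edg Q"
      using Q(3) unfolding hv_def by blast
    have hvne: "\<And>p q. snd p = snd q \<Longrightarrow> ((m,y),(m,y+1)) \<noteq> (p,q) \<and> ((m,y+1),(m,y)) \<noteq> (p,q)" by auto
    have Rr: "R m (n-2) \<union> tr ` S (n-1) 1 m = R m n" using R_row(1)[of n m] n6 by simp
    from x show ?thesis
    proof
      assume ed: "((x,n-2),(x+1,n-2)) \<in> edg Q"
      obtain L' where L': "hp (R m (n-2) \<union> tr ` S (n-1) 1 m) s t L'" "edg Q - {((x,n-2),(x+1,n-2))} \<subseteq> edg L'"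
        "edg (map tr (U (n-1) m x)) \<subseteq> edg L'"
        using hp_insert[OF Q(1) ed Uh R_row(2)] by (auto simp: sadj_def)
      have "ew L'"
      proof -
        have ne: "((1,1),(2,1)) \<noteq> ((x,n-2),(x+1,n-2))" "((2,1),(1,1)) \<noteq> ((x,n-2),(x+1,n-2))" using n6 by auto
        have "((1,1),(2,1)) \<in> edg Q \<or> ((2,1),(1,1)) \<in> edg Q" using Q(2) unfolding ew_def .
        then have "((1,1),(2,1)) \<in> edg L' \<or> ((2,1),(1,1)) \<in> edg L'" using L'(2) ne by blast
        then show ?thesis unfolding ew_def .
      qed
      moreover have "hv m L'"
      proof -
        have ne: "((m,y),(m,y+1)) \<noteq> ((x,n-2),(x+1,n-2))" "((m,y+1),(m,y)) \<noteq> ((x,n-2),(x+1,n-2))" by auto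
        have "((m,y),(m,y+1)) \<in> edg L' \<or> ((m,y+1),(m,y)) \<in> edg L'"
          using y L'(2) ne by blast
        then show ?thesis unfolding hv_def by blast
      qed
      moreover have "hh n L'" using hh_mono[OF Uhh L'(3)] .
      moreover have "hp (R m n) s t L'" using L'(1) Rr by simp
      ultimately show ?thesis by (intro GoodI) auto
    next
      assume ed: "((x+1,n-2),(x,n-2)) \<in> edg Q"
      obtain L' where L': "hp (R m (n-2) \<union> tr ` S (n-1) 1 m) s t L'" "edg Q - {((x+1,n-2),(x,n-2))} \<subseteq> edg L'"
        "edg (rev (map tr (U (n-1) m x))) \<subseteq> edg L'"
        using hp_insert[OF Q(1) ed hp_rev[OF Uh] R_row(2)] by (auto simp: sadj_def)
      have "ew L'"
      proof -
        have ne: "((1,1),(2,1)) \<noteq> ((x+1,n-2),(x,n-2))" "((2,1),(1,1)) \<noteq> ((x+1,n-2),(x,n-2))" using n6 by auto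
        have "((1,1),(2,1)) \<in> edg Q \<or> ((2,1),(1,1)) \<in> edg Q" using Q(2) unfolding ew_def .
        then have "((1,1),(2,1)) \<in> edg L' \<or> ((2,1),(1,1)) \<in> edg L'" using L'(2) ne by blast
        then show ?thesis unfolding ew_def .
      qed
      moreover have "hv m L'"
      proof -
        have ne: "((m,y),(m,y+1)) \<noteq> ((x+1,n-2),(x,n-2))" "((m,y+1),(m,y)) \<noteq> ((x+1,n-2),(x,n-2))" by auto
        have "((m,y),(m,y+1)) \<in> edg L' \<or> ((m,y+1),(m,y)) \<in> edg L'"
          using y L'(2) ne by blast
        then show ?thesis unfolding hv_def by blast
      qed
      moreover have "hh n L'" using hh_mono[OF hh_rev[OF Uhh] L'(3)] .
      moreover have "hp (R m n) s t L'" using L'(1) Rr by simp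
      ultimately show ?thesis by (intro GoodI) auto
    qed
  next
    case 2
    then show ?thesis using row_C2[OF m34 n6 IH adm] by auto
  next
    case 3
    then have "Good m n t s" using row_C2[OF m34 n6 IH Adm_swap[OF adm]] by auto
    then show ?thesis by (rule Good_swap)
  next
    case 4
    have sS1: "tr s \<in> S (n-1) 1 m" using sR 4 by (cases s) (auto simp: R_def S_def)
    have sS2: "tr t \<in> S (n-1) 1 m" using tR 4 by (cases t) (auto simp: R_def S_def)
    note sS = sS1 sS2
    have st': "tr s \<noteq> tr t" using st by (metis tr_tr)
    have "BCP (n-1) m (tr s) (tr t)" using BC[OF _ sS st'] m34 by auto
    then obtain P1 P2 e1 e2 where b: "fst e1 = n-1" "fst e2 = n-1" "snd e1 \<noteq> snd e2"
      "hp (set P1) (tr s) e1 P1" "hp (set P2) e2 (tr t) P2" "set P1 \<inter> set P2 = {}" "set P1 \<union> set P2 = S (n-1) 1 m"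
      "\<not> (m = 2 \<and> fst (tr s) = n-1+1 \<and> fst (tr t) = n-1+1) \<longrightarrow> hv (n-1+1) P1 \<or> hv (n-1+1) P2"
      unfolding BCP_def by blast
    have e1S: "e1 \<in> S (n-1) 1 m" "e2 \<in> S (n-1) 1 m" using hp_ends[OF b(4)] hp_ends[OF b(5)] b(7) by auto
    define u where "u = (snd e1, n-2)"
    define v where "v = (snd e2, n-2)"
    have adm': "Adm m (n-2) u v"
      unfolding Adm_def u_def v_def using e1S b(3) n6 F2b_snd3[of "(snd e1, n-2)"] by (auto simp: R_def S_def F1x_def)
    obtain Q where Q: "hp (R m (n-2)) u v Q" "ew Q" "\<not> (n-2 = 2 \<and> fst u = m \<and> fst v = m) \<longrightarrow> hv m Q"
      using IH[OF adm'] unfolding Good_def by blast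
    have h1: "hp (tr ` set P1) s (tr e1) (map tr P1)" using hp_tr[OF b(4)] by simp
    have h2: "hp (tr ` set P2) (tr e2) t (map tr P2)" using hp_tr[OF b(5)] by simp
    have s1: "sadj (tr e1) u" unfolding u_def using b(1) by (cases e1) (auto simp: sadj_def)
    have s2: "sadj v (tr e2)" unfolding v_def using b(2) by (cases e2) (auto simp: sadj_def)
    have d1: "tr ` set P1 \<inter> R m (n-2) = {}" "R m (n-2) \<inter> tr ` set P2 = {}"
      using R_row(2)[of m n] b(7) by auto
    have d2: "tr ` set P1 \<inter> tr ` set P2 = {}" using b(6) image_Int[OF tr_inj[of UNIV], of "set P1" "set P2"]
      by simp
    have hpall: "hp (tr ` set P1 \<union> R m (n-2) \<union> tr ` set P2) s t (map tr P1 @ Q @ map tr P2)"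
      by (rule three_app[OF h1 Q(1) h2 d1(1) d2 d1(2) s1 s2])
    have A: "tr ` set P1 \<union> tr ` set P2 = tr ` S (n-1) 1 m" using b(7) by (metis image_Un)
    have B: "R m (n-2) \<union> tr ` S (n-1) 1 m = R m n" using R_row(1)[of n m] n6 by simp
    have "tr ` set P1 \<union> R m (n-2) \<union> tr ` set P2 = R m (n-2) \<union> (tr ` set P1 \<union> tr ` set P2)"
      by (simp add: Un_ac)
    also have "\<dots> = R m n" unfolding A B ..
    finally have "tr ` set P1 \<union> R m (n-2) \<union> tr ` set P2 = R m n" .
    then have "hp (R m n) s t (map tr P1 @ Q @ map tr P2)" using hpall by simp
    moreover have "ew (map tr P1 @ Q @ map tr P2)" using ew_mono[OF Q(2) edg_sub_append(2)] .
    moreover have "hv m (map tr P1 @ Q @ map tr P2)" using Q(3) n6 hv_mono[OF _ edg_sub_append(2)] by auto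
    moreover have "hh n (map tr P1 @ Q @ map tr P2)"
      using b(8) m34 hv_tr hh_mono[OF _ edg_sub_append(1)] hh_mono[OF _ edg_sub_append(3)] by force
    ultimately show ?thesis by (intro GoodI) auto
  qed
qed



lemma ivt:
  "p \<noteq> [] \<Longrightarrow> \<forall>e\<in>edg p. sadj (fst e) (snd e) \<Longrightarrow> fst (hd p) \<le> c \<Longrightarrow> c \<le> fst (last p)
   \<Longrightarrow> \<exists>x\<in>set p. fst x = c"
proof (induction p)
  case Nil then show ?case by simp
next
  case (Cons x p)
  show ?case
  proof (cases "p = []")
    case True then show ?thesis using Cons.prems by simp
  next
    case False
    show ?thesis
    proof (cases "fst x = c")
      case True then show ?thesis by simp
    next
      case ne: False
      have "(x, hd p) \<in> edg (x # p)" using edg_cons[OF False] .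
      then have "sadj x (hd p)" using Cons.prems(2) by auto
      then have "fst (hd p) \<le> c" using ne Cons.prems(3) by (cases x, cases "hd p") (auto simp: sadj_def)
      moreover have "\<forall>e\<in>edg p. sadj (fst e) (snd e)" using Cons.prems(2) False
        by (cases p) auto
      moreover have "c \<le> fst (last p)" using Cons.prems(4) False by simp
      ultimately show ?thesis using Cons.IH False by auto
    qed
  qed
qed

lemma F1x_cut:
  assumes "F1x m n s t" "s \<in> R m n" "t \<in> R m n" "s \<noteq> t"
  shows "vertex_cut (R m n) {s, t}"
proof -
  obtain c a where s: "s = (c, a)" by (cases s)
  obtain d b where t: "t = (d, b)" by (cases t)
  have f: "n = 2" "d = c" "2 \<le> c" "c \<le> m - 1" using assms(1) s t unfolding F1x_def by auto
  have key: "\<And>v. v \<in> R m n \<Longrightarrow> fst v = c \<Longrightarrow> v = s \<or> v = t"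
  proof -
    fix v assume v: "v \<in> R m n" "fst v = c"
    have "1 \<le> a" "a \<le> 2" "1 \<le> b" "b \<le> 2" "a \<noteq> b" using assms(2,3,4) s t f by (auto simp: R_def)
    moreover have "1 \<le> snd v" "snd v \<le> 2" using v f by (auto simp: R_def)
    ultimately show "v = s \<or> v = t" using v s t f by (cases v) auto
  qed
  have notc: "\<not> connected_on (R m n - {s, t})"
  proof
    assume con: "connected_on (R m n - {s, t})"
    have u: "(1,1) \<in> R m n - {s,t}" "(m,1) \<in> R m n - {s,t}"
      using f s t by (auto simp: R_def)
    then obtain p where p: "is_path_in (R m n - {s,t}) p" "hd p = (1,1)" "last p = (m,1)"
      using con unfolding connected_on_def by blast
    have pp: "p \<noteq> []" "set p \<subseteq> R m n - {s,t}" "\<forall>e\<in>edg p. sadj (fst e) (snd e)"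
      using p(1) unfolding is_path_in_iff by auto
    obtain x where x: "x \<in> set p" "fst x = c" using ivt[OF pp(1) pp(3), of c] p f by auto
    have xm: "x \<in> R m n - {s,t}" using x pp by auto
    then have "x = s \<or> x = t" using key[of x] x(2) by blast
    then show False using xm by blast
  qed
  show ?thesis unfolding vertex_cut_def using notc assms(2,3) by auto
qed

lemma F2b_imp:
  assumes "F2b n s t"
  shows "(n = 2 \<and> {s, t} \<in> {{(1,1),(2,1)}, {(1,1),(2,2)}, {(2,1),(1,2)}}) \<or> (n \<ge> 3 \<and> {s, t} = {(1,1),(2,1)})"
  using assms unfolding F2b_def by (auto simp: insert_commute)


definition W32 :: "vtx list list" where
  "W32 = [[(1,1),(2,1),(3,1),(3,2),(2,2),(1,2)],
    [(1,1),(2,1),(1,2),(2,2),(3,2),(3,1)],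
    [(1,1),(2,1),(1,2),(2,2),(3,1),(3,2)],
    [(1,2),(1,1),(2,1),(3,1),(3,2),(2,2)],
    [(1,2),(1,1),(2,1),(2,2),(3,2),(3,1)],
    [(1,2),(1,1),(2,1),(2,2),(3,1),(3,2)],
    [(2,1),(1,1),(1,2),(2,2),(3,2),(3,1)],
    [(2,1),(1,1),(1,2),(2,2),(3,1),(3,2)],
    [(2,2),(1,2),(1,1),(2,1),(3,2),(3,1)],
    [(2,2),(1,2),(1,1),(2,1),(3,1),(3,2)],
    [(3,1),(2,1),(1,1),(1,2),(2,2),(3,2)]]"

lemma tab32: "list_all2 (\<lambda>st q. chk 3 2 (fst st) (snd st) q)
  (filter (\<lambda>st. \<not> F1x 3 2 (fst st) (snd st) \<and> \<not> F2b 2 (fst st) (snd st)) (pairs (grid 3 2))) W32"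
  by code_simp


definition W33 :: "vtx list list" where
  "W33 = [[(1,1),(2,1),(3,1),(3,2),(3,3),(2,2),(1,3),(2,3),(1,2)],
    [(1,1),(2,1),(3,1),(3,2),(3,3),(2,2),(1,2),(2,3),(1,3)],
    [(1,1),(2,1),(3,1),(3,2),(3,3),(2,3),(1,2),(1,3),(2,2)],
    [(1,1),(2,1),(3,1),(3,2),(3,3),(2,2),(1,2),(1,3),(2,3)],
    [(1,1),(2,1),(1,2),(1,3),(2,3),(3,3),(2,2),(3,2),(3,1)],
    [(1,1),(2,1),(3,1),(2,2),(1,2),(1,3),(2,3),(3,3),(3,2)],
    [(1,1),(2,1),(3,1),(3,2),(2,2),(1,2),(1,3),(2,3),(3,3)],
    [(1,2),(1,1),(2,1),(3,1),(3,2),(3,3),(2,2),(2,3),(1,3)],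
    [(1,2),(1,3),(2,3),(3,3),(3,2),(3,1),(2,2),(1,1),(2,1)],
    [(1,2),(1,1),(2,1),(3,1),(3,2),(3,3),(2,3),(1,3),(2,2)],
    [(1,2),(1,1),(2,1),(3,1),(3,2),(3,3),(2,2),(1,3),(2,3)],
    [(1,2),(1,1),(2,1),(3,2),(3,3),(2,3),(1,3),(2,2),(3,1)],
    [(1,2),(1,1),(2,1),(3,1),(2,2),(1,3),(2,3),(3,3),(3,2)],
    [(1,2),(1,1),(2,1),(3,1),(3,2),(2,2),(1,3),(2,3),(3,3)],
    [(1,3),(1,2),(2,3),(3,3),(3,2),(3,1),(2,2),(1,1),(2,1)],
    [(1,3),(1,2),(1,1),(2,1),(3,1),(3,2),(2,3),(3,3),(2,2)],
    [(1,3),(1,2),(1,1),(2,1),(3,1),(2,2),(3,2),(3,3),(2,3)],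
    [(1,3),(1,2),(1,1),(2,1),(2,2),(2,3),(3,3),(3,2),(3,1)],
    [(1,3),(1,2),(1,1),(2,1),(3,1),(2,2),(2,3),(3,3),(3,2)],
    [(1,3),(1,2),(1,1),(2,1),(3,1),(2,2),(2,3),(3,2),(3,3)],
    [(2,1),(1,1),(1,2),(1,3),(2,3),(3,3),(3,2),(3,1),(2,2)],
    [(2,1),(1,1),(1,2),(1,3),(2,2),(3,1),(3,2),(3,3),(2,3)],
    [(2,1),(1,1),(1,2),(1,3),(2,3),(3,3),(2,2),(3,2),(3,1)],
    [(2,1),(1,1),(1,2),(1,3),(2,3),(3,3),(2,2),(3,1),(3,2)],
    [(2,1),(1,1),(1,2),(1,3),(2,3),(2,2),(3,1),(3,2),(3,3)],
    [(2,2),(1,3),(1,2),(1,1),(2,1),(3,1),(3,2),(3,3),(2,3)],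
    [(2,2),(1,1),(2,1),(1,2),(1,3),(2,3),(3,3),(3,2),(3,1)],
    [(2,2),(3,1),(2,1),(1,1),(1,2),(1,3),(2,3),(3,3),(3,2)],
    [(2,2),(1,3),(1,2),(1,1),(2,1),(3,1),(3,2),(2,3),(3,3)],
    [(2,3),(1,3),(1,2),(1,1),(2,1),(2,2),(3,3),(3,2),(3,1)],
    [(2,3),(1,3),(1,2),(1,1),(2,1),(3,1),(2,2),(3,3),(3,2)],
    [(2,3),(1,3),(1,2),(1,1),(2,1),(3,1),(2,2),(3,2),(3,3)],
    [(3,1),(2,1),(1,1),(1,2),(1,3),(2,2),(2,3),(3,3),(3,2)],
    [(3,1),(2,1),(1,1),(1,2),(1,3),(2,2),(2,3),(3,2),(3,3)],
    [(3,2),(3,1),(2,1),(1,1),(1,2),(1,3),(2,2),(2,3),(3,3)]]"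

lemma tab33: "list_all2 (\<lambda>st q. chk 3 3 (fst st) (snd st) q)
  (filter (\<lambda>st. \<not> F1x 3 3 (fst st) (snd st) \<and> \<not> F2b 3 (fst st) (snd st)) (pairs (grid 3 3))) W33"
  by code_simp


definition W34 :: "vtx list list" where
  "W34 = [[(1,1),(2,1),(3,1),(3,2),(2,2),(3,3),(3,4),(2,4),(1,4),(1,3),(2,3),(1,2)],
    [(1,1),(2,1),(3,1),(3,2),(2,2),(1,2),(2,3),(3,3),(3,4),(2,4),(1,4),(1,3)],
    [(1,1),(2,1),(3,1),(3,2),(2,2),(1,2),(1,3),(2,3),(3,3),(3,4),(2,4),(1,4)],
    [(1,1),(2,1),(3,1),(3,2),(3,3),(3,4),(2,4),(1,4),(1,3),(1,2),(2,3),(2,2)],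
    [(1,1),(2,1),(3,1),(3,2),(2,2),(1,2),(1,3),(1,4),(2,4),(3,3),(3,4),(2,3)],
    [(1,1),(2,1),(3,1),(3,2),(2,2),(1,2),(1,3),(1,4),(2,3),(3,3),(3,4),(2,4)],
    [(1,1),(2,1),(1,2),(1,3),(1,4),(2,4),(3,4),(2,3),(3,3),(2,2),(3,2),(3,1)],
    [(1,1),(2,1),(3,1),(2,2),(1,2),(1,3),(1,4),(2,4),(3,4),(2,3),(3,3),(3,2)],
    [(1,1),(2,1),(3,1),(3,2),(2,2),(1,2),(1,3),(1,4),(2,3),(2,4),(3,4),(3,3)],
    [(1,1),(2,1),(3,1),(3,2),(2,2),(1,2),(1,3),(1,4),(2,3),(3,3),(2,4),(3,4)],
    [(1,2),(1,1),(2,1),(3,1),(3,2),(2,2),(3,3),(3,4),(2,3),(1,4),(2,4),(1,3)],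
    [(1,2),(1,1),(2,1),(3,1),(3,2),(2,2),(1,3),(2,3),(3,3),(3,4),(2,4),(1,4)],
    [(1,2),(1,3),(1,4),(2,4),(3,4),(2,3),(3,3),(3,2),(3,1),(2,2),(1,1),(2,1)],
    [(1,2),(1,1),(2,1),(3,1),(3,2),(3,3),(3,4),(2,4),(1,4),(1,3),(2,3),(2,2)],
    [(1,2),(1,1),(2,1),(3,1),(3,2),(2,2),(1,3),(1,4),(2,4),(3,3),(3,4),(2,3)],
    [(1,2),(1,1),(2,1),(3,1),(3,2),(2,2),(1,3),(1,4),(2,3),(3,3),(3,4),(2,4)],
    [(1,2),(1,1),(2,1),(3,2),(3,3),(3,4),(2,4),(1,4),(1,3),(2,3),(2,2),(3,1)],
    [(1,2),(1,1),(2,1),(3,1),(2,2),(1,3),(1,4),(2,4),(3,4),(2,3),(3,3),(3,2)],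
    [(1,2),(1,1),(2,1),(3,1),(3,2),(2,2),(1,3),(1,4),(2,3),(2,4),(3,4),(3,3)],
    [(1,2),(1,1),(2,1),(3,1),(3,2),(2,2),(1,3),(1,4),(2,3),(3,3),(2,4),(3,4)],
    [(1,3),(1,2),(1,1),(2,1),(3,1),(2,2),(3,2),(3,3),(3,4),(2,3),(2,4),(1,4)],
    [(1,3),(1,4),(2,4),(3,4),(3,3),(2,3),(3,2),(3,1),(2,2),(1,2),(1,1),(2,1)],
    [(1,3),(1,4),(2,4),(3,4),(3,3),(2,3),(1,2),(1,1),(2,1),(3,1),(3,2),(2,2)],
    [(1,3),(1,4),(2,4),(3,4),(3,3),(3,2),(3,1),(2,1),(1,1),(1,2),(2,2),(2,3)],
    [(1,3),(1,4),(2,3),(1,2),(1,1),(2,1),(3,1),(2,2),(3,2),(3,3),(3,4),(2,4)],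
    [(1,3),(1,4),(2,4),(3,4),(3,3),(2,3),(1,2),(1,1),(2,1),(2,2),(3,2),(3,1)],
    [(1,3),(1,4),(2,4),(3,4),(3,3),(2,3),(1,2),(1,1),(2,1),(2,2),(3,1),(3,2)],
    [(1,3),(1,4),(2,4),(3,4),(2,3),(1,2),(1,1),(2,1),(3,1),(2,2),(3,2),(3,3)],
    [(1,3),(1,4),(2,4),(3,3),(3,2),(3,1),(2,1),(1,1),(1,2),(2,2),(2,3),(3,4)],
    [(1,4),(1,3),(2,4),(3,4),(3,3),(2,3),(3,2),(3,1),(2,2),(1,2),(1,1),(2,1)],
    [(1,4),(1,3),(2,4),(3,4),(3,3),(2,3),(1,2),(1,1),(2,1),(3,1),(3,2),(2,2)],
    [(1,4),(1,3),(2,4),(3,4),(3,3),(3,2),(3,1),(2,1),(1,1),(1,2),(2,2),(2,3)],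
    [(1,4),(1,3),(1,2),(1,1),(2,1),(3,1),(2,2),(3,2),(2,3),(3,3),(3,4),(2,4)],
    [(1,4),(1,3),(2,4),(3,4),(3,3),(2,3),(1,2),(1,1),(2,1),(2,2),(3,2),(3,1)],
    [(1,4),(1,3),(2,4),(3,4),(3,3),(2,3),(1,2),(1,1),(2,1),(2,2),(3,1),(3,2)],
    [(1,4),(1,3),(2,4),(3,4),(2,3),(1,2),(1,1),(2,1),(3,1),(2,2),(3,2),(3,3)],
    [(1,4),(1,3),(1,2),(1,1),(2,1),(3,1),(2,2),(3,2),(3,3),(2,3),(2,4),(3,4)],
    [(2,1),(1,1),(1,2),(1,3),(1,4),(2,4),(3,4),(2,3),(3,3),(3,2),(3,1),(2,2)],
    [(2,1),(1,1),(1,2),(1,3),(1,4),(2,4),(3,4),(3,3),(2,2),(3,1),(3,2),(2,3)],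
    [(2,1),(1,1),(1,2),(1,3),(1,4),(2,3),(2,2),(3,1),(3,2),(3,3),(3,4),(2,4)],
    [(2,1),(1,1),(1,2),(1,3),(1,4),(2,4),(3,4),(2,3),(3,3),(2,2),(3,2),(3,1)],
    [(2,1),(1,1),(1,2),(1,3),(1,4),(2,4),(3,4),(2,3),(3,3),(2,2),(3,1),(3,2)],
    [(2,1),(1,1),(1,2),(1,3),(1,4),(2,4),(3,4),(2,3),(2,2),(3,1),(3,2),(3,3)],
    [(2,1),(1,1),(1,2),(1,3),(1,4),(2,4),(2,3),(2,2),(3,1),(3,2),(3,3),(3,4)],
    [(2,2),(1,1),(2,1),(3,1),(3,2),(3,3),(3,4),(2,4),(1,4),(1,3),(1,2),(2,3)],
    [(2,2),(1,1),(2,1),(3,1),(3,2),(3,3),(3,4),(2,3),(1,2),(1,3),(1,4),(2,4)],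
    [(2,2),(1,1),(2,1),(1,2),(1,3),(1,4),(2,4),(3,4),(2,3),(3,3),(3,2),(3,1)],
    [(2,2),(3,1),(2,1),(1,1),(1,2),(1,3),(1,4),(2,4),(3,4),(2,3),(3,3),(3,2)],
    [(2,2),(1,1),(2,1),(3,1),(3,2),(2,3),(1,2),(1,3),(1,4),(2,4),(3,4),(3,3)],
    [(2,2),(1,1),(2,1),(3,1),(3,2),(3,3),(2,4),(1,4),(1,3),(1,2),(2,3),(3,4)],
    [(2,3),(1,4),(1,3),(1,2),(1,1),(2,1),(3,1),(2,2),(3,2),(3,3),(3,4),(2,4)],
    [(2,3),(1,4),(1,3),(2,4),(3,4),(3,3),(3,2),(2,1),(1,1),(1,2),(2,2),(3,1)],
    [(2,3),(1,4),(1,3),(2,4),(3,4),(3,3),(2,2),(1,2),(1,1),(2,1),(3,1),(3,2)],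
    [(2,3),(3,4),(2,4),(1,4),(1,3),(1,2),(1,1),(2,1),(3,1),(2,2),(3,2),(3,3)],
    [(2,3),(1,4),(1,3),(1,2),(1,1),(2,1),(3,1),(2,2),(3,2),(3,3),(2,4),(3,4)],
    [(2,4),(1,4),(1,3),(1,2),(1,1),(2,1),(2,2),(2,3),(3,4),(3,3),(3,2),(3,1)],
    [(2,4),(1,4),(1,3),(1,2),(1,1),(2,1),(3,1),(2,2),(2,3),(3,4),(3,3),(3,2)],
    [(2,4),(1,4),(1,3),(1,2),(1,1),(2,1),(3,1),(2,2),(3,2),(2,3),(3,4),(3,3)],
    [(2,4),(1,4),(1,3),(1,2),(1,1),(2,1),(3,1),(2,2),(3,2),(2,3),(3,3),(3,4)],
    [(3,1),(2,1),(1,1),(1,2),(1,3),(1,4),(2,4),(3,4),(2,3),(2,2),(3,3),(3,2)],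
    [(3,1),(2,1),(1,1),(1,2),(1,3),(1,4),(2,4),(3,4),(2,3),(2,2),(3,2),(3,3)],
    [(3,1),(2,1),(1,1),(1,2),(1,3),(1,4),(2,4),(2,3),(2,2),(3,2),(3,3),(3,4)],
    [(3,2),(3,1),(2,1),(1,1),(1,2),(2,2),(1,3),(1,4),(2,3),(2,4),(3,4),(3,3)],
    [(3,2),(3,1),(2,1),(1,1),(1,2),(2,2),(1,3),(1,4),(2,3),(3,3),(2,4),(3,4)],
    [(3,3),(2,4),(1,4),(1,3),(1,2),(1,1),(2,1),(3,1),(3,2),(2,2),(2,3),(3,4)]]"

lemma tab34: "list_all2 (\<lambda>st q. chk 3 4 (fst st) (snd st) q)
  (filter (\<lambda>st. \<not> F1x 3 4 (fst st) (snd st) \<and> \<not> F2b 4 (fst st) (snd st)) (pairs (grid 3 4))) W34"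
  by code_simp


definition W35 :: "vtx list list" where
  "W35 = [[(1,1),(2,1),(3,1),(3,2),(2,2),(3,3),(3,4),(3,5),(2,5),(1,5),(1,4),(2,4),(1,3),(2,3),(1,2)],
    [(1,1),(2,1),(3,1),(3,2),(2,2),(1,2),(2,3),(3,3),(3,4),(3,5),(2,5),(1,5),(1,4),(2,4),(1,3)],
    [(1,1),(2,1),(3,1),(3,2),(2,2),(1,2),(1,3),(2,3),(3,3),(3,4),(3,5),(2,4),(1,5),(2,5),(1,4)],
    [(1,1),(2,1),(3,1),(3,2),(2,2),(1,2),(1,3),(1,4),(2,3),(3,3),(3,4),(3,5),(2,4),(2,5),(1,5)],
    [(1,1),(2,1),(3,1),(3,2),(3,3),(3,4),(3,5),(2,5),(1,5),(1,4),(2,4),(1,3),(1,2),(2,3),(2,2)],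
    [(1,1),(2,1),(3,1),(3,2),(2,2),(1,2),(1,3),(1,4),(1,5),(2,5),(3,5),(2,4),(3,3),(3,4),(2,3)],
    [(1,1),(2,1),(3,1),(3,2),(2,2),(1,2),(1,3),(1,4),(1,5),(2,5),(3,5),(3,4),(2,3),(3,3),(2,4)],
    [(1,1),(2,1),(3,1),(3,2),(2,2),(1,2),(1,3),(1,4),(1,5),(2,4),(2,3),(3,3),(3,4),(3,5),(2,5)],
    [(1,1),(2,1),(1,2),(1,3),(1,4),(1,5),(2,5),(3,5),(2,4),(3,4),(2,3),(3,3),(2,2),(3,2),(3,1)],
    [(1,1),(2,1),(3,1),(2,2),(1,2),(1,3),(1,4),(1,5),(2,5),(3,5),(2,4),(3,4),(2,3),(3,3),(3,2)],
    [(1,1),(2,1),(3,1),(3,2),(2,2),(1,2),(1,3),(1,4),(1,5),(2,5),(3,5),(2,4),(2,3),(3,4),(3,3)],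
    [(1,1),(2,1),(3,1),(3,2),(2,2),(1,2),(1,3),(1,4),(1,5),(2,5),(3,5),(2,4),(2,3),(3,3),(3,4)],
    [(1,1),(2,1),(3,1),(3,2),(2,2),(1,2),(1,3),(1,4),(1,5),(2,5),(2,4),(2,3),(3,3),(3,4),(3,5)],
    [(1,2),(1,1),(2,1),(3,1),(3,2),(2,2),(3,3),(2,3),(3,4),(3,5),(2,5),(1,5),(1,4),(2,4),(1,3)],
    [(1,2),(1,1),(2,1),(3,1),(3,2),(2,2),(1,3),(2,3),(3,3),(3,4),(3,5),(2,4),(1,5),(2,5),(1,4)],
    [(1,2),(1,1),(2,1),(3,1),(3,2),(2,2),(1,3),(1,4),(2,3),(3,3),(3,4),(3,5),(2,4),(2,5),(1,5)],
    [(1,2),(1,3),(1,4),(1,5),(2,5),(3,5),(2,4),(3,4),(2,3),(3,3),(3,2),(3,1),(2,2),(1,1),(2,1)],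
    [(1,2),(1,1),(2,1),(3,1),(3,2),(3,3),(3,4),(3,5),(2,5),(1,5),(1,4),(2,4),(1,3),(2,3),(2,2)],
    [(1,2),(1,1),(2,1),(3,1),(3,2),(2,2),(1,3),(1,4),(1,5),(2,5),(3,5),(2,4),(3,3),(3,4),(2,3)],
    [(1,2),(1,1),(2,1),(3,1),(3,2),(2,2),(1,3),(1,4),(1,5),(2,5),(3,5),(3,4),(2,3),(3,3),(2,4)],
    [(1,2),(1,1),(2,1),(3,1),(3,2),(2,2),(1,3),(1,4),(1,5),(2,4),(2,3),(3,3),(3,4),(3,5),(2,5)],
    [(1,2),(1,1),(2,1),(3,2),(3,3),(3,4),(3,5),(2,5),(1,5),(1,4),(2,4),(1,3),(2,3),(2,2),(3,1)],
    [(1,2),(1,1),(2,1),(3,1),(2,2),(1,3),(1,4),(1,5),(2,5),(3,5),(2,4),(3,4),(2,3),(3,3),(3,2)],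
    [(1,2),(1,1),(2,1),(3,1),(3,2),(2,2),(1,3),(1,4),(1,5),(2,5),(3,5),(2,4),(2,3),(3,4),(3,3)],
    [(1,2),(1,1),(2,1),(3,1),(3,2),(2,2),(1,3),(1,4),(1,5),(2,5),(3,5),(2,4),(2,3),(3,3),(3,4)],
    [(1,2),(1,1),(2,1),(3,1),(3,2),(2,2),(1,3),(1,4),(1,5),(2,5),(2,4),(2,3),(3,3),(3,4),(3,5)],
    [(1,3),(1,2),(1,1),(2,1),(3,1),(2,2),(3,2),(3,3),(2,3),(3,4),(3,5),(2,4),(1,5),(2,5),(1,4)],
    [(1,3),(1,2),(1,1),(2,1),(3,1),(2,2),(3,2),(3,3),(2,3),(1,4),(2,4),(3,4),(3,5),(2,5),(1,5)],
    [(1,3),(1,2),(2,3),(1,4),(1,5),(2,5),(3,5),(2,4),(3,4),(3,3),(3,2),(3,1),(2,2),(1,1),(2,1)],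
    [(1,3),(1,2),(1,1),(2,1),(3,1),(3,2),(3,3),(3,4),(3,5),(2,5),(1,5),(1,4),(2,4),(2,3),(2,2)],
    [(1,3),(1,2),(1,1),(2,1),(3,1),(2,2),(3,2),(3,3),(3,4),(3,5),(2,5),(1,5),(1,4),(2,4),(2,3)],
    [(1,3),(1,2),(1,1),(2,1),(3,1),(2,2),(3,2),(3,3),(2,3),(1,4),(1,5),(2,5),(3,4),(3,5),(2,4)],
    [(1,3),(1,2),(1,1),(2,1),(3,1),(2,2),(3,2),(3,3),(2,3),(1,4),(1,5),(2,4),(3,4),(3,5),(2,5)],
    [(1,3),(1,2),(1,1),(2,1),(2,2),(3,3),(3,4),(3,5),(2,5),(1,5),(1,4),(2,4),(2,3),(3,2),(3,1)],
    [(1,3),(1,2),(1,1),(2,1),(3,1),(2,2),(3,3),(3,4),(3,5),(2,5),(1,5),(1,4),(2,4),(2,3),(3,2)],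
    [(1,3),(1,2),(1,1),(2,1),(3,1),(2,2),(3,2),(2,3),(1,4),(1,5),(2,5),(3,5),(2,4),(3,4),(3,3)],
    [(1,3),(1,2),(1,1),(2,1),(3,1),(2,2),(3,2),(3,3),(2,3),(1,4),(1,5),(2,4),(2,5),(3,5),(3,4)],
    [(1,3),(1,2),(1,1),(2,1),(3,1),(2,2),(3,2),(3,3),(2,3),(1,4),(1,5),(2,4),(3,4),(2,5),(3,5)],
    [(1,4),(1,3),(1,2),(1,1),(2,1),(3,1),(2,2),(3,2),(2,3),(3,3),(3,4),(3,5),(2,4),(2,5),(1,5)],
    [(1,4),(1,5),(2,5),(3,5),(3,4),(2,4),(1,3),(1,2),(2,3),(3,3),(3,2),(3,1),(2,2),(1,1),(2,1)],
    [(1,4),(1,5),(2,5),(3,5),(3,4),(2,4),(1,3),(1,2),(1,1),(2,1),(3,1),(3,2),(2,3),(3,3),(2,2)],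
    [(1,4),(1,5),(2,5),(3,5),(3,4),(2,4),(1,3),(1,2),(1,1),(2,1),(3,1),(2,2),(3,2),(3,3),(2,3)],
    [(1,4),(1,5),(2,5),(3,5),(3,4),(3,3),(3,2),(3,1),(2,1),(1,1),(1,2),(2,2),(1,3),(2,3),(2,4)],
    [(1,4),(1,5),(2,4),(1,3),(1,2),(1,1),(2,1),(3,1),(2,2),(3,2),(2,3),(3,3),(3,4),(3,5),(2,5)],
    [(1,4),(1,5),(2,5),(3,5),(3,4),(2,4),(1,3),(1,2),(1,1),(2,1),(2,2),(2,3),(3,3),(3,2),(3,1)],
    [(1,4),(1,5),(2,5),(3,5),(3,4),(2,4),(1,3),(1,2),(1,1),(2,1),(3,1),(2,2),(2,3),(3,3),(3,2)],
    [(1,4),(1,5),(2,5),(3,5),(3,4),(2,4),(1,3),(1,2),(1,1),(2,1),(3,1),(2,2),(2,3),(3,2),(3,3)],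
    [(1,4),(1,5),(2,5),(3,5),(2,4),(1,3),(1,2),(1,1),(2,1),(3,1),(2,2),(3,2),(2,3),(3,3),(3,4)],
    [(1,4),(1,5),(2,5),(3,4),(3,3),(3,2),(3,1),(2,1),(1,1),(1,2),(2,2),(1,3),(2,3),(2,4),(3,5)],
    [(1,5),(1,4),(2,5),(3,5),(3,4),(2,4),(1,3),(1,2),(2,3),(3,3),(3,2),(3,1),(2,2),(1,1),(2,1)],
    [(1,5),(1,4),(2,5),(3,5),(3,4),(2,4),(1,3),(1,2),(1,1),(2,1),(3,1),(3,2),(2,3),(3,3),(2,2)],
    [(1,5),(1,4),(2,5),(3,5),(3,4),(2,4),(1,3),(1,2),(1,1),(2,1),(3,1),(2,2),(3,2),(3,3),(2,3)],
    [(1,5),(1,4),(2,5),(3,5),(3,4),(3,3),(3,2),(3,1),(2,1),(1,1),(1,2),(2,2),(1,3),(2,3),(2,4)],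
    [(1,5),(1,4),(1,3),(1,2),(1,1),(2,1),(3,1),(2,2),(3,2),(2,3),(3,3),(2,4),(3,4),(3,5),(2,5)],
    [(1,5),(1,4),(2,5),(3,5),(3,4),(2,4),(1,3),(1,2),(1,1),(2,1),(2,2),(2,3),(3,3),(3,2),(3,1)],
    [(1,5),(1,4),(2,5),(3,5),(3,4),(2,4),(1,3),(1,2),(1,1),(2,1),(3,1),(2,2),(2,3),(3,3),(3,2)],
    [(1,5),(1,4),(2,5),(3,5),(3,4),(2,4),(1,3),(1,2),(1,1),(2,1),(3,1),(2,2),(2,3),(3,2),(3,3)],
    [(1,5),(1,4),(2,5),(3,5),(2,4),(1,3),(1,2),(1,1),(2,1),(3,1),(2,2),(3,2),(2,3),(3,3),(3,4)],
    [(1,5),(1,4),(1,3),(1,2),(1,1),(2,1),(3,1),(2,2),(3,2),(2,3),(3,3),(3,4),(2,4),(2,5),(3,5)],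
    [(2,1),(1,1),(1,2),(1,3),(1,4),(1,5),(2,5),(3,5),(2,4),(3,4),(2,3),(3,3),(3,2),(3,1),(2,2)],
    [(2,1),(1,1),(1,2),(1,3),(1,4),(1,5),(2,5),(3,5),(2,4),(3,4),(3,3),(2,2),(3,1),(3,2),(2,3)],
    [(2,1),(1,1),(1,2),(1,3),(1,4),(1,5),(2,5),(3,5),(3,4),(2,3),(2,2),(3,1),(3,2),(3,3),(2,4)],
    [(2,1),(1,1),(1,2),(1,3),(1,4),(1,5),(2,4),(2,3),(2,2),(3,1),(3,2),(3,3),(3,4),(3,5),(2,5)],
    [(2,1),(1,1),(1,2),(1,3),(1,4),(1,5),(2,5),(3,5),(2,4),(3,4),(2,3),(3,3),(2,2),(3,2),(3,1)],
    [(2,1),(1,1),(1,2),(1,3),(1,4),(1,5),(2,5),(3,5),(2,4),(3,4),(2,3),(3,3),(2,2),(3,1),(3,2)],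
    [(2,1),(1,1),(1,2),(1,3),(1,4),(1,5),(2,5),(3,5),(2,4),(3,4),(2,3),(2,2),(3,1),(3,2),(3,3)],
    [(2,1),(1,1),(1,2),(1,3),(1,4),(1,5),(2,5),(3,5),(2,4),(2,3),(2,2),(3,1),(3,2),(3,3),(3,4)],
    [(2,1),(1,1),(1,2),(1,3),(1,4),(1,5),(2,5),(2,4),(2,3),(2,2),(3,1),(3,2),(3,3),(3,4),(3,5)],
    [(2,2),(1,1),(2,1),(3,1),(3,2),(3,3),(3,4),(3,5),(2,5),(1,5),(1,4),(2,4),(1,3),(1,2),(2,3)],
    [(2,2),(1,1),(2,1),(3,1),(3,2),(3,3),(3,4),(3,5),(2,5),(1,5),(1,4),(1,3),(1,2),(2,3),(2,4)],
    [(2,2),(1,1),(2,1),(3,1),(3,2),(3,3),(3,4),(3,5),(2,4),(1,3),(1,2),(2,3),(1,4),(1,5),(2,5)],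
    [(2,2),(1,1),(2,1),(1,2),(1,3),(1,4),(1,5),(2,5),(3,5),(2,4),(3,4),(2,3),(3,3),(3,2),(3,1)],
    [(2,2),(3,1),(2,1),(1,1),(1,2),(1,3),(1,4),(1,5),(2,5),(3,5),(2,4),(3,4),(2,3),(3,3),(3,2)],
    [(2,2),(1,1),(2,1),(3,1),(3,2),(2,3),(1,2),(1,3),(1,4),(1,5),(2,5),(3,5),(2,4),(3,4),(3,3)],
    [(2,2),(1,1),(2,1),(3,1),(3,2),(3,3),(2,3),(1,2),(1,3),(1,4),(1,5),(2,4),(2,5),(3,5),(3,4)],
    [(2,2),(1,1),(2,1),(3,1),(3,2),(3,3),(3,4),(2,3),(1,2),(1,3),(1,4),(1,5),(2,4),(2,5),(3,5)],
    [(2,3),(1,2),(1,1),(2,1),(3,1),(3,2),(2,2),(1,3),(1,4),(1,5),(2,5),(3,5),(3,4),(3,3),(2,4)],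
    [(2,3),(1,2),(1,1),(2,1),(3,1),(3,2),(2,2),(1,3),(1,4),(1,5),(2,4),(3,3),(3,4),(3,5),(2,5)],
    [(2,3),(1,2),(1,1),(2,1),(3,2),(3,3),(3,4),(3,5),(2,5),(1,5),(1,4),(2,4),(1,3),(2,2),(3,1)],
    [(2,3),(1,2),(1,1),(2,1),(3,1),(2,2),(1,3),(1,4),(1,5),(2,5),(3,5),(2,4),(3,4),(3,3),(3,2)],
    [(2,3),(1,2),(1,1),(2,1),(3,1),(3,2),(2,2),(1,3),(1,4),(1,5),(2,5),(3,5),(2,4),(3,4),(3,3)],
    [(2,3),(1,2),(1,1),(2,1),(3,1),(3,2),(2,2),(1,3),(1,4),(1,5),(2,5),(3,5),(2,4),(3,3),(3,4)],
    [(2,3),(1,2),(1,1),(2,1),(3,1),(3,2),(2,2),(1,3),(1,4),(1,5),(2,5),(2,4),(3,3),(3,4),(3,5)],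
    [(2,4),(1,5),(1,4),(1,3),(1,2),(1,1),(2,1),(3,1),(2,2),(3,2),(2,3),(3,3),(3,4),(3,5),(2,5)],
    [(2,4),(1,5),(1,4),(2,5),(3,5),(3,4),(3,3),(2,3),(1,3),(1,2),(1,1),(2,1),(2,2),(3,2),(3,1)],
    [(2,4),(1,5),(1,4),(2,5),(3,5),(3,4),(3,3),(2,3),(1,3),(1,2),(1,1),(2,1),(2,2),(3,1),(3,2)],
    [(2,4),(1,5),(1,4),(2,5),(3,5),(3,4),(2,3),(1,3),(1,2),(1,1),(2,1),(3,1),(2,2),(3,2),(3,3)],
    [(2,4),(3,5),(2,5),(1,5),(1,4),(1,3),(1,2),(1,1),(2,1),(3,1),(2,2),(3,2),(2,3),(3,3),(3,4)],
    [(2,4),(1,5),(1,4),(1,3),(1,2),(1,1),(2,1),(3,1),(2,2),(3,2),(2,3),(3,3),(3,4),(2,5),(3,5)],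
    [(2,5),(1,5),(1,4),(1,3),(1,2),(1,1),(2,1),(2,2),(2,3),(2,4),(3,5),(3,4),(3,3),(3,2),(3,1)],
    [(2,5),(1,5),(1,4),(1,3),(1,2),(1,1),(2,1),(3,1),(2,2),(2,3),(2,4),(3,5),(3,4),(3,3),(3,2)],
    [(2,5),(1,5),(1,4),(1,3),(1,2),(1,1),(2,1),(3,1),(2,2),(3,2),(2,3),(2,4),(3,5),(3,4),(3,3)],
    [(2,5),(1,5),(1,4),(1,3),(1,2),(1,1),(2,1),(3,1),(2,2),(3,2),(2,3),(3,3),(2,4),(3,5),(3,4)],
    [(2,5),(1,5),(1,4),(1,3),(1,2),(1,1),(2,1),(3,1),(2,2),(3,2),(2,3),(3,3),(2,4),(3,4),(3,5)],
    [(3,1),(2,1),(1,1),(1,2),(1,3),(2,2),(3,3),(3,4),(3,5),(2,5),(1,5),(1,4),(2,4),(2,3),(3,2)],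
    [(3,1),(2,1),(1,1),(1,2),(1,3),(2,2),(3,2),(2,3),(1,4),(1,5),(2,5),(3,5),(2,4),(3,4),(3,3)],
    [(3,1),(2,1),(1,1),(1,2),(1,3),(2,2),(3,2),(3,3),(2,3),(1,4),(1,5),(2,4),(2,5),(3,5),(3,4)],
    [(3,1),(2,1),(1,1),(1,2),(1,3),(2,2),(3,2),(3,3),(2,3),(1,4),(1,5),(2,4),(3,4),(2,5),(3,5)],
    [(3,2),(3,1),(2,1),(1,1),(1,2),(2,2),(1,3),(1,4),(1,5),(2,5),(3,5),(2,4),(2,3),(3,4),(3,3)],
    [(3,2),(3,1),(2,1),(1,1),(1,2),(2,2),(1,3),(1,4),(1,5),(2,5),(3,5),(2,4),(2,3),(3,3),(3,4)],
    [(3,2),(3,1),(2,1),(1,1),(1,2),(2,2),(1,3),(1,4),(1,5),(2,5),(2,4),(2,3),(3,3),(3,4),(3,5)],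
    [(3,3),(3,2),(3,1),(2,1),(1,1),(1,2),(2,2),(1,3),(2,3),(1,4),(1,5),(2,4),(2,5),(3,5),(3,4)],
    [(3,3),(3,2),(3,1),(2,1),(1,1),(1,2),(2,2),(1,3),(2,3),(1,4),(1,5),(2,4),(3,4),(2,5),(3,5)],
    [(3,4),(2,5),(1,5),(1,4),(1,3),(1,2),(1,1),(2,1),(3,1),(2,2),(3,2),(3,3),(2,3),(2,4),(3,5)]]"

lemma tab35: "list_all2 (\<lambda>st q. chk 3 5 (fst st) (snd st) q)
  (filter (\<lambda>st. \<not> F1x 3 5 (fst st) (snd st) \<and> \<not> F2b 5 (fst st) (snd st)) (pairs (grid 3 5))) W35"
  by code_simp


definition W42 :: "vtx list list" where
  "W42 = [[(1,1),(2,1),(3,1),(4,1),(4,2),(3,2),(2,2),(1,2)],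
    [(1,1),(2,1),(1,2),(2,2),(3,2),(4,1),(4,2),(3,1)],
    [(1,1),(2,1),(1,2),(2,2),(3,1),(4,1),(4,2),(3,2)],
    [(1,1),(2,1),(1,2),(2,2),(3,1),(3,2),(4,2),(4,1)],
    [(1,1),(2,1),(1,2),(2,2),(3,1),(3,2),(4,1),(4,2)],
    [(1,2),(1,1),(2,1),(3,1),(4,1),(4,2),(3,2),(2,2)],
    [(1,2),(1,1),(2,1),(2,2),(3,2),(4,1),(4,2),(3,1)],
    [(1,2),(1,1),(2,1),(2,2),(3,1),(4,1),(4,2),(3,2)],
    [(1,2),(1,1),(2,1),(2,2),(3,1),(3,2),(4,2),(4,1)],
    [(1,2),(1,1),(2,1),(2,2),(3,1),(3,2),(4,1),(4,2)],
    [(2,1),(1,1),(1,2),(2,2),(3,2),(4,1),(4,2),(3,1)],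
    [(2,1),(1,1),(1,2),(2,2),(3,1),(4,1),(4,2),(3,2)],
    [(2,1),(1,1),(1,2),(2,2),(3,1),(3,2),(4,2),(4,1)],
    [(2,1),(1,1),(1,2),(2,2),(3,1),(3,2),(4,1),(4,2)],
    [(2,2),(1,2),(1,1),(2,1),(3,2),(4,1),(4,2),(3,1)],
    [(2,2),(1,2),(1,1),(2,1),(3,1),(4,1),(4,2),(3,2)],
    [(2,2),(1,2),(1,1),(2,1),(3,1),(3,2),(4,2),(4,1)],
    [(2,2),(1,2),(1,1),(2,1),(3,1),(3,2),(4,1),(4,2)],
    [(3,1),(2,1),(1,1),(1,2),(2,2),(3,2),(4,2),(4,1)],
    [(3,1),(2,1),(1,1),(1,2),(2,2),(3,2),(4,1),(4,2)],
    [(3,2),(2,1),(1,1),(1,2),(2,2),(3,1),(4,2),(4,1)],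
    [(3,2),(2,1),(1,1),(1,2),(2,2),(3,1),(4,1),(4,2)],
    [(4,1),(3,1),(2,1),(1,1),(1,2),(2,2),(3,2),(4,2)]]"

lemma tab42: "list_all2 (\<lambda>st q. chk 4 2 (fst st) (snd st) q)
  (filter (\<lambda>st. \<not> F1x 4 2 (fst st) (snd st) \<and> \<not> F2b 2 (fst st) (snd st)) (pairs (grid 4 2))) W42"
  by code_simp


definition W43 :: "vtx list list" where
  "W43 = [[(1,1),(2,1),(3,1),(4,1),(4,2),(4,3),(3,2),(3,3),(2,2),(1,3),(2,3),(1,2)],
    [(1,1),(2,1),(1,2),(2,3),(3,3),(4,3),(4,2),(4,1),(3,1),(3,2),(2,2),(1,3)],
    [(1,1),(2,1),(1,2),(1,3),(2,3),(3,3),(4,3),(4,2),(4,1),(3,1),(3,2),(2,2)],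
    [(1,1),(2,1),(1,2),(1,3),(2,2),(3,1),(4,1),(4,2),(4,3),(3,2),(3,3),(2,3)],
    [(1,1),(2,1),(1,2),(1,3),(2,3),(2,2),(3,3),(4,3),(3,2),(4,1),(4,2),(3,1)],
    [(1,1),(2,1),(1,2),(1,3),(2,3),(2,2),(3,1),(4,1),(4,2),(3,3),(4,3),(3,2)],
    [(1,1),(2,1),(1,2),(1,3),(2,3),(2,2),(3,1),(4,1),(3,2),(4,2),(4,3),(3,3)],
    [(1,1),(2,1),(1,2),(1,3),(2,3),(2,2),(3,1),(3,2),(3,3),(4,3),(4,2),(4,1)],
    [(1,1),(2,1),(1,2),(1,3),(2,3),(2,2),(3,1),(4,1),(3,2),(3,3),(4,3),(4,2)],
    [(1,1),(2,1),(1,2),(1,3),(2,3),(2,2),(3,1),(4,1),(3,2),(3,3),(4,2),(4,3)],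
    [(1,2),(1,1),(2,1),(3,1),(4,1),(4,2),(4,3),(3,2),(3,3),(2,2),(2,3),(1,3)],
    [(1,2),(1,3),(2,3),(3,3),(4,3),(4,2),(4,1),(3,1),(3,2),(2,2),(1,1),(2,1)],
    [(1,2),(1,1),(2,1),(3,1),(4,1),(4,2),(4,3),(3,2),(3,3),(2,3),(1,3),(2,2)],
    [(1,2),(1,1),(2,1),(3,1),(4,1),(4,2),(4,3),(3,2),(3,3),(2,2),(1,3),(2,3)],
    [(1,2),(1,1),(2,1),(2,2),(1,3),(2,3),(3,3),(4,3),(3,2),(4,1),(4,2),(3,1)],
    [(1,2),(1,1),(2,1),(3,1),(4,1),(4,2),(4,3),(3,3),(2,2),(1,3),(2,3),(3,2)],
    [(1,2),(1,1),(2,1),(3,1),(4,1),(4,2),(4,3),(3,2),(2,2),(1,3),(2,3),(3,3)],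
    [(1,2),(1,1),(2,1),(3,1),(2,2),(1,3),(2,3),(3,3),(4,3),(3,2),(4,2),(4,1)],
    [(1,2),(1,1),(2,1),(3,1),(4,1),(3,2),(2,2),(1,3),(2,3),(3,3),(4,3),(4,2)],
    [(1,2),(1,1),(2,1),(3,1),(4,1),(4,2),(3,2),(2,2),(1,3),(2,3),(3,3),(4,3)],
    [(1,3),(1,2),(2,3),(3,3),(4,3),(4,2),(4,1),(3,1),(3,2),(2,2),(1,1),(2,1)],
    [(1,3),(1,2),(1,1),(2,1),(3,1),(4,1),(4,2),(4,3),(3,2),(2,3),(3,3),(2,2)],
    [(1,3),(1,2),(1,1),(2,1),(2,2),(3,1),(4,1),(4,2),(4,3),(3,2),(3,3),(2,3)],
    [(1,3),(1,2),(1,1),(2,1),(2,2),(2,3),(3,3),(4,3),(3,2),(4,1),(4,2),(3,1)],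
    [(1,3),(1,2),(1,1),(2,1),(2,2),(2,3),(3,3),(4,3),(4,2),(3,1),(4,1),(3,2)],
    [(1,3),(1,2),(1,1),(2,1),(2,2),(2,3),(3,2),(3,1),(4,1),(4,2),(4,3),(3,3)],
    [(1,3),(1,2),(1,1),(2,1),(2,2),(2,3),(3,3),(4,3),(3,2),(3,1),(4,2),(4,1)],
    [(1,3),(1,2),(1,1),(2,1),(2,2),(2,3),(3,3),(4,3),(3,2),(3,1),(4,1),(4,2)],
    [(1,3),(1,2),(1,1),(2,1),(2,2),(2,3),(3,3),(3,2),(3,1),(4,1),(4,2),(4,3)],
    [(2,1),(1,1),(1,2),(1,3),(2,3),(3,3),(4,3),(4,2),(4,1),(3,1),(3,2),(2,2)],
    [(2,1),(1,1),(1,2),(1,3),(2,2),(3,1),(4,1),(4,2),(4,3),(3,2),(3,3),(2,3)],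
    [(2,1),(1,1),(1,2),(1,3),(2,3),(2,2),(3,3),(4,3),(3,2),(4,1),(4,2),(3,1)],
    [(2,1),(1,1),(1,2),(1,3),(2,3),(2,2),(3,1),(4,1),(4,2),(3,3),(4,3),(3,2)],
    [(2,1),(1,1),(1,2),(1,3),(2,3),(2,2),(3,1),(4,1),(3,2),(4,2),(4,3),(3,3)],
    [(2,1),(1,1),(1,2),(1,3),(2,3),(2,2),(3,1),(3,2),(3,3),(4,3),(4,2),(4,1)],
    [(2,1),(1,1),(1,2),(1,3),(2,3),(2,2),(3,1),(4,1),(3,2),(3,3),(4,3),(4,2)],
    [(2,1),(1,1),(1,2),(1,3),(2,3),(2,2),(3,1),(4,1),(3,2),(3,3),(4,2),(4,3)],
    [(2,2),(1,3),(1,2),(1,1),(2,1),(3,1),(4,1),(4,2),(4,3),(3,2),(3,3),(2,3)],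
    [(2,2),(1,1),(2,1),(1,2),(1,3),(2,3),(3,3),(4,3),(3,2),(4,1),(4,2),(3,1)],
    [(2,2),(1,1),(2,1),(1,2),(1,3),(2,3),(3,3),(4,3),(4,2),(3,1),(4,1),(3,2)],
    [(2,2),(1,1),(2,1),(1,2),(1,3),(2,3),(3,2),(3,1),(4,1),(4,2),(4,3),(3,3)],
    [(2,2),(1,1),(2,1),(1,2),(1,3),(2,3),(3,3),(4,3),(3,2),(3,1),(4,2),(4,1)],
    [(2,2),(1,1),(2,1),(1,2),(1,3),(2,3),(3,3),(4,3),(3,2),(3,1),(4,1),(4,2)],
    [(2,2),(1,1),(2,1),(1,2),(1,3),(2,3),(3,3),(3,2),(3,1),(4,1),(4,2),(4,3)],
    [(2,3),(1,3),(1,2),(1,1),(2,1),(2,2),(3,3),(4,3),(3,2),(4,1),(4,2),(3,1)],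
    [(2,3),(1,3),(1,2),(1,1),(2,1),(2,2),(3,1),(4,1),(4,2),(3,3),(4,3),(3,2)],
    [(2,3),(1,3),(1,2),(1,1),(2,1),(2,2),(3,1),(4,1),(3,2),(4,2),(4,3),(3,3)],
    [(2,3),(1,3),(1,2),(1,1),(2,1),(2,2),(3,1),(3,2),(3,3),(4,3),(4,2),(4,1)],
    [(2,3),(1,3),(1,2),(1,1),(2,1),(2,2),(3,1),(4,1),(3,2),(3,3),(4,3),(4,2)],
    [(2,3),(1,3),(1,2),(1,1),(2,1),(2,2),(3,1),(4,1),(3,2),(3,3),(4,2),(4,3)],
    [(3,1),(4,1),(4,2),(4,3),(3,3),(2,3),(1,3),(1,2),(1,1),(2,1),(2,2),(3,2)],
    [(3,1),(4,1),(4,2),(4,3),(3,2),(2,1),(1,1),(1,2),(1,3),(2,2),(2,3),(3,3)],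
    [(3,1),(2,1),(1,1),(1,2),(1,3),(2,2),(2,3),(3,3),(4,3),(3,2),(4,2),(4,1)],
    [(3,1),(4,1),(3,2),(2,1),(1,1),(1,2),(1,3),(2,2),(2,3),(3,3),(4,3),(4,2)],
    [(3,1),(4,1),(4,2),(3,3),(2,3),(1,3),(1,2),(1,1),(2,1),(2,2),(3,2),(4,3)],
    [(3,2),(4,3),(4,2),(4,1),(3,1),(2,1),(1,1),(1,2),(1,3),(2,2),(2,3),(3,3)],
    [(3,2),(4,3),(3,3),(2,3),(1,3),(1,2),(1,1),(2,1),(2,2),(3,1),(4,2),(4,1)],
    [(3,2),(4,1),(3,1),(2,1),(1,1),(1,2),(1,3),(2,2),(2,3),(3,3),(4,3),(4,2)],
    [(3,2),(4,1),(3,1),(2,1),(1,1),(1,2),(1,3),(2,2),(2,3),(3,3),(4,2),(4,3)],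
    [(3,3),(4,3),(4,2),(3,1),(2,1),(1,1),(1,2),(1,3),(2,2),(2,3),(3,2),(4,1)],
    [(3,3),(4,3),(3,2),(2,3),(1,3),(1,2),(1,1),(2,1),(2,2),(3,1),(4,1),(4,2)],
    [(3,3),(2,3),(1,3),(1,2),(1,1),(2,1),(2,2),(3,1),(4,1),(3,2),(4,2),(4,3)],
    [(4,1),(3,1),(2,1),(1,1),(1,2),(1,3),(2,2),(2,3),(3,2),(3,3),(4,3),(4,2)],
    [(4,1),(3,1),(2,1),(1,1),(1,2),(1,3),(2,2),(2,3),(3,2),(3,3),(4,2),(4,3)],
    [(4,2),(4,1),(3,1),(2,1),(1,1),(1,2),(1,3),(2,2),(2,3),(3,2),(3,3),(4,3)]]"

lemma tab43: "list_all2 (\<lambda>st q. chk 4 3 (fst st) (snd st) q)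
  (filter (\<lambda>st. \<not> F1x 4 3 (fst st) (snd st) \<and> \<not> F2b 3 (fst st) (snd st)) (pairs (grid 4 3))) W43"
  by code_simp


definition W44 :: "vtx list list" where
  "W44 = [[(1,1),(2,1),(3,1),(4,1),(4,2),(3,2),(4,3),(4,4),(3,4),(3,3),(2,2),(1,3),(1,4),(2,4),(2,3),(1,2)],
    [(1,1),(2,1),(1,2),(2,2),(3,1),(4,1),(4,2),(3,2),(4,3),(4,4),(3,3),(3,4),(2,3),(1,4),(2,4),(1,3)],
    [(1,1),(2,1),(1,2),(1,3),(2,2),(3,1),(4,1),(4,2),(3,2),(4,3),(4,4),(3,3),(3,4),(2,3),(2,4),(1,4)],
    [(1,1),(2,1),(1,2),(1,3),(1,4),(2,4),(2,3),(3,4),(4,4),(4,3),(3,3),(4,2),(4,1),(3,1),(3,2),(2,2)],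
    [(1,1),(2,1),(1,2),(1,3),(1,4),(2,4),(3,4),(4,4),(4,3),(3,3),(2,2),(3,1),(4,1),(4,2),(3,2),(2,3)],
    [(1,1),(2,1),(1,2),(1,3),(1,4),(2,3),(2,2),(3,1),(4,1),(3,2),(4,2),(4,3),(4,4),(3,3),(3,4),(2,4)],
    [(1,1),(2,1),(1,2),(1,3),(1,4),(2,4),(2,3),(2,2),(3,2),(3,3),(3,4),(4,4),(4,3),(4,2),(4,1),(3,1)],
    [(1,1),(2,1),(1,2),(1,3),(1,4),(2,4),(2,3),(2,2),(3,1),(4,1),(4,2),(3,3),(3,4),(4,4),(4,3),(3,2)],
    [(1,1),(2,1),(1,2),(1,3),(1,4),(2,4),(2,3),(2,2),(3,1),(4,1),(3,2),(4,2),(4,3),(3,4),(4,4),(3,3)],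
    [(1,1),(2,1),(1,2),(1,3),(1,4),(2,4),(2,3),(2,2),(3,1),(4,1),(3,2),(4,2),(3,3),(4,3),(4,4),(3,4)],
    [(1,1),(2,1),(1,2),(1,3),(1,4),(2,4),(2,3),(2,2),(3,1),(3,2),(3,3),(3,4),(4,4),(4,3),(4,2),(4,1)],
    [(1,1),(2,1),(1,2),(1,3),(1,4),(2,4),(2,3),(2,2),(3,1),(4,1),(3,2),(3,3),(3,4),(4,4),(4,3),(4,2)],
    [(1,1),(2,1),(1,2),(1,3),(1,4),(2,4),(2,3),(2,2),(3,1),(4,1),(3,2),(4,2),(3,3),(3,4),(4,4),(4,3)],
    [(1,1),(2,1),(1,2),(1,3),(1,4),(2,4),(2,3),(2,2),(3,1),(4,1),(3,2),(4,2),(3,3),(3,4),(4,3),(4,4)],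
    [(1,2),(1,1),(2,1),(3,1),(4,1),(4,2),(3,2),(2,2),(2,3),(3,3),(4,3),(4,4),(3,4),(2,4),(1,4),(1,3)],
    [(1,2),(1,1),(2,1),(3,1),(4,1),(4,2),(3,2),(2,2),(1,3),(2,3),(3,3),(4,3),(4,4),(3,4),(2,4),(1,4)],
    [(1,2),(1,3),(1,4),(2,4),(2,3),(3,4),(4,4),(4,3),(3,3),(4,2),(4,1),(3,1),(3,2),(2,2),(1,1),(2,1)],
    [(1,2),(1,1),(2,1),(3,1),(4,1),(4,2),(3,2),(4,3),(4,4),(3,4),(3,3),(2,4),(1,4),(1,3),(2,3),(2,2)],
    [(1,2),(1,1),(2,1),(3,1),(4,1),(4,2),(3,2),(2,2),(1,3),(1,4),(2,4),(3,3),(4,3),(4,4),(3,4),(2,3)],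
    [(1,2),(1,1),(2,1),(3,1),(4,1),(4,2),(3,2),(2,2),(1,3),(1,4),(2,3),(3,3),(4,3),(4,4),(3,4),(2,4)],
    [(1,2),(1,1),(2,1),(2,2),(1,3),(1,4),(2,4),(2,3),(3,4),(4,4),(3,3),(4,3),(3,2),(4,1),(4,2),(3,1)],
    [(1,2),(1,1),(2,1),(3,1),(4,1),(4,2),(4,3),(4,4),(3,4),(2,4),(1,4),(1,3),(2,2),(2,3),(3,3),(3,2)],
    [(1,2),(1,1),(2,1),(3,1),(4,1),(4,2),(3,2),(2,2),(1,3),(1,4),(2,3),(2,4),(3,4),(4,3),(4,4),(3,3)],
    [(1,2),(1,1),(2,1),(3,1),(4,1),(4,2),(3,2),(2,2),(1,3),(1,4),(2,3),(2,4),(3,3),(4,3),(4,4),(3,4)],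
    [(1,2),(1,1),(2,1),(3,1),(2,2),(1,3),(1,4),(2,4),(2,3),(3,4),(4,4),(3,3),(4,3),(3,2),(4,2),(4,1)],
    [(1,2),(1,1),(2,1),(3,1),(4,1),(3,2),(2,2),(1,3),(1,4),(2,3),(2,4),(3,4),(4,4),(3,3),(4,3),(4,2)],
    [(1,2),(1,1),(2,1),(3,1),(4,1),(4,2),(3,2),(2,2),(1,3),(1,4),(2,3),(2,4),(3,3),(3,4),(4,4),(4,3)],
    [(1,2),(1,1),(2,1),(3,1),(4,1),(4,2),(3,2),(2,2),(1,3),(1,4),(2,3),(2,4),(3,3),(4,3),(3,4),(4,4)],
    [(1,3),(1,2),(1,1),(2,1),(2,2),(3,1),(4,1),(4,2),(3,2),(4,3),(4,4),(3,3),(3,4),(2,3),(2,4),(1,4)],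
    [(1,3),(1,4),(2,4),(3,4),(4,4),(4,3),(3,3),(2,3),(3,2),(4,1),(4,2),(3,1),(2,2),(1,2),(1,1),(2,1)],
    [(1,3),(1,4),(2,4),(3,4),(4,4),(4,3),(3,3),(2,3),(1,2),(1,1),(2,1),(3,1),(4,1),(4,2),(3,2),(2,2)],
    [(1,3),(1,4),(2,4),(3,4),(4,4),(4,3),(3,3),(4,2),(4,1),(3,1),(3,2),(2,1),(1,1),(1,2),(2,2),(2,3)],
    [(1,3),(1,4),(2,3),(1,2),(1,1),(2,1),(2,2),(3,1),(4,1),(3,2),(4,2),(4,3),(4,4),(3,3),(3,4),(2,4)],
    [(1,3),(1,4),(2,4),(3,4),(4,4),(4,3),(3,3),(2,3),(1,2),(1,1),(2,1),(2,2),(3,2),(4,1),(4,2),(3,1)],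
    [(1,3),(1,4),(2,4),(3,4),(4,4),(4,3),(3,3),(2,3),(1,2),(1,1),(2,1),(2,2),(3,1),(4,1),(4,2),(3,2)],
    [(1,3),(1,4),(2,4),(3,4),(4,4),(4,3),(4,2),(4,1),(3,1),(2,1),(1,1),(1,2),(2,2),(2,3),(3,2),(3,3)],
    [(1,3),(1,4),(2,4),(2,3),(1,2),(1,1),(2,1),(2,2),(3,1),(4,1),(3,2),(4,2),(3,3),(4,3),(4,4),(3,4)],
    [(1,3),(1,4),(2,4),(3,4),(4,4),(4,3),(3,3),(2,3),(1,2),(1,1),(2,1),(2,2),(3,1),(3,2),(4,2),(4,1)],
    [(1,3),(1,4),(2,4),(3,4),(4,4),(4,3),(3,3),(2,3),(1,2),(1,1),(2,1),(2,2),(3,1),(3,2),(4,1),(4,2)],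
    [(1,3),(1,4),(2,4),(3,4),(4,4),(3,3),(2,3),(1,2),(1,1),(2,1),(2,2),(3,1),(4,1),(3,2),(4,2),(4,3)],
    [(1,3),(1,4),(2,4),(3,4),(2,3),(1,2),(1,1),(2,1),(2,2),(3,1),(4,1),(3,2),(4,2),(3,3),(4,3),(4,4)],
    [(1,4),(1,3),(2,4),(3,4),(4,4),(4,3),(3,3),(2,3),(3,2),(4,1),(4,2),(3,1),(2,2),(1,2),(1,1),(2,1)],
    [(1,4),(1,3),(2,4),(3,4),(4,4),(4,3),(3,3),(2,3),(1,2),(1,1),(2,1),(3,1),(4,1),(4,2),(3,2),(2,2)],
    [(1,4),(1,3),(2,4),(3,4),(4,4),(4,3),(3,3),(4,2),(4,1),(3,1),(3,2),(2,1),(1,1),(1,2),(2,2),(2,3)],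
    [(1,4),(1,3),(1,2),(1,1),(2,1),(2,2),(3,1),(4,1),(4,2),(3,2),(2,3),(3,3),(4,3),(4,4),(3,4),(2,4)],
    [(1,4),(1,3),(2,4),(3,4),(4,4),(4,3),(3,3),(2,3),(1,2),(1,1),(2,1),(2,2),(3,2),(4,1),(4,2),(3,1)],
    [(1,4),(1,3),(2,4),(3,4),(4,4),(4,3),(3,3),(2,3),(1,2),(1,1),(2,1),(2,2),(3,1),(4,1),(4,2),(3,2)],
    [(1,4),(1,3),(2,4),(3,4),(4,4),(4,3),(4,2),(4,1),(3,1),(2,1),(1,1),(1,2),(2,2),(2,3),(3,2),(3,3)],
    [(1,4),(1,3),(2,4),(2,3),(1,2),(1,1),(2,1),(2,2),(3,1),(4,1),(3,2),(4,2),(3,3),(4,3),(4,4),(3,4)],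
    [(1,4),(1,3),(2,4),(3,4),(4,4),(4,3),(3,3),(2,3),(1,2),(1,1),(2,1),(2,2),(3,1),(3,2),(4,2),(4,1)],
    [(1,4),(1,3),(2,4),(3,4),(4,4),(4,3),(3,3),(2,3),(1,2),(1,1),(2,1),(2,2),(3,1),(3,2),(4,1),(4,2)],
    [(1,4),(1,3),(2,4),(3,4),(4,4),(3,3),(2,3),(1,2),(1,1),(2,1),(2,2),(3,1),(4,1),(3,2),(4,2),(4,3)],
    [(1,4),(1,3),(2,4),(3,4),(2,3),(1,2),(1,1),(2,1),(2,2),(3,1),(4,1),(3,2),(4,2),(3,3),(4,3),(4,4)],
    [(2,1),(1,1),(1,2),(1,3),(1,4),(2,4),(2,3),(3,4),(4,4),(4,3),(3,3),(4,2),(4,1),(3,1),(3,2),(2,2)],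
    [(2,1),(1,1),(1,2),(1,3),(1,4),(2,4),(3,4),(4,4),(4,3),(3,3),(2,2),(3,1),(4,1),(4,2),(3,2),(2,3)],
    [(2,1),(1,1),(1,2),(1,3),(1,4),(2,3),(2,2),(3,1),(4,1),(3,2),(4,2),(4,3),(4,4),(3,3),(3,4),(2,4)],
    [(2,1),(1,1),(1,2),(1,3),(1,4),(2,4),(2,3),(2,2),(3,2),(3,3),(3,4),(4,4),(4,3),(4,2),(4,1),(3,1)],
    [(2,1),(1,1),(1,2),(1,3),(1,4),(2,4),(2,3),(2,2),(3,1),(4,1),(4,2),(3,3),(3,4),(4,4),(4,3),(3,2)],
    [(2,1),(1,1),(1,2),(1,3),(1,4),(2,4),(2,3),(2,2),(3,1),(4,1),(3,2),(4,2),(4,3),(3,4),(4,4),(3,3)],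
    [(2,1),(1,1),(1,2),(1,3),(1,4),(2,4),(2,3),(2,2),(3,1),(4,1),(3,2),(4,2),(3,3),(4,3),(4,4),(3,4)],
    [(2,1),(1,1),(1,2),(1,3),(1,4),(2,4),(2,3),(2,2),(3,1),(3,2),(3,3),(3,4),(4,4),(4,3),(4,2),(4,1)],
    [(2,1),(1,1),(1,2),(1,3),(1,4),(2,4),(2,3),(2,2),(3,1),(4,1),(3,2),(3,3),(3,4),(4,4),(4,3),(4,2)],
    [(2,1),(1,1),(1,2),(1,3),(1,4),(2,4),(2,3),(2,2),(3,1),(4,1),(3,2),(4,2),(3,3),(3,4),(4,4),(4,3)],
    [(2,1),(1,1),(1,2),(1,3),(1,4),(2,4),(2,3),(2,2),(3,1),(4,1),(3,2),(4,2),(3,3),(3,4),(4,3),(4,4)],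
    [(2,2),(1,1),(2,1),(1,2),(1,3),(1,4),(2,4),(3,4),(4,4),(4,3),(3,3),(4,2),(3,1),(4,1),(3,2),(2,3)],
    [(2,2),(1,1),(2,1),(1,2),(1,3),(1,4),(2,3),(3,4),(4,4),(4,3),(3,2),(3,1),(4,1),(4,2),(3,3),(2,4)],
    [(2,2),(1,1),(2,1),(1,2),(1,3),(1,4),(2,4),(2,3),(3,4),(4,4),(3,3),(4,3),(3,2),(4,1),(4,2),(3,1)],
    [(2,2),(1,1),(2,1),(1,2),(1,3),(1,4),(2,4),(2,3),(3,4),(4,4),(3,3),(4,3),(4,2),(3,1),(4,1),(3,2)],
    [(2,2),(1,1),(2,1),(1,2),(1,3),(1,4),(2,4),(2,3),(3,4),(4,4),(4,3),(3,2),(3,1),(4,1),(4,2),(3,3)],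
    [(2,2),(1,1),(2,1),(1,2),(1,3),(1,4),(2,4),(2,3),(3,2),(3,1),(4,1),(4,2),(3,3),(4,3),(4,4),(3,4)],
    [(2,2),(1,1),(2,1),(1,2),(1,3),(1,4),(2,4),(2,3),(3,4),(4,4),(3,3),(4,3),(3,2),(3,1),(4,2),(4,1)],
    [(2,2),(1,1),(2,1),(1,2),(1,3),(1,4),(2,4),(2,3),(3,4),(4,4),(3,3),(4,3),(3,2),(3,1),(4,1),(4,2)],
    [(2,2),(1,1),(2,1),(1,2),(1,3),(1,4),(2,4),(2,3),(3,4),(4,4),(3,3),(3,2),(3,1),(4,1),(4,2),(4,3)],
    [(2,2),(1,1),(2,1),(1,2),(1,3),(1,4),(2,4),(2,3),(3,4),(3,3),(3,2),(3,1),(4,1),(4,2),(4,3),(4,4)],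
    [(2,3),(1,4),(1,3),(1,2),(1,1),(2,1),(2,2),(3,1),(4,1),(3,2),(4,2),(4,3),(4,4),(3,3),(3,4),(2,4)],
    [(2,3),(1,4),(1,3),(2,4),(3,4),(4,4),(4,3),(3,3),(4,2),(4,1),(3,2),(2,1),(1,1),(1,2),(2,2),(3,1)],
    [(2,3),(1,4),(1,3),(2,4),(3,4),(4,4),(4,3),(3,3),(4,2),(4,1),(3,1),(2,1),(1,1),(1,2),(2,2),(3,2)],
    [(2,3),(1,4),(1,3),(2,4),(3,4),(4,4),(4,3),(4,2),(4,1),(3,1),(3,2),(2,1),(1,1),(1,2),(2,2),(3,3)],
    [(2,3),(1,4),(1,3),(2,4),(3,3),(4,2),(4,1),(3,1),(2,1),(1,1),(1,2),(2,2),(3,2),(4,3),(4,4),(3,4)],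
    [(2,3),(1,4),(1,3),(2,4),(3,4),(4,4),(4,3),(3,3),(4,2),(3,1),(2,1),(1,1),(1,2),(2,2),(3,2),(4,1)],
    [(2,3),(1,4),(1,3),(2,4),(3,4),(4,4),(4,3),(3,3),(2,2),(1,2),(1,1),(2,1),(3,1),(3,2),(4,1),(4,2)],
    [(2,3),(1,4),(1,3),(2,4),(3,4),(4,4),(3,3),(4,2),(4,1),(3,1),(2,1),(1,1),(1,2),(2,2),(3,2),(4,3)],
    [(2,3),(1,4),(1,3),(2,4),(3,4),(4,3),(4,2),(4,1),(3,1),(3,2),(2,1),(1,1),(1,2),(2,2),(3,3),(4,4)],
    [(2,4),(1,4),(1,3),(1,2),(1,1),(2,1),(2,2),(2,3),(3,4),(4,4),(3,3),(4,3),(3,2),(4,1),(4,2),(3,1)],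
    [(2,4),(1,4),(1,3),(1,2),(1,1),(2,1),(2,2),(2,3),(3,4),(4,4),(3,3),(4,3),(4,2),(3,1),(4,1),(3,2)],
    [(2,4),(1,4),(1,3),(1,2),(1,1),(2,1),(2,2),(2,3),(3,4),(4,4),(4,3),(3,2),(3,1),(4,1),(4,2),(3,3)],
    [(2,4),(1,4),(1,3),(1,2),(1,1),(2,1),(2,2),(2,3),(3,2),(3,1),(4,1),(4,2),(3,3),(4,3),(4,4),(3,4)],
    [(2,4),(1,4),(1,3),(1,2),(1,1),(2,1),(2,2),(2,3),(3,4),(4,4),(3,3),(4,3),(3,2),(3,1),(4,2),(4,1)],
    [(2,4),(1,4),(1,3),(1,2),(1,1),(2,1),(2,2),(2,3),(3,4),(4,4),(3,3),(4,3),(3,2),(3,1),(4,1),(4,2)],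
    [(2,4),(1,4),(1,3),(1,2),(1,1),(2,1),(2,2),(2,3),(3,4),(4,4),(3,3),(3,2),(3,1),(4,1),(4,2),(4,3)],
    [(2,4),(1,4),(1,3),(1,2),(1,1),(2,1),(2,2),(2,3),(3,4),(3,3),(3,2),(3,1),(4,1),(4,2),(4,3),(4,4)],
    [(3,1),(4,1),(4,2),(4,3),(4,4),(3,4),(2,4),(1,4),(1,3),(1,2),(1,1),(2,1),(2,2),(2,3),(3,3),(3,2)],
    [(3,1),(4,1),(4,2),(4,3),(4,4),(3,4),(2,4),(1,4),(1,3),(1,2),(1,1),(2,1),(2,2),(2,3),(3,2),(3,3)],
    [(3,1),(4,1),(4,2),(4,3),(4,4),(3,3),(3,2),(2,1),(1,1),(1,2),(2,2),(1,3),(1,4),(2,3),(2,4),(3,4)],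
    [(3,1),(2,1),(1,1),(1,2),(1,3),(1,4),(2,4),(2,3),(2,2),(3,2),(3,3),(3,4),(4,4),(4,3),(4,2),(4,1)],
    [(3,1),(4,1),(3,2),(2,1),(1,1),(1,2),(2,2),(1,3),(1,4),(2,3),(2,4),(3,4),(4,4),(3,3),(4,3),(4,2)],
    [(3,1),(4,1),(4,2),(3,2),(2,1),(1,1),(1,2),(2,2),(1,3),(1,4),(2,3),(2,4),(3,3),(3,4),(4,4),(4,3)],
    [(3,1),(4,1),(4,2),(4,3),(3,2),(2,1),(1,1),(1,2),(2,2),(1,3),(1,4),(2,3),(2,4),(3,3),(3,4),(4,4)],
    [(3,2),(4,1),(3,1),(4,2),(4,3),(4,4),(3,4),(2,4),(1,4),(1,3),(2,3),(1,2),(1,1),(2,1),(2,2),(3,3)],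
    [(3,2),(4,1),(3,1),(4,2),(4,3),(4,4),(3,3),(2,4),(1,4),(1,3),(1,2),(1,1),(2,1),(2,2),(2,3),(3,4)],
    [(3,2),(2,1),(1,1),(1,2),(1,3),(1,4),(2,4),(2,3),(2,2),(3,3),(3,4),(4,4),(4,3),(4,2),(3,1),(4,1)],
    [(3,2),(4,1),(3,1),(2,1),(1,1),(1,2),(2,2),(1,3),(1,4),(2,3),(2,4),(3,4),(4,4),(3,3),(4,3),(4,2)],
    [(3,2),(4,1),(3,1),(4,2),(3,3),(2,4),(1,4),(1,3),(1,2),(1,1),(2,1),(2,2),(2,3),(3,4),(4,4),(4,3)],
    [(3,2),(4,1),(3,1),(4,2),(4,3),(3,4),(2,4),(1,4),(1,3),(2,3),(1,2),(1,1),(2,1),(2,2),(3,3),(4,4)],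
    [(3,3),(4,4),(4,3),(4,2),(4,1),(3,1),(3,2),(2,1),(1,1),(1,2),(2,2),(1,3),(1,4),(2,3),(2,4),(3,4)],
    [(3,3),(4,4),(3,4),(4,3),(4,2),(3,1),(2,1),(1,1),(1,2),(2,2),(1,3),(1,4),(2,4),(2,3),(3,2),(4,1)],
    [(3,3),(4,4),(3,4),(4,3),(3,2),(2,1),(1,1),(1,2),(1,3),(1,4),(2,4),(2,3),(2,2),(3,1),(4,1),(4,2)],
    [(3,3),(4,4),(3,4),(2,4),(1,4),(1,3),(2,3),(1,2),(1,1),(2,1),(2,2),(3,1),(4,1),(3,2),(4,2),(4,3)],
    [(3,3),(2,4),(1,4),(1,3),(1,2),(1,1),(2,1),(2,2),(2,3),(3,2),(3,1),(4,1),(4,2),(4,3),(3,4),(4,4)],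
    [(3,4),(4,4),(4,3),(4,2),(3,1),(2,1),(1,1),(1,2),(1,3),(1,4),(2,4),(2,3),(2,2),(3,3),(3,2),(4,1)],
    [(3,4),(4,4),(4,3),(3,3),(2,4),(1,4),(1,3),(2,3),(1,2),(1,1),(2,1),(2,2),(3,1),(3,2),(4,1),(4,2)],
    [(3,4),(4,4),(3,3),(2,4),(1,4),(1,3),(2,3),(1,2),(1,1),(2,1),(2,2),(3,1),(4,1),(3,2),(4,2),(4,3)],
    [(3,4),(2,4),(1,4),(1,3),(1,2),(1,1),(2,1),(2,2),(2,3),(3,3),(3,2),(3,1),(4,1),(4,2),(4,3),(4,4)],
    [(4,1),(3,1),(2,1),(1,1),(1,2),(1,3),(1,4),(2,4),(2,3),(2,2),(3,2),(3,3),(3,4),(4,4),(4,3),(4,2)],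
    [(4,1),(3,1),(4,2),(3,2),(2,1),(1,1),(1,2),(2,2),(1,3),(1,4),(2,3),(2,4),(3,3),(3,4),(4,4),(4,3)],
    [(4,1),(3,1),(4,2),(4,3),(3,2),(2,1),(1,1),(1,2),(2,2),(1,3),(1,4),(2,3),(2,4),(3,3),(3,4),(4,4)],
    [(4,2),(4,1),(3,1),(2,1),(1,1),(1,2),(1,3),(1,4),(2,4),(2,3),(2,2),(3,2),(3,3),(3,4),(4,4),(4,3)],
    [(4,2),(4,1),(3,1),(2,1),(1,1),(1,2),(1,3),(1,4),(2,4),(2,3),(2,2),(3,2),(3,3),(3,4),(4,3),(4,4)],
    [(4,3),(3,4),(2,4),(1,4),(1,3),(1,2),(1,1),(2,1),(2,2),(2,3),(3,2),(3,1),(4,1),(4,2),(3,3),(4,4)]]"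

lemma tab44: "list_all2 (\<lambda>st q. chk 4 4 (fst st) (snd st) q)
  (filter (\<lambda>st. \<not> F1x 4 4 (fst st) (snd st) \<and> \<not> F2b 4 (fst st) (snd st)) (pairs (grid 4 4))) W44"
  by code_simp


definition W45 :: "vtx list list" where
  "W45 = [[(1,1),(2,1),(3,1),(4,1),(4,2),(3,2),(4,3),(4,4),(4,5),(3,5),(2,5),(1,5),(1,4),(1,3),(2,2),(3,3),(2,4),(3,4),(2,3),(1,2)],
    [(1,1),(2,1),(1,2),(2,2),(3,1),(4,1),(4,2),(3,2),(4,3),(3,3),(4,4),(4,5),(3,5),(3,4),(2,3),(1,4),(1,5),(2,5),(2,4),(1,3)],
    [(1,1),(2,1),(1,2),(1,3),(2,2),(3,1),(4,1),(4,2),(3,2),(4,3),(3,3),(2,3),(2,4),(3,4),(4,4),(4,5),(3,5),(2,5),(1,5),(1,4)],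
    [(1,1),(2,1),(1,2),(1,3),(1,4),(2,5),(3,5),(4,5),(4,4),(3,4),(4,3),(4,2),(4,1),(3,1),(2,2),(3,2),(2,3),(3,3),(2,4),(1,5)],
    [(1,1),(2,1),(1,2),(1,3),(1,4),(1,5),(2,5),(2,4),(3,5),(4,5),(4,4),(3,4),(2,3),(3,3),(4,3),(4,2),(4,1),(3,1),(3,2),(2,2)],
    [(1,1),(2,1),(1,2),(1,3),(1,4),(1,5),(2,5),(2,4),(3,5),(4,5),(4,4),(3,4),(4,3),(3,3),(2,2),(3,1),(4,1),(4,2),(3,2),(2,3)],
    [(1,1),(2,1),(1,2),(1,3),(1,4),(1,5),(2,5),(3,5),(4,5),(4,4),(3,4),(4,3),(4,2),(4,1),(3,1),(2,2),(3,2),(2,3),(3,3),(2,4)],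
    [(1,1),(2,1),(1,2),(1,3),(1,4),(1,5),(2,4),(2,3),(2,2),(3,1),(4,1),(3,2),(4,2),(3,3),(4,3),(4,4),(4,5),(3,4),(3,5),(2,5)],
    [(1,1),(2,1),(1,2),(1,3),(1,4),(1,5),(2,5),(2,4),(3,5),(4,5),(4,4),(3,4),(2,3),(2,2),(3,3),(4,3),(3,2),(4,1),(4,2),(3,1)],
    [(1,1),(2,1),(1,2),(1,3),(1,4),(1,5),(2,5),(2,4),(3,5),(4,5),(4,4),(3,4),(2,3),(2,2),(3,1),(4,1),(4,2),(3,3),(4,3),(3,2)],
    [(1,1),(2,1),(1,2),(1,3),(1,4),(1,5),(2,5),(2,4),(3,5),(4,5),(4,4),(3,4),(2,3),(2,2),(3,1),(4,1),(3,2),(4,2),(4,3),(3,3)],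
    [(1,1),(2,1),(1,2),(1,3),(1,4),(1,5),(2,5),(2,4),(3,5),(4,5),(4,4),(4,3),(4,2),(4,1),(3,1),(2,2),(3,2),(2,3),(3,3),(3,4)],
    [(1,1),(2,1),(1,2),(1,3),(1,4),(1,5),(2,5),(2,4),(2,3),(2,2),(3,1),(4,1),(3,2),(4,2),(3,3),(4,3),(3,4),(4,4),(4,5),(3,5)],
    [(1,1),(2,1),(1,2),(1,3),(1,4),(1,5),(2,5),(2,4),(3,5),(4,5),(4,4),(3,4),(2,3),(2,2),(3,1),(3,2),(3,3),(4,3),(4,2),(4,1)],
    [(1,1),(2,1),(1,2),(1,3),(1,4),(1,5),(2,5),(2,4),(3,5),(4,5),(4,4),(3,4),(2,3),(2,2),(3,1),(4,1),(3,2),(3,3),(4,3),(4,2)],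
    [(1,1),(2,1),(1,2),(1,3),(1,4),(1,5),(2,5),(2,4),(3,5),(4,5),(4,4),(3,4),(2,3),(2,2),(3,1),(4,1),(3,2),(3,3),(4,2),(4,3)],
    [(1,1),(2,1),(1,2),(1,3),(1,4),(1,5),(2,5),(2,4),(3,5),(4,5),(3,4),(2,3),(2,2),(3,1),(4,1),(3,2),(4,2),(3,3),(4,3),(4,4)],
    [(1,1),(2,1),(1,2),(1,3),(1,4),(1,5),(2,5),(2,4),(3,5),(4,4),(4,3),(4,2),(4,1),(3,1),(2,2),(3,2),(2,3),(3,3),(3,4),(4,5)],
    [(1,2),(1,1),(2,1),(3,1),(4,1),(4,2),(3,2),(2,2),(2,3),(1,4),(1,5),(2,5),(3,5),(4,5),(4,4),(4,3),(3,3),(3,4),(2,4),(1,3)],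
    [(1,2),(1,1),(2,1),(3,1),(4,1),(4,2),(3,2),(2,2),(1,3),(2,3),(3,3),(4,3),(4,4),(4,5),(3,4),(3,5),(2,4),(1,5),(2,5),(1,4)],
    [(1,2),(1,1),(2,1),(3,1),(4,1),(4,2),(3,2),(2,2),(1,3),(1,4),(2,3),(3,3),(4,3),(4,4),(4,5),(3,4),(3,5),(2,4),(2,5),(1,5)],
    [(1,2),(1,3),(1,4),(1,5),(2,5),(2,4),(3,5),(4,5),(4,4),(3,4),(2,3),(3,3),(4,3),(4,2),(4,1),(3,1),(3,2),(2,2),(1,1),(2,1)],
    [(1,2),(1,1),(2,1),(3,1),(4,1),(4,2),(3,2),(4,3),(4,4),(4,5),(3,5),(2,5),(1,5),(1,4),(1,3),(2,4),(3,4),(2,3),(3,3),(2,2)],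
    [(1,2),(1,1),(2,1),(3,1),(4,1),(4,2),(3,2),(2,2),(1,3),(1,4),(1,5),(2,5),(2,4),(3,5),(4,5),(4,4),(4,3),(3,3),(3,4),(2,3)],
    [(1,2),(1,1),(2,1),(3,1),(4,1),(4,2),(3,2),(2,2),(1,3),(1,4),(1,5),(2,5),(3,5),(4,5),(4,4),(4,3),(3,3),(2,3),(3,4),(2,4)],
    [(1,2),(1,1),(2,1),(3,1),(4,1),(4,2),(3,2),(2,2),(1,3),(1,4),(1,5),(2,4),(2,3),(3,3),(4,3),(4,4),(4,5),(3,4),(3,5),(2,5)],
    [(1,2),(1,1),(2,1),(2,2),(1,3),(1,4),(1,5),(2,5),(2,4),(2,3),(3,2),(3,3),(3,4),(3,5),(4,5),(4,4),(4,3),(4,2),(4,1),(3,1)],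
    [(1,2),(1,1),(2,1),(3,1),(4,1),(4,2),(4,3),(4,4),(4,5),(3,5),(2,5),(1,5),(1,4),(1,3),(2,2),(2,3),(2,4),(3,4),(3,3),(3,2)],
    [(1,2),(1,1),(2,1),(3,1),(4,1),(4,2),(3,2),(2,2),(1,3),(1,4),(1,5),(2,5),(2,4),(2,3),(3,4),(3,5),(4,5),(4,4),(4,3),(3,3)],
    [(1,2),(1,1),(2,1),(3,1),(4,1),(4,2),(3,2),(2,2),(1,3),(1,4),(1,5),(2,5),(2,4),(2,3),(3,3),(4,3),(4,4),(3,5),(4,5),(3,4)],
    [(1,2),(1,1),(2,1),(3,1),(4,1),(4,2),(3,2),(2,2),(1,3),(1,4),(1,5),(2,5),(2,4),(2,3),(3,3),(4,3),(3,4),(4,4),(4,5),(3,5)],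
    [(1,2),(1,1),(2,1),(3,1),(2,2),(1,3),(1,4),(1,5),(2,5),(2,4),(2,3),(3,2),(3,3),(3,4),(3,5),(4,5),(4,4),(4,3),(4,2),(4,1)],
    [(1,2),(1,1),(2,1),(3,1),(4,1),(3,2),(2,2),(1,3),(1,4),(1,5),(2,5),(2,4),(2,3),(3,3),(3,4),(3,5),(4,5),(4,4),(4,3),(4,2)],
    [(1,2),(1,1),(2,1),(3,1),(4,1),(4,2),(3,2),(2,2),(1,3),(1,4),(1,5),(2,5),(2,4),(2,3),(3,3),(3,4),(3,5),(4,5),(4,4),(4,3)],
    [(1,2),(1,1),(2,1),(3,1),(4,1),(4,2),(3,2),(2,2),(1,3),(1,4),(1,5),(2,5),(2,4),(2,3),(3,3),(4,3),(3,4),(3,5),(4,5),(4,4)],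
    [(1,2),(1,1),(2,1),(3,1),(4,1),(4,2),(3,2),(2,2),(1,3),(1,4),(1,5),(2,5),(2,4),(2,3),(3,3),(4,3),(3,4),(3,5),(4,4),(4,5)],
    [(1,3),(1,2),(1,1),(2,1),(2,2),(3,1),(4,1),(4,2),(3,2),(4,3),(3,3),(2,3),(2,4),(3,4),(4,4),(4,5),(3,5),(2,5),(1,5),(1,4)],
    [(1,3),(1,2),(1,1),(2,1),(2,2),(3,1),(4,1),(4,2),(3,2),(4,3),(3,3),(2,3),(1,4),(2,4),(3,4),(4,4),(4,5),(3,5),(2,5),(1,5)],
    [(1,3),(1,2),(2,3),(1,4),(1,5),(2,5),(2,4),(3,5),(4,5),(3,4),(4,4),(4,3),(3,3),(4,2),(4,1),(3,1),(3,2),(2,2),(1,1),(2,1)],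
    [(1,3),(1,2),(1,1),(2,1),(3,1),(4,1),(4,2),(3,2),(4,3),(4,4),(4,5),(3,5),(2,5),(1,5),(1,4),(2,4),(3,4),(2,3),(3,3),(2,2)],
    [(1,3),(1,2),(1,1),(2,1),(2,2),(3,1),(4,1),(4,2),(3,2),(4,3),(3,3),(4,4),(4,5),(3,5),(3,4),(2,5),(1,5),(1,4),(2,4),(2,3)],
    [(1,3),(1,2),(1,1),(2,1),(2,2),(3,1),(4,1),(4,2),(3,2),(4,3),(3,3),(2,3),(1,4),(1,5),(2,5),(3,4),(4,4),(4,5),(3,5),(2,4)],
    [(1,3),(1,2),(1,1),(2,1),(2,2),(3,1),(4,1),(4,2),(3,2),(4,3),(3,3),(2,3),(1,4),(1,5),(2,4),(3,4),(4,4),(4,5),(3,5),(2,5)],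
    [(1,3),(1,2),(1,1),(2,1),(2,2),(2,3),(1,4),(1,5),(2,5),(2,4),(3,5),(4,5),(3,4),(4,4),(3,3),(4,3),(3,2),(4,1),(4,2),(3,1)],
    [(1,3),(1,2),(1,1),(2,1),(2,2),(3,1),(4,1),(4,2),(4,3),(4,4),(4,5),(3,5),(2,5),(1,5),(1,4),(2,4),(3,4),(2,3),(3,3),(3,2)],
    [(1,3),(1,2),(1,1),(2,1),(2,2),(3,1),(4,1),(4,2),(3,2),(4,3),(4,4),(4,5),(3,5),(2,5),(1,5),(1,4),(2,3),(2,4),(3,4),(3,3)],
    [(1,3),(1,2),(1,1),(2,1),(2,2),(3,1),(4,1),(4,2),(3,2),(4,3),(3,3),(2,3),(1,4),(1,5),(2,4),(2,5),(3,5),(4,4),(4,5),(3,4)],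
    [(1,3),(1,2),(1,1),(2,1),(2,2),(3,1),(4,1),(4,2),(3,2),(4,3),(3,3),(2,3),(1,4),(1,5),(2,4),(2,5),(3,4),(4,4),(4,5),(3,5)],
    [(1,3),(1,2),(1,1),(2,1),(2,2),(3,1),(4,2),(4,3),(4,4),(4,5),(3,5),(2,5),(1,5),(1,4),(2,4),(3,4),(2,3),(3,3),(3,2),(4,1)],
    [(1,3),(1,2),(1,1),(2,1),(2,2),(3,1),(4,1),(3,2),(2,3),(1,4),(1,5),(2,5),(2,4),(3,5),(4,5),(3,4),(4,4),(3,3),(4,3),(4,2)],
    [(1,3),(1,2),(1,1),(2,1),(2,2),(3,1),(4,1),(4,2),(3,2),(2,3),(1,4),(1,5),(2,5),(2,4),(3,3),(3,4),(3,5),(4,5),(4,4),(4,3)],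
    [(1,3),(1,2),(1,1),(2,1),(2,2),(3,1),(4,1),(4,2),(3,2),(4,3),(3,3),(2,3),(1,4),(1,5),(2,4),(2,5),(3,4),(3,5),(4,5),(4,4)],
    [(1,3),(1,2),(1,1),(2,1),(2,2),(3,1),(4,1),(4,2),(3,2),(4,3),(3,3),(2,3),(1,4),(1,5),(2,4),(2,5),(3,4),(4,4),(3,5),(4,5)],
    [(1,4),(1,3),(1,2),(1,1),(2,1),(2,2),(3,1),(4,1),(4,2),(3,2),(2,3),(3,3),(4,3),(4,4),(4,5),(3,4),(3,5),(2,4),(2,5),(1,5)],
    [(1,4),(1,5),(2,5),(3,5),(4,5),(4,4),(3,4),(2,4),(1,3),(1,2),(2,3),(3,3),(4,3),(4,2),(4,1),(3,1),(3,2),(2,2),(1,1),(2,1)],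
    [(1,4),(1,5),(2,5),(3,5),(4,5),(4,4),(3,4),(2,4),(1,3),(1,2),(1,1),(2,1),(3,1),(4,1),(4,2),(4,3),(3,2),(2,3),(3,3),(2,2)],
    [(1,4),(1,5),(2,5),(3,5),(4,5),(4,4),(3,4),(2,4),(1,3),(1,2),(1,1),(2,1),(2,2),(3,1),(4,1),(4,2),(4,3),(3,2),(3,3),(2,3)],
    [(1,4),(1,5),(2,5),(3,5),(4,5),(4,4),(3,4),(4,3),(4,2),(4,1),(3,1),(2,1),(1,1),(1,2),(1,3),(2,2),(3,2),(2,3),(3,3),(2,4)],
    [(1,4),(1,5),(2,4),(1,3),(1,2),(1,1),(2,1),(2,2),(2,3),(3,2),(3,1),(4,1),(4,2),(3,3),(4,3),(4,4),(4,5),(3,4),(3,5),(2,5)],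
    [(1,4),(1,5),(2,5),(3,5),(4,5),(4,4),(3,4),(2,4),(1,3),(1,2),(1,1),(2,1),(2,2),(2,3),(3,3),(4,3),(3,2),(4,1),(4,2),(3,1)],
    [(1,4),(1,5),(2,5),(3,5),(4,5),(4,4),(3,4),(2,4),(1,3),(1,2),(1,1),(2,1),(2,2),(2,3),(3,3),(4,3),(4,2),(3,1),(4,1),(3,2)],
    [(1,4),(1,5),(2,5),(3,5),(4,5),(4,4),(3,4),(2,4),(1,3),(1,2),(1,1),(2,1),(2,2),(2,3),(3,2),(3,1),(4,1),(4,2),(4,3),(3,3)],
    [(1,4),(1,5),(2,5),(3,5),(4,5),(4,4),(4,3),(4,2),(4,1),(3,1),(2,1),(1,1),(1,2),(1,3),(2,2),(3,2),(2,3),(2,4),(3,3),(3,4)],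
    [(1,4),(1,5),(2,5),(2,4),(1,3),(1,2),(1,1),(2,1),(2,2),(2,3),(3,2),(3,1),(4,1),(4,2),(3,3),(4,3),(3,4),(4,4),(4,5),(3,5)],
    [(1,4),(1,5),(2,5),(3,5),(4,5),(4,4),(3,4),(2,4),(1,3),(1,2),(1,1),(2,1),(2,2),(2,3),(3,3),(4,3),(3,2),(3,1),(4,2),(4,1)],
    [(1,4),(1,5),(2,5),(3,5),(4,5),(4,4),(3,4),(2,4),(1,3),(1,2),(1,1),(2,1),(2,2),(2,3),(3,3),(4,3),(3,2),(3,1),(4,1),(4,2)],
    [(1,4),(1,5),(2,5),(3,5),(4,5),(4,4),(3,4),(2,4),(1,3),(1,2),(1,1),(2,1),(2,2),(2,3),(3,3),(3,2),(3,1),(4,1),(4,2),(4,3)],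
    [(1,4),(1,5),(2,5),(3,5),(4,5),(3,4),(2,4),(1,3),(1,2),(1,1),(2,1),(2,2),(2,3),(3,3),(3,2),(3,1),(4,1),(4,2),(4,3),(4,4)],
    [(1,4),(1,5),(2,5),(3,5),(2,4),(1,3),(1,2),(1,1),(2,1),(2,2),(2,3),(3,4),(3,3),(3,2),(3,1),(4,1),(4,2),(4,3),(4,4),(4,5)],
    [(1,5),(1,4),(2,5),(3,5),(4,5),(4,4),(3,4),(2,4),(1,3),(1,2),(2,3),(3,3),(4,3),(4,2),(4,1),(3,1),(3,2),(2,2),(1,1),(2,1)],
    [(1,5),(1,4),(2,5),(3,5),(4,5),(4,4),(3,4),(2,4),(1,3),(1,2),(1,1),(2,1),(3,1),(4,1),(4,2),(4,3),(3,2),(2,3),(3,3),(2,2)],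
    [(1,5),(1,4),(2,5),(3,5),(4,5),(4,4),(3,4),(2,4),(1,3),(1,2),(1,1),(2,1),(2,2),(3,1),(4,1),(4,2),(4,3),(3,2),(3,3),(2,3)],
    [(1,5),(1,4),(2,5),(3,5),(4,5),(4,4),(3,4),(4,3),(4,2),(4,1),(3,1),(2,1),(1,1),(1,2),(1,3),(2,2),(3,2),(2,3),(3,3),(2,4)],
    [(1,5),(1,4),(1,3),(1,2),(1,1),(2,1),(2,2),(3,1),(4,1),(4,2),(3,2),(2,3),(2,4),(3,3),(4,3),(4,4),(4,5),(3,4),(3,5),(2,5)],
    [(1,5),(1,4),(2,5),(3,5),(4,5),(4,4),(3,4),(2,4),(1,3),(1,2),(1,1),(2,1),(2,2),(2,3),(3,3),(4,3),(3,2),(4,1),(4,2),(3,1)],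
    [(1,5),(1,4),(2,5),(3,5),(4,5),(4,4),(3,4),(2,4),(1,3),(1,2),(1,1),(2,1),(2,2),(2,3),(3,3),(4,3),(4,2),(3,1),(4,1),(3,2)],
    [(1,5),(1,4),(2,5),(3,5),(4,5),(4,4),(3,4),(2,4),(1,3),(1,2),(1,1),(2,1),(2,2),(2,3),(3,2),(3,1),(4,1),(4,2),(4,3),(3,3)],
    [(1,5),(1,4),(2,5),(3,5),(4,5),(4,4),(4,3),(4,2),(4,1),(3,1),(2,1),(1,1),(1,2),(1,3),(2,2),(3,2),(2,3),(2,4),(3,3),(3,4)],
    [(1,5),(1,4),(2,5),(2,4),(1,3),(1,2),(1,1),(2,1),(2,2),(2,3),(3,2),(3,1),(4,1),(4,2),(3,3),(4,3),(3,4),(4,4),(4,5),(3,5)],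
    [(1,5),(1,4),(2,5),(3,5),(4,5),(4,4),(3,4),(2,4),(1,3),(1,2),(1,1),(2,1),(2,2),(2,3),(3,3),(4,3),(3,2),(3,1),(4,2),(4,1)],
    [(1,5),(1,4),(2,5),(3,5),(4,5),(4,4),(3,4),(2,4),(1,3),(1,2),(1,1),(2,1),(2,2),(2,3),(3,3),(4,3),(3,2),(3,1),(4,1),(4,2)],
    [(1,5),(1,4),(2,5),(3,5),(4,5),(4,4),(3,4),(2,4),(1,3),(1,2),(1,1),(2,1),(2,2),(2,3),(3,3),(3,2),(3,1),(4,1),(4,2),(4,3)],
    [(1,5),(1,4),(2,5),(3,5),(4,5),(3,4),(2,4),(1,3),(1,2),(1,1),(2,1),(2,2),(2,3),(3,3),(3,2),(3,1),(4,1),(4,2),(4,3),(4,4)],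
    [(1,5),(1,4),(2,5),(3,5),(2,4),(1,3),(1,2),(1,1),(2,1),(2,2),(2,3),(3,4),(3,3),(3,2),(3,1),(4,1),(4,2),(4,3),(4,4),(4,5)],
    [(2,1),(1,1),(1,2),(1,3),(1,4),(1,5),(2,5),(2,4),(3,5),(4,5),(4,4),(3,4),(2,3),(3,3),(4,3),(4,2),(4,1),(3,1),(3,2),(2,2)],
    [(2,1),(1,1),(1,2),(1,3),(1,4),(1,5),(2,5),(2,4),(3,5),(4,5),(4,4),(3,4),(4,3),(3,3),(2,2),(3,1),(4,1),(4,2),(3,2),(2,3)],
    [(2,1),(1,1),(1,2),(1,3),(1,4),(1,5),(2,5),(3,5),(4,5),(4,4),(3,4),(4,3),(4,2),(4,1),(3,1),(2,2),(3,2),(2,3),(3,3),(2,4)],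
    [(2,1),(1,1),(1,2),(1,3),(1,4),(1,5),(2,4),(2,3),(2,2),(3,1),(4,1),(3,2),(4,2),(3,3),(4,3),(4,4),(4,5),(3,4),(3,5),(2,5)],
    [(2,1),(1,1),(1,2),(1,3),(1,4),(1,5),(2,5),(2,4),(3,5),(4,5),(4,4),(3,4),(2,3),(2,2),(3,3),(4,3),(3,2),(4,1),(4,2),(3,1)],
    [(2,1),(1,1),(1,2),(1,3),(1,4),(1,5),(2,5),(2,4),(3,5),(4,5),(4,4),(3,4),(2,3),(2,2),(3,1),(4,1),(4,2),(3,3),(4,3),(3,2)],
    [(2,1),(1,1),(1,2),(1,3),(1,4),(1,5),(2,5),(2,4),(3,5),(4,5),(4,4),(3,4),(2,3),(2,2),(3,1),(4,1),(3,2),(4,2),(4,3),(3,3)],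
    [(2,1),(1,1),(1,2),(1,3),(1,4),(1,5),(2,5),(2,4),(3,5),(4,5),(4,4),(4,3),(4,2),(4,1),(3,1),(2,2),(3,2),(2,3),(3,3),(3,4)],
    [(2,1),(1,1),(1,2),(1,3),(1,4),(1,5),(2,5),(2,4),(2,3),(2,2),(3,1),(4,1),(3,2),(4,2),(3,3),(4,3),(3,4),(4,4),(4,5),(3,5)],
    [(2,1),(1,1),(1,2),(1,3),(1,4),(1,5),(2,5),(2,4),(3,5),(4,5),(4,4),(3,4),(2,3),(2,2),(3,1),(3,2),(3,3),(4,3),(4,2),(4,1)],
    [(2,1),(1,1),(1,2),(1,3),(1,4),(1,5),(2,5),(2,4),(3,5),(4,5),(4,4),(3,4),(2,3),(2,2),(3,1),(4,1),(3,2),(3,3),(4,3),(4,2)],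
    [(2,1),(1,1),(1,2),(1,3),(1,4),(1,5),(2,5),(2,4),(3,5),(4,5),(4,4),(3,4),(2,3),(2,2),(3,1),(4,1),(3,2),(3,3),(4,2),(4,3)],
    [(2,1),(1,1),(1,2),(1,3),(1,4),(1,5),(2,5),(2,4),(3,5),(4,5),(3,4),(2,3),(2,2),(3,1),(4,1),(3,2),(4,2),(3,3),(4,3),(4,4)],
    [(2,1),(1,1),(1,2),(1,3),(1,4),(1,5),(2,5),(2,4),(3,5),(4,4),(4,3),(4,2),(4,1),(3,1),(2,2),(3,2),(2,3),(3,3),(3,4),(4,5)],
    [(2,2),(1,1),(2,1),(1,2),(1,3),(1,4),(1,5),(2,5),(2,4),(3,5),(4,5),(4,4),(3,4),(4,3),(3,3),(4,2),(3,1),(4,1),(3,2),(2,3)],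
    [(2,2),(1,1),(2,1),(1,2),(1,3),(1,4),(1,5),(2,5),(3,5),(4,5),(4,4),(3,4),(2,3),(3,2),(3,1),(4,1),(4,2),(4,3),(3,3),(2,4)],
    [(2,2),(1,1),(2,1),(1,2),(1,3),(1,4),(1,5),(2,4),(2,3),(3,2),(3,1),(4,1),(4,2),(3,3),(4,3),(4,4),(4,5),(3,4),(3,5),(2,5)],
    [(2,2),(1,1),(2,1),(1,2),(1,3),(1,4),(1,5),(2,5),(2,4),(2,3),(3,2),(3,3),(3,4),(3,5),(4,5),(4,4),(4,3),(4,2),(4,1),(3,1)],
    [(2,2),(1,1),(2,1),(1,2),(1,3),(1,4),(1,5),(2,5),(2,4),(2,3),(3,3),(3,4),(3,5),(4,5),(4,4),(4,3),(4,2),(3,1),(4,1),(3,2)],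
    [(2,2),(1,1),(2,1),(1,2),(1,3),(1,4),(1,5),(2,5),(2,4),(2,3),(3,2),(3,1),(4,1),(4,2),(4,3),(3,4),(3,5),(4,5),(4,4),(3,3)],
    [(2,2),(1,1),(2,1),(1,2),(1,3),(1,4),(1,5),(2,5),(2,4),(2,3),(3,2),(3,1),(4,1),(4,2),(3,3),(4,3),(4,4),(3,5),(4,5),(3,4)],
    [(2,2),(1,1),(2,1),(1,2),(1,3),(1,4),(1,5),(2,5),(2,4),(2,3),(3,2),(3,1),(4,1),(4,2),(3,3),(4,3),(3,4),(4,4),(4,5),(3,5)],
    [(2,2),(1,1),(2,1),(1,2),(1,3),(1,4),(1,5),(2,5),(2,4),(2,3),(3,2),(3,3),(3,4),(3,5),(4,5),(4,4),(4,3),(4,2),(3,1),(4,1)],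
    [(2,2),(1,1),(2,1),(1,2),(1,3),(1,4),(1,5),(2,5),(2,4),(2,3),(3,3),(3,4),(3,5),(4,5),(4,4),(4,3),(3,2),(3,1),(4,1),(4,2)],
    [(2,2),(1,1),(2,1),(1,2),(1,3),(1,4),(1,5),(2,5),(2,4),(2,3),(3,2),(3,1),(4,1),(4,2),(3,3),(3,4),(3,5),(4,5),(4,4),(4,3)],
    [(2,2),(1,1),(2,1),(1,2),(1,3),(1,4),(1,5),(2,5),(2,4),(2,3),(3,2),(3,1),(4,1),(4,2),(3,3),(4,3),(3,4),(3,5),(4,5),(4,4)],
    [(2,2),(1,1),(2,1),(1,2),(1,3),(1,4),(1,5),(2,5),(2,4),(2,3),(3,2),(3,1),(4,1),(4,2),(3,3),(4,3),(3,4),(3,5),(4,4),(4,5)],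
    [(2,3),(1,2),(1,1),(2,1),(2,2),(1,3),(1,4),(1,5),(2,5),(3,5),(4,5),(4,4),(3,4),(4,3),(3,2),(3,1),(4,1),(4,2),(3,3),(2,4)],
    [(2,3),(1,2),(1,1),(2,1),(2,2),(1,3),(1,4),(1,5),(2,4),(3,5),(4,5),(4,4),(3,3),(3,2),(3,1),(4,1),(4,2),(4,3),(3,4),(2,5)],
    [(2,3),(1,2),(1,1),(2,1),(2,2),(1,3),(1,4),(1,5),(2,5),(2,4),(3,5),(4,5),(3,4),(4,4),(3,3),(4,3),(3,2),(4,1),(4,2),(3,1)],
    [(2,3),(1,2),(1,1),(2,1),(2,2),(1,3),(1,4),(1,5),(2,5),(2,4),(3,5),(4,5),(3,4),(4,4),(3,3),(4,3),(4,2),(3,1),(4,1),(3,2)],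
    [(2,3),(1,2),(1,1),(2,1),(2,2),(1,3),(1,4),(1,5),(2,5),(2,4),(3,5),(4,5),(3,4),(4,4),(4,3),(3,2),(3,1),(4,1),(4,2),(3,3)],
    [(2,3),(1,2),(1,1),(2,1),(2,2),(1,3),(1,4),(1,5),(2,5),(2,4),(3,5),(4,5),(4,4),(3,3),(3,2),(3,1),(4,1),(4,2),(4,3),(3,4)],
    [(2,3),(1,2),(1,1),(2,1),(2,2),(1,3),(1,4),(1,5),(2,5),(2,4),(3,3),(3,2),(3,1),(4,1),(4,2),(4,3),(3,4),(4,4),(4,5),(3,5)],
    [(2,3),(1,2),(1,1),(2,1),(2,2),(1,3),(1,4),(1,5),(2,5),(2,4),(3,5),(4,5),(3,4),(4,4),(3,3),(4,3),(3,2),(3,1),(4,2),(4,1)],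
    [(2,3),(1,2),(1,1),(2,1),(2,2),(1,3),(1,4),(1,5),(2,5),(2,4),(3,5),(4,5),(3,4),(4,4),(3,3),(4,3),(3,2),(3,1),(4,1),(4,2)],
    [(2,3),(1,2),(1,1),(2,1),(2,2),(1,3),(1,4),(1,5),(2,5),(2,4),(3,5),(4,5),(3,4),(4,4),(3,3),(3,2),(3,1),(4,1),(4,2),(4,3)],
    [(2,3),(1,2),(1,1),(2,1),(2,2),(1,3),(1,4),(1,5),(2,5),(2,4),(3,5),(4,5),(3,4),(3,3),(3,2),(3,1),(4,1),(4,2),(4,3),(4,4)],
    [(2,3),(1,2),(1,1),(2,1),(2,2),(1,3),(1,4),(1,5),(2,5),(2,4),(3,5),(3,4),(3,3),(3,2),(3,1),(4,1),(4,2),(4,3),(4,4),(4,5)],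
    [(2,4),(1,5),(1,4),(1,3),(1,2),(1,1),(2,1),(2,2),(2,3),(3,2),(3,1),(4,1),(4,2),(3,3),(4,3),(4,4),(4,5),(3,4),(3,5),(2,5)],
    [(2,4),(1,5),(1,4),(2,5),(3,5),(4,5),(4,4),(3,4),(4,3),(3,3),(4,2),(4,1),(3,2),(2,3),(1,3),(1,2),(1,1),(2,1),(2,2),(3,1)],
    [(2,4),(1,5),(1,4),(2,5),(3,5),(4,5),(4,4),(3,4),(4,3),(3,3),(4,2),(4,1),(3,1),(2,1),(1,1),(1,2),(1,3),(2,2),(2,3),(3,2)],
    [(2,4),(1,5),(1,4),(2,5),(3,5),(4,5),(4,4),(3,4),(4,3),(4,2),(4,1),(3,1),(2,1),(1,1),(1,2),(1,3),(2,2),(2,3),(3,2),(3,3)],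
    [(2,4),(1,5),(1,4),(2,5),(3,5),(4,5),(4,4),(4,3),(4,2),(4,1),(3,1),(2,1),(1,1),(1,2),(1,3),(2,2),(3,2),(2,3),(3,3),(3,4)],
    [(2,4),(1,5),(1,4),(2,5),(3,4),(4,3),(4,2),(4,1),(3,1),(2,1),(1,1),(1,2),(1,3),(2,2),(2,3),(3,2),(3,3),(4,4),(4,5),(3,5)],
    [(2,4),(1,5),(1,4),(2,5),(3,5),(4,5),(4,4),(3,4),(4,3),(3,3),(4,2),(3,1),(2,1),(1,1),(1,2),(1,3),(2,2),(2,3),(3,2),(4,1)],
    [(2,4),(1,5),(1,4),(2,5),(3,5),(4,5),(4,4),(3,4),(4,3),(3,3),(2,3),(1,3),(1,2),(1,1),(2,1),(2,2),(3,1),(3,2),(4,1),(4,2)],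
    [(2,4),(1,5),(1,4),(2,5),(3,5),(4,5),(4,4),(3,4),(2,3),(1,3),(1,2),(1,1),(2,1),(2,2),(3,1),(4,1),(3,2),(3,3),(4,2),(4,3)],
    [(2,4),(1,5),(1,4),(2,5),(3,5),(4,5),(3,4),(4,3),(4,2),(4,1),(3,1),(2,1),(1,1),(1,2),(1,3),(2,2),(2,3),(3,2),(3,3),(4,4)],
    [(2,4),(1,5),(1,4),(2,5),(3,5),(4,4),(4,3),(4,2),(4,1),(3,1),(2,1),(1,1),(1,2),(1,3),(2,2),(3,2),(2,3),(3,3),(3,4),(4,5)],
    [(2,5),(1,5),(1,4),(1,3),(1,2),(1,1),(2,1),(2,2),(2,3),(2,4),(3,5),(4,5),(3,4),(4,4),(3,3),(4,3),(3,2),(4,1),(4,2),(3,1)],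
    [(2,5),(1,5),(1,4),(1,3),(1,2),(1,1),(2,1),(2,2),(3,1),(4,1),(4,2),(4,3),(4,4),(4,5),(3,5),(2,4),(3,4),(2,3),(3,3),(3,2)],
    [(2,5),(1,5),(1,4),(1,3),(1,2),(1,1),(2,1),(2,2),(3,1),(4,1),(4,2),(3,2),(2,3),(2,4),(3,5),(4,5),(3,4),(4,3),(4,4),(3,3)],
    [(2,5),(1,5),(1,4),(1,3),(1,2),(1,1),(2,1),(2,2),(3,1),(4,1),(4,2),(3,2),(2,3),(2,4),(3,3),(4,3),(4,4),(3,5),(4,5),(3,4)],
    [(2,5),(1,5),(1,4),(1,3),(1,2),(1,1),(2,1),(2,2),(3,1),(4,1),(4,2),(3,2),(2,3),(2,4),(3,3),(4,3),(3,4),(4,4),(4,5),(3,5)],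
    [(2,5),(1,5),(1,4),(1,3),(1,2),(1,1),(2,1),(2,2),(3,1),(4,2),(4,3),(4,4),(4,5),(3,5),(2,4),(3,4),(2,3),(3,3),(3,2),(4,1)],
    [(2,5),(1,5),(1,4),(1,3),(1,2),(1,1),(2,1),(2,2),(3,1),(4,1),(3,2),(2,3),(2,4),(3,5),(4,5),(3,4),(4,4),(3,3),(4,3),(4,2)],
    [(2,5),(1,5),(1,4),(1,3),(1,2),(1,1),(2,1),(2,2),(3,1),(4,1),(4,2),(3,2),(2,3),(2,4),(3,3),(3,4),(3,5),(4,5),(4,4),(4,3)],
    [(2,5),(1,5),(1,4),(1,3),(1,2),(1,1),(2,1),(2,2),(3,1),(4,1),(4,2),(3,2),(2,3),(2,4),(3,3),(4,3),(3,4),(3,5),(4,5),(4,4)],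
    [(2,5),(1,5),(1,4),(1,3),(1,2),(1,1),(2,1),(2,2),(3,1),(4,1),(4,2),(3,2),(2,3),(2,4),(3,3),(4,3),(3,4),(3,5),(4,4),(4,5)],
    [(3,1),(4,1),(4,2),(4,3),(4,4),(4,5),(3,5),(2,5),(1,5),(1,4),(1,3),(2,4),(3,4),(3,3),(2,3),(1,2),(1,1),(2,1),(2,2),(3,2)],
    [(3,1),(4,1),(4,2),(4,3),(3,2),(2,1),(1,1),(1,2),(2,2),(1,3),(1,4),(1,5),(2,5),(2,4),(2,3),(3,4),(3,5),(4,5),(4,4),(3,3)],
    [(3,1),(4,1),(4,2),(4,3),(3,2),(2,1),(1,1),(1,2),(2,2),(1,3),(1,4),(1,5),(2,5),(2,4),(2,3),(3,3),(4,4),(3,5),(4,5),(3,4)],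
    [(3,1),(4,1),(4,2),(4,3),(3,2),(2,1),(1,1),(1,2),(2,2),(1,3),(1,4),(1,5),(2,5),(2,4),(2,3),(3,3),(3,4),(4,4),(4,5),(3,5)],
    [(3,1),(2,1),(1,1),(1,2),(1,3),(2,2),(2,3),(1,4),(1,5),(2,5),(2,4),(3,5),(4,5),(3,4),(4,4),(3,3),(4,3),(3,2),(4,2),(4,1)],
    [(3,1),(4,1),(3,2),(2,1),(1,1),(1,2),(2,2),(1,3),(1,4),(1,5),(2,5),(2,4),(2,3),(3,3),(3,4),(3,5),(4,5),(4,4),(4,3),(4,2)],
    [(3,1),(4,1),(4,2),(3,2),(2,1),(1,1),(1,2),(2,2),(1,3),(1,4),(1,5),(2,5),(2,4),(2,3),(3,3),(3,4),(3,5),(4,5),(4,4),(4,3)],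
    [(3,1),(4,1),(4,2),(4,3),(3,2),(2,1),(1,1),(1,2),(2,2),(1,3),(1,4),(1,5),(2,5),(2,4),(2,3),(3,3),(3,4),(3,5),(4,5),(4,4)],
    [(3,1),(4,1),(4,2),(4,3),(3,2),(2,1),(1,1),(1,2),(2,2),(1,3),(1,4),(1,5),(2,5),(2,4),(2,3),(3,3),(3,4),(3,5),(4,4),(4,5)],
    [(3,2),(4,1),(3,1),(4,2),(4,3),(4,4),(4,5),(3,5),(2,5),(1,5),(1,4),(1,3),(2,4),(3,4),(2,3),(1,2),(1,1),(2,1),(2,2),(3,3)],
    [(3,2),(4,1),(3,1),(4,2),(4,3),(4,4),(4,5),(3,5),(2,5),(1,5),(1,4),(1,3),(2,4),(3,3),(2,2),(1,1),(2,1),(1,2),(2,3),(3,4)],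
    [(3,2),(4,1),(3,1),(4,2),(4,3),(4,4),(4,5),(3,4),(3,3),(2,2),(1,1),(2,1),(1,2),(1,3),(2,3),(1,4),(1,5),(2,4),(2,5),(3,5)],
    [(3,2),(2,1),(1,1),(1,2),(1,3),(2,2),(2,3),(1,4),(1,5),(2,5),(2,4),(3,5),(4,5),(3,4),(4,4),(3,3),(4,3),(4,2),(3,1),(4,1)],
    [(3,2),(4,1),(3,1),(2,1),(1,1),(1,2),(2,2),(1,3),(1,4),(1,5),(2,5),(2,4),(2,3),(3,3),(3,4),(3,5),(4,5),(4,4),(4,3),(4,2)],
    [(3,2),(4,1),(3,1),(4,2),(3,3),(4,4),(4,5),(3,5),(2,5),(1,5),(1,4),(2,4),(1,3),(1,2),(1,1),(2,1),(2,2),(2,3),(3,4),(4,3)],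
    [(3,2),(4,1),(3,1),(4,2),(4,3),(3,3),(2,2),(1,1),(2,1),(1,2),(1,3),(2,3),(1,4),(1,5),(2,4),(2,5),(3,4),(3,5),(4,5),(4,4)],
    [(3,2),(4,1),(3,1),(4,2),(4,3),(4,4),(3,3),(2,2),(1,1),(2,1),(1,2),(1,3),(2,3),(1,4),(1,5),(2,4),(2,5),(3,4),(3,5),(4,5)],
    [(3,3),(4,2),(4,1),(3,1),(2,1),(1,1),(1,2),(2,2),(3,2),(4,3),(4,4),(4,5),(3,5),(2,5),(1,5),(1,4),(1,3),(2,3),(2,4),(3,4)],
    [(3,3),(4,2),(4,1),(3,1),(2,1),(1,1),(1,2),(2,2),(3,2),(4,3),(4,4),(4,5),(3,4),(2,3),(1,3),(1,4),(1,5),(2,4),(2,5),(3,5)],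
    [(3,3),(4,2),(4,3),(4,4),(4,5),(3,5),(3,4),(2,5),(1,5),(1,4),(2,4),(1,3),(2,3),(1,2),(1,1),(2,1),(2,2),(3,1),(3,2),(4,1)],
    [(3,3),(4,3),(4,4),(4,5),(3,5),(3,4),(2,5),(1,5),(1,4),(2,4),(1,3),(2,3),(1,2),(1,1),(2,1),(2,2),(3,1),(3,2),(4,1),(4,2)],
    [(3,3),(4,2),(4,1),(3,1),(2,1),(1,1),(1,2),(2,2),(3,2),(2,3),(1,3),(1,4),(1,5),(2,4),(2,5),(3,5),(4,5),(3,4),(4,4),(4,3)],
    [(3,3),(4,2),(4,1),(3,1),(2,1),(1,1),(1,2),(2,2),(3,2),(4,3),(3,4),(2,3),(1,3),(1,4),(1,5),(2,4),(2,5),(3,5),(4,5),(4,4)],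
    [(3,3),(4,2),(4,1),(3,1),(2,1),(1,1),(1,2),(2,2),(3,2),(4,3),(4,4),(3,5),(2,5),(1,5),(1,4),(1,3),(2,3),(2,4),(3,4),(4,5)],
    [(3,4),(4,5),(4,4),(4,3),(4,2),(4,1),(3,1),(2,1),(1,1),(1,2),(1,3),(2,2),(3,2),(3,3),(2,3),(1,4),(1,5),(2,4),(2,5),(3,5)],
    [(3,4),(4,5),(3,5),(4,4),(4,3),(4,2),(3,1),(2,1),(1,1),(1,2),(1,3),(2,2),(3,3),(2,4),(1,5),(2,5),(1,4),(2,3),(3,2),(4,1)],
    [(3,4),(4,5),(3,5),(4,4),(4,3),(3,3),(2,4),(1,5),(2,5),(1,4),(1,3),(2,3),(1,2),(1,1),(2,1),(2,2),(3,1),(3,2),(4,1),(4,2)],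
    [(3,4),(4,5),(3,5),(4,4),(3,3),(4,2),(4,1),(3,1),(2,1),(1,1),(1,2),(2,2),(1,3),(1,4),(1,5),(2,5),(2,4),(2,3),(3,2),(4,3)],
    [(3,4),(4,5),(3,5),(2,5),(1,5),(1,4),(2,4),(1,3),(1,2),(1,1),(2,1),(2,2),(2,3),(3,3),(3,2),(3,1),(4,1),(4,2),(4,3),(4,4)],
    [(3,4),(2,5),(1,5),(1,4),(1,3),(2,4),(2,3),(1,2),(1,1),(2,1),(2,2),(3,1),(4,1),(3,2),(4,2),(3,3),(4,3),(4,4),(3,5),(4,5)],
    [(3,5),(4,5),(4,4),(4,3),(3,4),(2,5),(1,5),(1,4),(2,4),(1,3),(1,2),(1,1),(2,1),(2,2),(2,3),(3,3),(3,2),(3,1),(4,2),(4,1)],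
    [(3,5),(4,5),(4,4),(4,3),(3,4),(2,5),(1,5),(1,4),(2,4),(1,3),(1,2),(1,1),(2,1),(2,2),(2,3),(3,3),(3,2),(3,1),(4,1),(4,2)],
    [(3,5),(4,5),(4,4),(3,4),(2,5),(1,5),(1,4),(2,4),(1,3),(1,2),(1,1),(2,1),(2,2),(2,3),(3,3),(3,2),(3,1),(4,1),(4,2),(4,3)],
    [(3,5),(4,5),(3,4),(2,5),(1,5),(1,4),(2,4),(1,3),(1,2),(1,1),(2,1),(2,2),(2,3),(3,3),(3,2),(3,1),(4,1),(4,2),(4,3),(4,4)],
    [(3,5),(2,5),(1,5),(1,4),(1,3),(2,4),(2,3),(1,2),(1,1),(2,1),(2,2),(3,1),(4,1),(3,2),(4,2),(3,3),(4,3),(3,4),(4,4),(4,5)],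
    [(4,1),(3,1),(2,1),(1,1),(1,2),(1,3),(2,2),(3,2),(2,3),(1,4),(1,5),(2,5),(2,4),(3,5),(4,5),(3,4),(4,4),(3,3),(4,3),(4,2)],
    [(4,1),(3,1),(4,2),(3,2),(2,1),(1,1),(1,2),(2,2),(1,3),(1,4),(1,5),(2,5),(2,4),(2,3),(3,3),(3,4),(3,5),(4,5),(4,4),(4,3)],
    [(4,1),(3,1),(4,2),(4,3),(3,2),(2,1),(1,1),(1,2),(2,2),(1,3),(1,4),(1,5),(2,5),(2,4),(2,3),(3,3),(3,4),(3,5),(4,5),(4,4)],
    [(4,1),(3,1),(4,2),(4,3),(3,2),(2,1),(1,1),(1,2),(2,2),(1,3),(1,4),(1,5),(2,5),(2,4),(2,3),(3,3),(3,4),(3,5),(4,4),(4,5)],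
    [(4,2),(4,1),(3,1),(2,1),(1,1),(1,2),(1,3),(2,2),(3,2),(2,3),(1,4),(1,5),(2,5),(2,4),(3,3),(3,4),(3,5),(4,5),(4,4),(4,3)],
    [(4,2),(4,1),(3,1),(2,1),(1,1),(1,2),(1,3),(2,2),(3,2),(4,3),(3,3),(2,3),(1,4),(1,5),(2,4),(2,5),(3,4),(3,5),(4,5),(4,4)],
    [(4,2),(4,1),(3,1),(2,1),(1,1),(1,2),(1,3),(2,2),(3,2),(4,3),(3,3),(2,3),(1,4),(1,5),(2,4),(2,5),(3,4),(4,4),(3,5),(4,5)],
    [(4,3),(4,2),(4,1),(3,1),(2,1),(1,1),(1,2),(1,3),(2,2),(3,2),(2,3),(1,4),(1,5),(2,5),(2,4),(3,3),(3,4),(3,5),(4,5),(4,4)],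
    [(4,3),(4,2),(4,1),(3,1),(2,1),(1,1),(1,2),(1,3),(2,2),(3,2),(2,3),(1,4),(1,5),(2,5),(2,4),(3,3),(3,4),(3,5),(4,4),(4,5)],
    [(4,4),(3,5),(2,5),(1,5),(1,4),(1,3),(2,4),(2,3),(1,2),(1,1),(2,1),(2,2),(3,1),(4,1),(3,2),(4,2),(4,3),(3,3),(3,4),(4,5)]]"

lemma tab45: "list_all2 (\<lambda>st q. chk 4 5 (fst st) (snd st) q)
  (filter (\<lambda>st. \<not> F1x 4 5 (fst st) (snd st) \<and> \<not> F2b 5 (fst st) (snd st)) (pairs (grid 4 5))) W45"
  by code_simp



lemma base_case:
  assumes "3 \<le> m" "m \<le> 4" "2 \<le> n" "n \<le> 5" "Adm m n s t"
  shows "Good m n s t"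
proof -
  have a: "s \<in> R m n" "t \<in> R m n" "s \<noteq> t" "\<not> F1x m n s t" "\<not> F2b n s t"
    using assms(5) unfolding Adm_def by auto
  have "m = 3 \<or> m = 4" "n = 2 \<or> n = 3 \<or> n = 4 \<or> n = 5" using assms(1-4) by auto
  then consider "m = 3" "n = 2" | "m = 3" "n = 3" | "m = 3" "n = 4" | "m = 3" "n = 5"
    | "m = 4" "n = 2" | "m = 4" "n = 3" | "m = 4" "n = 4" | "m = 4" "n = 5" by blast
  then show ?thesis
  proof cases
    case 1 then show ?thesis using base_from_table[OF tab32] a by simp
  next
    case 2 then show ?thesis using base_from_table[OF tab33] a by simp
  next
    case 3 then show ?thesis using base_from_table[OF tab34] a by simp
  next
    case 4 then show ?thesis using base_from_table[OF tab35] a by simp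
  next
    case 5 then show ?thesis using base_from_table[OF tab42] a by simp
  next
    case 6 then show ?thesis using base_from_table[OF tab43] a by simp
  next
    case 7 then show ?thesis using base_from_table[OF tab44] a by simp
  next
    case 8 then show ?thesis using base_from_table[OF tab45] a by simp
  qed
qed

lemma main_lemma:
  "3 \<le> m \<Longrightarrow> 2 \<le> n \<Longrightarrow> Adm m n s t \<Longrightarrow> Good m n s t"
proof (induction "nat (m + n)" arbitrary: m n s t rule: less_induct)
  case less
  consider "5 \<le> m" | "m \<le> 4 \<and> 6 \<le> n" | "m \<le> 4 \<and> n \<le> 5" by linarith
  then show ?case
  proof cases
    case 1
    have IH: "\<And>s t. Adm (m-2) n s t \<Longrightarrow> Good (m-2) n s t"
      using less.hyps[of "m-2" n] less.prems 1 by auto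
    show ?thesis by (rule col_step[OF 1 less.prems(2) IH less.prems(3)])
  next
    case 2
    have IH: "\<And>s t. Adm m (n-2) s t \<Longrightarrow> Good m (n-2) s t"
      using less.hyps[of m "n-2"] less.prems 2 by auto
    show ?thesis by (rule row_step[OF less.prems(1) _ _ IH less.prems(3)]) (use 2 in auto)
  next
    case 3
    show ?thesis by (rule base_case[OF less.prems(1) _ less.prems(2) _ less.prems(3)]) (use 3 in auto)
  qed
qed

theorem lemma6:
  fixes m n :: int and s t :: vtx
  assumes "m \<ge> 3" and "n \<ge> 2"
    and "s \<in> R m n" and "t \<in> R m n" and "s \<noteq> t"
    and notF1: "\<not> vertex_cut (R m n) {s, t}"
    and notF2: "\<not> ((n = 2 \<and> {s, t} \<in> {{(1,1),(2,1)}, {(1,1),(2,2)}, {(2,1),(1,2)}})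
                   \<or> (n \<ge> 3 \<and> {s, t} = {(1,1),(2,1)}))"
  shows "\<exists>Q. ham_path (R m n) s t Q \<and> edge_in_path (1,1) (2,1) Q"
proof -
  have "\<not> F1x m n s t" using F1x_cut[of m n s t] assms(3-5) notF1 by blast
  moreover have "\<not> F2b n s t" using F2b_imp[of n s t] notF2 by blast
  ultimately have "Adm m n s t" unfolding Adm_def using assms(3-5) by blast
  then have "Good m n s t" using main_lemma assms(1,2) by blast
  then obtain Q where "hp (R m n) s t Q" "ew Q" unfolding Good_def by blast
  then show ?thesis unfolding ham_path_iff edge_in_path_iff ew_def by blast
qed

end
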